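(* Let $\lambda = 2\cos(\pi/18)$, $S = \begin{pmatrix} 0 & -1 \\ 1 & 0 \end{pmatrix}$, $T = \begin{pmatrix} 1 & \lambda \\ 0 & 1 \end{pmatrix}$, and $G_{18} = \langle S, T\rangle \subset \mathrm{SL}(2,\mathbb{R})$. For a finite sequence $n_1,\dots,n_k$ of nonzero integers let $M(n_1,\dots,n_k) = S T^{n_k} \cdots S T^{n_1} \in G_{18}$, and let $(n_1,\dots,n_k)^m$ denote the concatenation of $m$ copies of $n_1,\dots,n_k$. Then for every integer $k \ge 0$, each of the following elements of $G_{18}$ is a special hyperbolic element: \begin{align*} & M(2, (-4, -1, 4, 1)^k, -2, -2, 2, (1, -4, -1, 4)^k) \\ & M(4, (2, -2, -2, 2)^k, 1, -4, -1, (2, 2, -2, -2)^k) \\ & M(-4, (-1, 8, 1, -2)^k, -2, 1, 2, (-2, -1, 8, 1)^k) \\ & M(-1, (-4, 2, 1, -2)^k, -2, 1, 8, (1, -1, -1, 16)^k) \\ & M(16, (1, -2, -1, 8)^k, -1, -1, 1, (8, 1, -2, -1)^k) \\ & M(4, (2, -2, -2, 2)^k, 2, -2, -1, 4, 1, -2, -2, (2, 2, -2, -2)^k) \\ & M(4, (1, -2, -4, 2)^k, 1, -2, -2, 4, 2, -2, -1, (2, 4, -2, -1)^k) \\ & M(2, (-4, -1, 4, 1)^k, -4, -1, 2, 2, -2, -1, 4, (1, -4, -1, 4)^k) \\ & M(2, (-2, -1, 8, 1)^k, -2, -1, 4, 2, -4, -1, 2, (1, -8, -1, 2)^k) \\ &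 M(-4, (-1, 8, 1, -2)^k, -1, 8, -1, -1, 1, 8, 1, (-2, -1, 8, 1)^k) \\ & M(2, (-8, -1, 2, 1)^k, -8, -1, 1, 2, -1, -1, 8, (1, -2, -1, 8)^k) \\ & M(2, (-1, -1, 16, 1)^k, -1, -1, 8, 2, -8, -1, 1, (1, -16, -1, 1)^k) \\ & M(16, (1, -2, -1, 8)^k, 1, -2, -2, 1, 2, -2, -1, (8, 1, -2, -1)^k) \end{align*} Moreover, for each of these thirteen families, the fixed points in $\mathbb{P}^1(\mathbb{R})$ of its members (over all $k\ge 0$) form infinitely many distinct $G_{18}$-orbits in $\lambda\mathbb{Q}(\lambda^2)$.
   Context: $G_{18}$ acts on $\mathbb{P}^1(\mathbb{R})$ by Möbius transformations. A matrix in $\mathrm{SL}(2,\mathbb{R})$ is hyperbolic if the absolute value of its trace exceeds $2$. A hyperbolic element of $G_{18}$ is special if its eigenvalues lie in $K_{18} = \mathbb{Q}(\lambda^2)$. *)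

theory Defs
  imports Complex_Main
begin

datatype mat2 = Mat2 (ent11: real) (ent12: real) (ent21: real) (ent22: real)

definition mmul :: "mat2 \<Rightarrow> mat2 \<Rightarrow> mat2" (infixl \<open>\<cdot>\<^sub>m\<close> 70) where
  "mmul A B = Mat2 (ent11 A * ent11 B + ent12 A * ent21 B) (ent11 A * ent12 B + ent12 A * ent22 B)
                   (ent21 A * ent11 B + ent22 A * ent21 B) (ent21 A * ent12 B + ent22 A * ent22 B)"

definition mid :: mat2 where "mid = Mat2 1 0 0 1"

definition mdet :: "mat2 \<Rightarrow> real" where "mdet A = ent11 A * ent22 A - ent12 A * ent21 A"

definition mtrace :: "mat2 \<Rightarrow> real" where "mtrace A = ent11 A + ent22 A"

definition minv :: "mat2 \<Rightarrow> mat2" where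
  "minv A = Mat2 (ent22 A / mdet A) (- ent12 A / mdet A) (- ent21 A / mdet A) (ent11 A / mdet A)"

definition mpow :: "mat2 \<Rightarrow> nat \<Rightarrow> mat2" where
  "mpow A n = ((\<lambda>B. A \<cdot>\<^sub>m B) ^^ n) mid"

definition zpow :: "mat2 \<Rightarrow> int \<Rightarrow> mat2" where
  "zpow A n = (if n \<ge> 0 then mpow A (nat n) else mpow (minv A) (nat (- n)))"

definition lam :: real where "lam = 2 * cos (pi / 18)"

definition Smat :: mat2 where "Smat = Mat2 0 (-1) 1 0"
definition Tmat :: mat2 where "Tmat = Mat2 1 lam 0 1"

inductive_set G18 :: "mat2 set" where
  G_id: "mid \<in> G18"
| G_S: "A \<in> G18 \<Longrightarrow> Smat \<cdot>\<^sub>m A \<in> G18"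
| G_T: "A \<in> G18 \<Longrightarrow> Tmat \<cdot>\<^sub>m A \<in> G18"
| G_Sinv: "A \<in> G18 \<Longrightarrow> minv Smat \<cdot>\<^sub>m A \<in> G18"
| G_Tinv: "A \<in> G18 \<Longrightarrow> minv Tmat \<cdot>\<^sub>m A \<in> G18"

definition Mseq :: "int list \<Rightarrow> mat2" where
  "Mseq ns = foldl (\<lambda>A n. Smat \<cdot>\<^sub>m zpow Tmat n \<cdot>\<^sub>m A) mid ns"

definition is_subfield :: "real set \<Rightarrow> bool" where
  "is_subfield F \<longleftrightarrow> 0 \<in> F \<and> 1 \<in> F \<and> (\<forall>x\<in>F. \<forall>y\<in>F. x + y \<in> F \<and> x * y \<in> F)
      \<and> (\<forall>x\<in>F. - x \<in> F \<and> inverse x \<in> F)"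

definition K18 :: "real set" where
  "K18 = \<Inter>{F. is_subfield F \<and> lam\<^sup>2 \<in> F}"

definition hyperbolic :: "mat2 \<Rightarrow> bool" where
  "hyperbolic A \<longleftrightarrow> \<bar>mtrace A\<bar> > 2"

definition is_eigenvalue :: "mat2 \<Rightarrow> real \<Rightarrow> bool" where
  "is_eigenvalue A \<mu> \<longleftrightarrow> (\<exists>x y. (x, y) \<noteq> (0, 0) \<and>
      ent11 A * x + ent12 A * y = \<mu> * x \<and> ent21 A * x + ent22 A * y = \<mu> * y)"

text \<open>Special hyperbolic element of G_18: hyperbolic, and all its eigenvalues lie in K_18
  (eigenvalues of a hyperbolic element of SL(2,R) are real).\<close>
definition special_hyperbolic :: "mat2 \<Rightarrow> bool" where
  "special_hyperbolic A \<longleftrightarrow> A \<in> G18 \<and> hyperbolic A \<and> (\<forall>\<mu>. is_eigenvalue A \<mu> \<longrightarrow> \<mu> \<in> K18)"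

text \<open>P^1(R) = real option, None = infinity; Moebius action.\<close>
definition mobius :: "mat2 \<Rightarrow> real option \<Rightarrow> real option" where
  "mobius A p = (case p of
      None \<Rightarrow> (if ent21 A = 0 then None else Some (ent11 A / ent21 A))
    | Some x \<Rightarrow> (if ent21 A * x + ent22 A = 0 then None
                 else Some ((ent11 A * x + ent12 A) / (ent21 A * x + ent22 A))))"

definition orbit18 :: "real option \<Rightarrow> real option set" where
  "orbit18 p = {mobius g p | g. g \<in> G18}"

definition lamK :: "real set" where "lamK = {lam * x | x. x \<in> K18}"

definition rep :: "nat \<Rightarrow> int list \<Rightarrow> int list" where
  "rep m xs = concat (replicate m xs)"

definition families18 :: "(nat \<Rightarrow> int list) list" where
  "families18 = [
    (\<lambda>k. [2] @ rep k [-4,-1,4,1] @ [-2,-2,2] @ rep k [1,-4,-1,4]),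
    (\<lambda>k. [4] @ rep k [2,-2,-2,2] @ [1,-4,-1] @ rep k [2,2,-2,-2]),
    (\<lambda>k. [-4] @ rep k [-1,8,1,-2] @ [-2,1,2] @ rep k [-2,-1,8,1]),
    (\<lambda>k. [-1] @ rep k [-4,2,1,-2] @ [-2,1,8] @ rep k [1,-1,-1,16]),
    (\<lambda>k. [16] @ rep k [1,-2,-1,8] @ [-1,-1,1] @ rep k [8,1,-2,-1]),
    (\<lambda>k. [4] @ rep k [2,-2,-2,2] @ [2,-2,-1,4,1,-2,-2] @ rep k [2,2,-2,-2]),
    (\<lambda>k. [4] @ rep k [1,-2,-4,2] @ [1,-2,-2,4,2,-2,-1] @ rep k [2,4,-2,-1]),
    (\<lambda>k. [2] @ rep k [-4,-1,4,1] @ [-4,-1,2,2,-2,-1,4] @ rep k [1,-4,-1,4]),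
    (\<lambda>k. [2] @ rep k [-2,-1,8,1] @ [-2,-1,4,2,-4,-1,2] @ rep k [1,-8,-1,2]),
    (\<lambda>k. [-4] @ rep k [-1,8,1,-2] @ [-1,8,-1,-1,1,8,1] @ rep k [-2,-1,8,1]),
    (\<lambda>k. [2] @ rep k [-8,-1,2,1] @ [-8,-1,1,2,-1,-1,8] @ rep k [1,-2,-1,8]),
    (\<lambda>k. [2] @ rep k [-1,-1,16,1] @ [-1,-1,8,2,-8,-1,1] @ rep k [1,-16,-1,1]),
    (\<lambda>k. [16] @ rep k [1,-2,-1,8] @ [1,-2,-2,1,2,-2,-1] @ rep k [8,1,-2,-1])
  ]"

end

theory Submission
  imports Defs
begin


lemma mat2_eqI: "ent11 A = ent11 B \<Longrightarrow> ent12 A = ent12 B \<Longrightarrow> ent21 A = ent21 B \<Longrightarrow> ent22 A = ent22 B \<Longrightarrow> A = B"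
  by (cases A; cases B) auto

lemma mmul_simps[simp]:
  "ent11 (A \<cdot>\<^sub>m B) = ent11 A * ent11 B + ent12 A * ent21 B"
  "ent12 (A \<cdot>\<^sub>m B) = ent11 A * ent12 B + ent12 A * ent22 B"
  "ent21 (A \<cdot>\<^sub>m B) = ent21 A * ent11 B + ent22 A * ent21 B"
  "ent22 (A \<cdot>\<^sub>m B) = ent21 A * ent12 B + ent22 A * ent22 B"
  by (simp_all add: mmul_def)

lemma mmul_assoc: "(A \<cdot>\<^sub>m B) \<cdot>\<^sub>m C = A \<cdot>\<^sub>m (B \<cdot>\<^sub>m C)"
  by (rule mat2_eqI) (simp_all add: algebra_simps)

lemma mid_simps[simp]: "ent11 mid = 1" "ent12 mid = 0" "ent21 mid = 0" "ent22 mid = 1"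
  by (simp_all add: mid_def)

lemma mmul_mid[simp]: "mid \<cdot>\<^sub>m A = A" "A \<cdot>\<^sub>m mid = A"
  by (rule mat2_eqI; simp)+

lemma mdet_mul: "mdet (A \<cdot>\<^sub>m B) = mdet A * mdet B"
  by (simp add: mdet_def algebra_simps)

definition mneg :: "mat2 \<Rightarrow> mat2" where
  "mneg A = Mat2 (- ent11 A) (- ent12 A) (- ent21 A) (- ent22 A)"

lemma mneg_simps[simp]: "ent11 (mneg A) = - ent11 A" "ent12 (mneg A) = - ent12 A"
  "ent21 (mneg A) = - ent21 A" "ent22 (mneg A) = - ent22 A"
  by (simp_all add: mneg_def)

lemma mneg_mul[simp]: "mneg A \<cdot>\<^sub>m B = mneg (A \<cdot>\<^sub>m B)" "A \<cdot>\<^sub>m mneg B = mneg (A \<cdot>\<^sub>m B)"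
  by (rule mat2_eqI; simp)+

lemma mneg_mneg[simp]: "mneg (mneg A) = A"
  by (rule mat2_eqI; simp)

lemma minv_simps: "ent11 (minv A) = ent22 A / mdet A" "ent12 (minv A) = - ent12 A / mdet A"
  "ent21 (minv A) = - ent21 A / mdet A" "ent22 (minv A) = ent11 A / mdet A"
  by (simp_all add: minv_def)

lemma minv_right: "mdet A \<noteq> 0 \<Longrightarrow> A \<cdot>\<^sub>m minv A = mid"
proof (cases A)
  case (Mat2 a b c d)
  assume "mdet A \<noteq> 0"
  then have D: "a*d - b*c \<noteq> 0" using Mat2 by (simp add: mdet_def)
  show ?thesis unfolding Mat2 mmul_def minv_def mid_def mdet_def
    using D by (simp add: divide_simps)
qed

lemma minv_left: "mdet A \<noteq> 0 \<Longrightarrow> minv A \<cdot>\<^sub>m A = mid"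
proof (cases A)
  case (Mat2 a b c d)
  assume "mdet A \<noteq> 0"
  then have D: "a*d - b*c \<noteq> 0" using Mat2 by (simp add: mdet_def)
  show ?thesis unfolding Mat2 mmul_def minv_def mid_def mdet_def
    using D by (simp add: divide_simps)
qed

lemma mdet_minv: "mdet A = 1 \<Longrightarrow> mdet (minv A) = 1"
  by (simp add: mdet_def minv_simps algebra_simps)

lemma mdet_mneg[simp]: "mdet (mneg A) = mdet A" by (simp add: mdet_def)

lemma mtrace_mneg[simp]: "mtrace (mneg A) = - mtrace A" by (simp add: mtrace_def)

section \<open>Moebius action\<close>

lemma mobius_mid[simp]: "mobius mid p = p"
  by (cases p) (simp_all add: mobius_def)

lemma mobius_neg[simp]: "mobius (mneg A) p = mobius A p"
proof (cases p)
  case None then show ?thesis by (simp add: mobius_def)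
next
  case (Some x)
  have h1: "(- ent21 A * x + - ent22 A = 0) = (ent21 A * x + ent22 A = 0)" by auto
  have h2: "(- ent11 A * x + - ent12 A) / (- ent21 A * x + - ent22 A)
      = (ent11 A * x + ent12 A) / (ent21 A * x + ent22 A)"
    by (metis minus_divide_divide minus_add_distrib mult_minus_left)
  have h3: "\<And>p q r s::real. (- p - q)/(- r - s) = (p+q)/(r+s)"
  proof -
    fix p q r s :: real
    have "(- p - q)/(- r - s) = (-(p+q))/(-(r+s))" by simp
    also have "\<dots> = (p+q)/(r+s)" by (rule minus_divide_divide)
    finally show "(- p - q)/(- r - s) = (p+q)/(r+s)" .
  qed
  show ?thesis using Some by (simp add: mobius_def h3)
qed

lemma mobius_mul0:
  assumes dB': "e*h - f*g \<noteq> (0::real)"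
  shows "mobius (Mat2 a b c d \<cdot>\<^sub>m Mat2 e f g h) p = mobius (Mat2 a b c d) (mobius (Mat2 e f g h) p)"
proof -
  have AB: "Mat2 a b c d \<cdot>\<^sub>m Mat2 e f g h = Mat2 (a*e + b*g) (a*f + b*h) (c*e + d*g) (c*f + d*h)"
    unfolding mmul_def by simp
  show ?thesis
  proof (cases p)
    case None
    show ?thesis
    proof (cases "g = 0")
      case True
      then have e0: "e \<noteq> 0" using dB' by auto
      have 1: "mobius (Mat2 e f g h) p = None" using None True by (simp add: mobius_def)
      have 2: "(c*e + d*g = 0) = (c = 0)" using True e0 by simp
      have 3: "(a*e + b*g)/(c*e + d*g) = a/c" using True e0 by simp
      show ?thesis unfolding 1 None AB by (simp only: mobius_def 2 3 mat2.sel option.case) (simp add: True)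
    next
      case False
      have 1: "mobius (Mat2 e f g h) p = Some (e/g)" using None False by (simp add: mobius_def)
      have n: "a*e + b*g = (a*(e/g) + b)*g" using False by (simp add: field_simps)
      have dd: "c*e + d*g = (c*(e/g) + d)*g" using False by (simp add: field_simps)
      have 2: "((c*(e/g) + d)*g = 0) = (c*(e/g) + d = 0)" using False by simp
      have 3: "(a*(e/g) + b)*g/((c*(e/g) + d)*g) = (a*(e/g) + b)/(c*(e/g) + d)" using False by simp
      show ?thesis unfolding 1 None AB n dd by (simp only: mobius_def 2 3 mat2.sel option.case) (simp add: False)
    qed
  next
    case (Some x)
    show ?thesis
    proof (cases "g*x + h = 0")
      case True
      have nz: "e*x + f \<noteq> 0"
      proof
        assume "e*x + f = 0"
        then have "h = -g*x" "f = -e*x" using True by auto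
        then show False using dB' by (simp add: algebra_simps)
      qed
      have 1: "mobius (Mat2 e f g h) p = None" using Some True by (simp add: mobius_def)
      have den: "(c*e + d*g)*x + (c*f + d*h) = c*(e*x+f)"
      proof -
        have "(c*e + d*g)*x + (c*f + d*h) = c*(e*x+f) + d*(g*x+h)" by (simp add: algebra_simps)
        then show ?thesis using True by simp
      qed
      have num: "(a*e + b*g)*x + (a*f + b*h) = a*(e*x+f)"
      proof -
        have "(a*e + b*g)*x + (a*f + b*h) = a*(e*x+f) + b*(g*x+h)" by (simp add: algebra_simps)
        then show ?thesis using True by simp
      qed
      have 2: "(c*(e*x+f) = 0) = (c = 0)" using nz by simp
      have 3: "a*(e*x+f) / (c*(e*x+f)) = a/c" using nz by simp
      show ?thesis unfolding 1 Some AB by (simp only: mobius_def den num 2 3 mat2.sel option.case) (simp add: True)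
    next
      case False
      let ?y = "(e*x+f)/(g*x+h)"
      have 1: "mobius (Mat2 e f g h) p = Some ?y" using Some False by (simp add: mobius_def)
      have den: "(c*e + d*g)*x + (c*f + d*h) = (c*?y + d)*(g*x+h)" using False
        by (simp add: field_simps)
      have num: "(a*e + b*g)*x + (a*f + b*h) = (a*?y + b)*(g*x+h)" using False
        by (simp add: field_simps)
      have 2: "((c*?y + d)*(g*x+h) = 0) = (c*?y + d = 0)" using False by simp
      have 3: "(a*?y + b)*(g*x+h) / ((c*?y + d)*(g*x+h)) = (a*?y + b)/(c*?y + d)"
        using False by simp
      show ?thesis unfolding 1 Some AB by (simp only: mobius_def den num 2 3 mat2.sel option.case) (simp add: False)
    qed
  qed
qed

lemma mobius_mul:
  assumes dB: "mdet B \<noteq> 0"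
  shows "mobius (A \<cdot>\<^sub>m B) p = mobius A (mobius B p)"
proof -
  obtain a b c d where A: "A = Mat2 a b c d" by (cases A)
  obtain e f g h where B: "B = Mat2 e f g h" by (cases B)
  have dB': "e*h - f*g \<noteq> 0" using dB B by (simp add: mdet_def)
  show ?thesis unfolding A B by (rule mobius_mul0[OF dB'])
qed

lemma mobius_inj:
  assumes "mdet A \<noteq> 0" "mobius A p = mobius A q" shows "p = q"
proof -
  have "mobius (minv A) (mobius A p) = mobius (minv A) (mobius A q)" using assms by simp
  moreover have "mdet (minv A) \<noteq> 0"
    using assms(1) mdet_mul[of "minv A" A] minv_left[of A] by (auto simp: mdet_def)
  ultimately show ?thesis using assms(1)
    by (simp add: mobius_mul[symmetric] minv_left)
qed



lemma mpow_0[simp]: "mpow A 0 = mid" by (simp add: mpow_def)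
lemma mpow_Suc: "mpow A (Suc n) = A \<cdot>\<^sub>m mpow A n" by (simp add: mpow_def)
lemma mpow_add: "mpow A (m + n) = mpow A m \<cdot>\<^sub>m mpow A n"
  by (induction m) (simp_all add: mpow_Suc mmul_assoc)
lemma mpow_Suc': "mpow A (Suc n) = mpow A n \<cdot>\<^sub>m A"
  using mpow_add[of A n 1] by (simp add: mpow_Suc)

lemma mdet_S: "mdet Smat = 1" by (simp add: mdet_def Smat_def)
lemma mdet_T: "mdet Tmat = 1" by (simp add: mdet_def Tmat_def)
lemma minv_S: "minv Smat = mneg Smat" by (simp add: minv_def Smat_def mdet_def mneg_def)
lemma minv_T: "minv Tmat = Mat2 1 (-lam) 0 1" by (simp add: minv_def Tmat_def mdet_def)

lemma G18_det: "A \<in> G18 \<Longrightarrow> mdet A = 1"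
proof (induction rule: G18.induct)
  case G_id then show ?case by (simp add: mdet_def)
qed (simp_all add: mdet_mul mdet_S mdet_T mdet_minv)

lemma G18_mul: "A \<in> G18 \<Longrightarrow> B \<in> G18 \<Longrightarrow> A \<cdot>\<^sub>m B \<in> G18"
  by (induction rule: G18.induct) (simp_all add: mmul_assoc G18.intros)

lemma G18_S: "Smat \<in> G18" using G18.G_S[OF G18.G_id] by simp
lemma G18_T: "Tmat \<in> G18" using G18.G_T[OF G18.G_id] by simp
lemma G18_Si: "minv Smat \<in> G18" using G18.G_Sinv[OF G18.G_id] by simp
lemma G18_Ti: "minv Tmat \<in> G18" using G18.G_Tinv[OF G18.G_id] by simp

lemma left_inv_unique: "Y \<cdot>\<^sub>m M = mid \<Longrightarrow> mdet M \<noteq> 0 \<Longrightarrow> Y = minv M"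
proof -
  assume a: "Y \<cdot>\<^sub>m M = mid" "mdet M \<noteq> 0"
  have "Y = Y \<cdot>\<^sub>m (M \<cdot>\<^sub>m minv M)" using minv_right[OF a(2)] by simp
  also have "\<dots> = minv M" by (simp add: mmul_assoc[symmetric] a(1))
  finally show ?thesis .
qed

lemma mdet_minv_nz: "mdet A \<noteq> 0 \<Longrightarrow> mdet (minv A) \<noteq> 0"
  using mdet_mul[of "minv A" A] minv_left[of A] by (auto simp: mdet_def)

lemma minv_mul: "mdet A \<noteq> 0 \<Longrightarrow> mdet B \<noteq> 0 \<Longrightarrow> minv (A \<cdot>\<^sub>m B) = minv B \<cdot>\<^sub>m minv A"
proof -
  assume a: "mdet A \<noteq> 0" "mdet B \<noteq> 0"
  have "(minv B \<cdot>\<^sub>m minv A) \<cdot>\<^sub>m (A \<cdot>\<^sub>m B) = minv B \<cdot>\<^sub>m ((minv A \<cdot>\<^sub>m A) \<cdot>\<^sub>m B)"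
    by (simp add: mmul_assoc)
  also have "\<dots> = mid" using a by (simp add: minv_left)
  finally show ?thesis using a by (intro left_inv_unique[symmetric]) (auto simp: mdet_mul)
qed

lemma minv_minv: "mdet A \<noteq> 0 \<Longrightarrow> minv (minv A) = A"
proof -
  assume a: "mdet A \<noteq> 0"
  show ?thesis by (rule sym, rule left_inv_unique[OF minv_right[OF a] mdet_minv_nz[OF a]])
qed

lemma minv_mid: "minv mid = mid" by (simp add: minv_def mid_def mdet_def)

lemma G18_inv: "A \<in> G18 \<Longrightarrow> minv A \<in> G18"
proof (induction rule: G18.induct)
  case G_id then show ?case by (simp add: minv_mid G18.G_id)
next
  case (G_S A)
  have d: "mdet A \<noteq> 0" using G18_det[OF G_S.hyps] by simp
  have "minv (Smat \<cdot>\<^sub>m A) = minv A \<cdot>\<^sub>m minv Smat"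
    by (rule minv_mul) (simp_all add: d mdet_S)
  then show ?case using G18_mul[OF G_S.IH G18_Si] by simp
next
  case (G_T A)
  have d: "mdet A \<noteq> 0" using G18_det[OF G_T.hyps] by simp
  have "minv (Tmat \<cdot>\<^sub>m A) = minv A \<cdot>\<^sub>m minv Tmat"
    by (rule minv_mul) (simp_all add: d mdet_T)
  then show ?case using G18_mul[OF G_T.IH G18_Ti] by simp
next
  case (G_Sinv A)
  have d: "mdet A \<noteq> 0" using G18_det[OF G_Sinv.hyps] by simp
  have d2: "mdet (minv Smat) \<noteq> 0" using mdet_minv[OF mdet_S] by simp
  have "minv (minv Smat \<cdot>\<^sub>m A) = minv A \<cdot>\<^sub>m minv (minv Smat)"
    by (rule minv_mul[OF d2 d])
  also have "minv (minv Smat) = Smat" by (rule minv_minv) (simp add: mdet_S)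
  finally show ?case using G18_mul[OF G_Sinv.IH G18_S] by simp
next
  case (G_Tinv A)
  have d: "mdet A \<noteq> 0" using G18_det[OF G_Tinv.hyps] by simp
  have d2: "mdet (minv Tmat) \<noteq> 0" using mdet_minv[OF mdet_T] by simp
  have "minv (minv Tmat \<cdot>\<^sub>m A) = minv A \<cdot>\<^sub>m minv (minv Tmat)"
    by (rule minv_mul[OF d2 d])
  also have "minv (minv Tmat) = Tmat" by (rule minv_minv) (simp add: mdet_T)
  finally show ?case using G18_mul[OF G_Tinv.IH G18_T] by simp
qed

lemma SS: "Smat \<cdot>\<^sub>m Smat = mneg mid"
  by (rule mat2_eqI) (simp_all add: Smat_def)

lemma G18_mneg: "A \<in> G18 \<Longrightarrow> mneg A \<in> G18"
proof -
  assume "A \<in> G18"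
  then have "(Smat \<cdot>\<^sub>m Smat) \<cdot>\<^sub>m A \<in> G18" using G18_mul[OF G18_mul[OF G18_S G18_S]] by blast
  then show ?thesis by (simp add: SS)
qed

lemma G18_mpow: "A \<in> G18 \<Longrightarrow> mpow A n \<in> G18"
  by (induction n) (simp_all add: mpow_Suc G18.G_id G18_mul)

lemma orbit18_eq:
  assumes h: "h \<in> G18" shows "orbit18 (mobius h p) = orbit18 p"
proof
  show "orbit18 (mobius h p) \<subseteq> orbit18 p"
  proof
    fix q assume "q \<in> orbit18 (mobius h p)"
    then obtain g where g: "g \<in> G18" "q = mobius g (mobius h p)" by (auto simp: orbit18_def)
    then have "q = mobius (g \<cdot>\<^sub>m h) p" using G18_det[OF h] by (simp add: mobius_mul)
    then show "q \<in> orbit18 p" using G18_mul[OF g(1) h] by (auto simp: orbit18_def)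
  qed
next
  show "orbit18 p \<subseteq> orbit18 (mobius h p)"
  proof
    fix q assume "q \<in> orbit18 p"
    then obtain g where g: "g \<in> G18" "q = mobius g p" by (auto simp: orbit18_def)
    have dh: "mdet h \<noteq> 0" using G18_det[OF h] by simp
    have "mobius (g \<cdot>\<^sub>m minv h) (mobius h p) = mobius g (mobius (minv h \<cdot>\<^sub>m h) p)"
      using dh mdet_minv_nz[OF dh] by (simp add: mobius_mul mmul_assoc[symmetric])
    then have "q = mobius (g \<cdot>\<^sub>m minv h) (mobius h p)" using g dh by (simp add: minv_left)
    then show "q \<in> orbit18 (mobius h p)" using G18_mul[OF g(1) G18_inv[OF h]]
      by (auto simp: orbit18_def)
  qed
qed

lemma orbit18_self: "p \<in> orbit18 p"
  unfolding orbit18_def using G18.G_id by force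

lemma K18_mem: "x \<in> K18 \<longleftrightarrow> (\<forall>F. is_subfield F \<and> lam^2 \<in> F \<longrightarrow> x \<in> F)"
  unfolding K18_def by blast

lemma K18_in: "x \<in> K18 \<Longrightarrow> is_subfield F \<Longrightarrow> lam^2 \<in> F \<Longrightarrow> x \<in> F"
  unfolding K18_mem by blast

lemma K18_I: "(\<And>F. is_subfield F \<Longrightarrow> lam^2 \<in> F \<Longrightarrow> x \<in> F) \<Longrightarrow> x \<in> K18"
  unfolding K18_mem by blast

lemma lam2_K: "lam^2 \<in> K18"
  by (rule K18_I)

lemma K_0[simp]: "0 \<in> K18"
  by (rule K18_I) (simp add: is_subfield_def)
lemma K_1[simp]: "1 \<in> K18"
  by (rule K18_I) (simp add: is_subfield_def)

lemma K_add: "x \<in> K18 \<Longrightarrow> y \<in> K18 \<Longrightarrow> x + y \<in> K18"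
proof (rule K18_I)
  fix F assume a: "x \<in> K18" "y \<in> K18" "is_subfield F" "lam^2 \<in> F"
  then have "x \<in> F" "y \<in> F" "is_subfield F" using K18_in[OF a(1) a(3,4)] K18_in[OF a(2) a(3,4)] by auto
  then show "x + y \<in> F" unfolding is_subfield_def by simp
qed
lemma K_mul: "x \<in> K18 \<Longrightarrow> y \<in> K18 \<Longrightarrow> x * y \<in> K18"
proof (rule K18_I)
  fix F assume a: "x \<in> K18" "y \<in> K18" "is_subfield F" "lam^2 \<in> F"
  then have "x \<in> F" "y \<in> F" "is_subfield F" using K18_in[OF a(1) a(3,4)] K18_in[OF a(2) a(3,4)] by auto
  then show "x * y \<in> F" unfolding is_subfield_def by simp
qed
lemma K_neg: "x \<in> K18 \<Longrightarrow> - x \<in> K18"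
proof (rule K18_I)
  fix F assume a: "x \<in> K18" "is_subfield F" "lam^2 \<in> F"
  then have "x \<in> F" "is_subfield F" using K18_in[OF a(1) a(2,3)] by auto
  then show "- x \<in> F" unfolding is_subfield_def by simp
qed
lemma K_inv: "x \<in> K18 \<Longrightarrow> inverse x \<in> K18"
proof (rule K18_I)
  fix F assume a: "x \<in> K18" "is_subfield F" "lam^2 \<in> F"
  then have "x \<in> F" "is_subfield F" using K18_in[OF a(1) a(2,3)] by auto
  then show "inverse x \<in> F" unfolding is_subfield_def by simp
qed

lemma K_diff: "x \<in> K18 \<Longrightarrow> y \<in> K18 \<Longrightarrow> x - y \<in> K18"
proof -
  assume "x \<in> K18" "y \<in> K18"
  then have "x + (- y) \<in> K18" by (intro K_add K_neg)
  then show ?thesis by (simp only: diff_conv_add_uminus)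
qed

lemma K_div: "x \<in> K18 \<Longrightarrow> y \<in> K18 \<Longrightarrow> x / y \<in> K18"
proof -
  assume "x \<in> K18" "y \<in> K18"
  then have "x * inverse y \<in> K18" by (intro K_mul K_inv)
  then show ?thesis by (simp only: divide_inverse)
qed

lemma K_nat: "real n \<in> K18"
proof (induction n)
  case 0 then show ?case by simp
next
  case (Suc n)
  have "1 + real n \<in> K18" by (rule K_add[OF K_1 Suc.IH])
  then show ?case by (simp only: of_nat_Suc add.commute)
qed

lemma K_int: "real_of_int n \<in> K18"
proof (cases "n \<ge> 0")
  case True
  then have e: "real_of_int n = real (nat n)" by simp
  show ?thesis unfolding e by (rule K_nat)
next
  case False
  then have e: "real_of_int n = - real (nat (-n))" by simp
  show ?thesis unfolding e by (rule K_neg[OF K_nat])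
qed

lemma K_pow: "x \<in> K18 \<Longrightarrow> x ^ n \<in> K18"
proof (induction n)
  case 0 then show ?case by simp
next
  case (Suc n)
  then show ?case unfolding power_Suc by (intro K_mul)
qed

lemma lamK_I: "x \<in> K18 \<Longrightarrow> lam * x \<in> lamK"
  unfolding lamK_def by blast

section \<open>Trigonometry: lambda and powers of U\<close>

definition th :: real where "th = pi / 18"
definition aa :: "nat \<Rightarrow> real" where "aa j = sin (real j * th) / sin th"

lemma sin_th_pos: "sin th > 0"
  unfolding th_def by (rule sin_gt_zero) simp_all

lemma lam_th: "lam = 2 * cos th" by (simp add: lam_def th_def)

lemma aa_rec: "aa (Suc (Suc j)) = lam * aa (Suc j) - aa j"
proof -
  let ?x = "real (Suc j) * th"
  have e1: "real (Suc (Suc j)) * th = ?x + th" by (simp add: algebra_simps)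
  have e2: "real j * th = ?x - th" by (simp add: algebra_simps)
  have "sin (?x + th) + sin (?x - th) = 2 * cos th * sin ?x"
    by (simp add: sin_add sin_diff)
  then have "sin (real (Suc (Suc j)) * th) = 2 * cos th * sin ?x - sin (real j * th)"
    unfolding e1 e2 by linarith
  then show ?thesis unfolding aa_def lam_th using sin_th_pos by (simp add: field_simps)
qed

lemma aa_pos: "1 \<le> j \<Longrightarrow> j \<le> 17 \<Longrightarrow> aa j > 0"
proof -
  assume j: "1 \<le> j" "j \<le> 17"
  have "sin (real j * th) > 0"
  proof (rule sin_gt_zero)
    show "0 < real j * th" using j by (simp add: th_def)
    have "real j * th \<le> 17 * (pi/18)" unfolding th_def using j by (intro mult_right_mono) auto
    also have "\<dots> < pi" by simp
    finally show "real j * th < pi" .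
  qed
  then show ?thesis unfolding aa_def using sin_th_pos by simp
qed

lemma aa_0[simp]: "aa 0 = 0" by (simp add: aa_def)
lemma aa_1: "aa 1 = 1" using sin_th_pos by (simp add: aa_def)
lemma aa_sym: "j \<le> 18 \<Longrightarrow> aa (18 - j) = aa j"
proof -
  assume "j \<le> 18"
  then have "real (18 - j) * th = pi - real j * th" by (simp add: th_def of_nat_diff algebra_simps)
  then show ?thesis by (simp add: aa_def)
qed
lemma aa_18: "aa 18 = 0" using aa_sym[of 18] by simp
lemma aa_17: "aa 17 = 1"
proof -
  have "aa (18 - 1) = aa 1" by (rule aa_sym) simp
  then show ?thesis using aa_1 by simp
qed
lemma aa_19: "aa 19 = -1"
proof -
  have "real 19 * th = th + pi" by (simp add: th_def)
  then have "sin (real 19 * th) = - sin th" by (simp only: sin_periodic_pi)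
  then show ?thesis using sin_th_pos unfolding aa_def by simp
qed
lemma aa_rec': "aa (j + 2) = lam * aa (j + 1) - aa j"
  using aa_rec[of j] by (simp add: numeral_2_eq_2)
lemma aa_1': "aa (Suc 0) = 1" using aa_1 by simp
lemma aa_2: "aa 2 = lam" unfolding numeral_2_eq_2 using aa_rec[of 0] aa_1' by simp
lemma aa_3: "aa 3 = lam^2 - 1"
proof -
  have "aa (Suc (Suc (Suc 0))) = lam * aa (Suc (Suc 0)) - aa (Suc 0)" by (rule aa_rec)
  moreover have "aa (Suc (Suc 0)) = lam" using aa_2 by (simp add: numeral_2_eq_2)
  ultimately show ?thesis using aa_1' by (simp add: power2_eq_square numeral_3_eq_3)
qed
lemma aa_16: "aa 16 = lam"
proof -
  have "aa (18 - 2) = aa 2" by (rule aa_sym) simp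
  then show ?thesis using aa_2 by simp
qed
lemma aa_15: "aa 15 = lam^2 - 1"
proof -
  have "aa (18 - 3) = aa 3" by (rule aa_sym) simp
  then show ?thesis using aa_3 by simp
qed

definition Umat :: mat2 where "Umat = Smat \<cdot>\<^sub>m Tmat"

lemma Umat_eq: "Umat = Mat2 0 (-1) 1 lam"
  by (rule mat2_eqI) (simp_all add: Umat_def Smat_def Tmat_def)

lemma mdet_U: "mdet Umat = 1" by (simp add: Umat_def mdet_mul mdet_S mdet_T)

lemma G18_U: "Umat \<in> G18" unfolding Umat_def by (rule G18_mul[OF G18_S G18_T])

lemma U_pow: "mpow Umat (Suc j) = Mat2 (- aa j) (- aa (Suc j)) (aa (Suc j)) (aa (Suc (Suc j)))"
proof (induction j)
  case 0 have "aa (Suc (Suc 0)) = lam" using aa_2 by (simp add: numeral_2_eq_2)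
  then show ?case using aa_1' by (intro mat2_eqI) (simp_all add: Umat_eq mpow_Suc)
next
  case (Suc j)
  show ?case unfolding mpow_Suc[of Umat "Suc j"] Suc
    by (rule mat2_eqI) (simp_all add: Umat_eq aa_rec[of "Suc j"] aa_rec[of j])
qed

lemma U18: "mpow Umat 18 = mneg mid"
proof -
  have e: "Suc 17 = 18" "Suc 18 = 19" by simp_all
  have "mpow Umat 18 = Mat2 (- aa 17) (- aa 18) (aa 18) (aa 19)"
    using U_pow[of 17] unfolding e .
  then show ?thesis by (simp add: aa_17 aa_18 aa_19 mneg_def mid_def)
qed

lemma mdet_Upow: "mdet (mpow Umat n) = 1"
proof (induction n)
  case 0 then show ?case by (simp add: mdet_def)
next
  case (Suc n) then show ?case by (simp only: mpow_Suc mdet_mul mdet_U mult_1_left)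
qed

lemma lam_pos: "lam > 0" unfolding lam_def by (simp add: cos_gt_zero)

lemma lam6: "lam^6 = 6 * lam^4 - 9 * lam^2 + 3"
proof -
  have c1: "cos (3 * (pi/18)) = 4 * cos (pi/18) ^ 3 - 3 * cos (pi/18)" by (rule cos_treble_cos)
  have "3 * (pi/18) = pi/6" by simp
  then have c2: "cos (3 * (pi/18)) = sqrt 3 / 2" using cos_30 by simp
  have "4 * cos (pi/18) ^ 3 - 3 * cos (pi/18) = sqrt 3 / 2" using c1 c2 by simp
  moreover have "lam^3 - 3 * lam = 2 * (4 * cos (pi/18) ^ 3 - 3 * cos (pi/18))"
    unfolding lam_def by (simp add: power3_eq_cube algebra_simps)
  ultimately have "lam^3 - 3 * lam = sqrt 3" by simp
  then have "(lam^3 - 3*lam)^2 = 3" by simp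
  moreover have "(lam^3 - 3*lam)^2 = lam^6 - 6*lam^4 + 9*lam^2" by algebra
  ultimately show ?thesis by linarith
qed



section \<open>Coding of points by the free product structure\<close>

definition inP :: "real option \<Rightarrow> bool" where "inP p \<longleftrightarrow> (\<exists>x. p = Some x \<and> x > 0)"

definition inI :: "nat \<Rightarrow> real option \<Rightarrow> bool" where
  "inI j p \<longleftrightarrow> 1 \<le> j \<and> j \<le> 17 \<and> (\<exists>q. inP q \<and> p = mobius (mpow Umat j) q)"

lemma aa_nonneg: "j \<le> 18 \<Longrightarrow> aa j \<ge> 0"
proof -
  assume j: "j \<le> 18"
  consider "j = 0" | "j = 18" | "1 \<le> j \<and> j \<le> 17" using j by linarith
  then show ?thesis
  proof cases
    case 1 then show ?thesis by simp
  next
    case 2 then show ?thesis by (simp add: aa_18)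
  next
    case 3 then show ?thesis using aa_pos[of j] by simp
  qed
qed

lemma mobius_U_mul: "mobius (mpow Umat (i + j)) p = mobius (mpow Umat i) (mobius (mpow Umat j) p)"
  by (simp add: mpow_add mobius_mul mdet_Upow)

lemma mobius_U18: "mobius (mpow Umat 18) p = p"
  by (simp add: U18)

lemma Upow_P_neg:
  assumes j: "1 \<le> j" "j \<le> 17" and x: "x > 0"
  shows "\<exists>y. mobius (mpow Umat j) (Some x) = Some y \<and> y < 0"
proof -
  obtain i where i: "j = Suc i" using j by (cases j) auto
  have M: "mpow Umat j = Mat2 (- aa i) (- aa (Suc i)) (aa (Suc i)) (aa (Suc (Suc i)))"
    unfolding i by (rule U_pow)
  have a1: "aa (Suc i) > 0" using aa_pos[of "Suc i"] j i by simp
  have a0: "aa i \<ge> 0" using aa_nonneg[of i] j i by simp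
  have a2: "aa (Suc (Suc i)) \<ge> 0" using aa_nonneg[of "Suc (Suc i)"] j i by simp
  have m1: "aa (Suc i) * x > 0" using a1 x by (rule mult_pos_pos)
  have m2: "aa i * x \<ge> 0" using a0 x by simp
  have den: "aa (Suc i) * x + aa (Suc (Suc i)) > 0" using m1 a2 by linarith
  have num: "- aa i * x + - aa (Suc i) < 0" using m2 a1 by linarith
  have e: "mobius (mpow Umat j) (Some x) = Some ((- aa i * x + - aa (Suc i)) / (aa (Suc i) * x + aa (Suc (Suc i))))"
    using den unfolding M mobius_def by simp
  have "(- aa i * x + - aa (Suc i)) / (aa (Suc i) * x + aa (Suc (Suc i))) < 0"
    by (rule divide_neg_pos[OF num den])
  then show ?thesis unfolding e by blast
qed

lemma inI_neg: "inI j p \<Longrightarrow> \<exists>y. p = Some y \<and> y < 0"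
proof -
  assume "inI j p"
  then obtain q where q: "inP q" "p = mobius (mpow Umat j) q" "1 \<le> j" "j \<le> 17" unfolding inI_def by blast
  then obtain x where x: "q = Some x" "x > 0" unfolding inP_def by blast
  show ?thesis using Upow_P_neg[OF q(3,4) x(2)] q(2) x(1) by simp
qed

lemma inI_not_P: "inI j p \<Longrightarrow> \<not> inP p"
  using inI_neg unfolding inP_def by force

lemma inI_unique_aux:
  assumes "inI j p" "inI j' p" "j < j'" shows False
proof -
  obtain q where q: "inP q" "p = mobius (mpow Umat j) q" using assms(1) unfolding inI_def by blast
  obtain q' where q': "inP q'" "p = mobius (mpow Umat j') q'" using assms(2) unfolding inI_def by blast
  have j: "1 \<le> j" "j' \<le> 17" "j \<le> 17" using assms unfolding inI_def by auto
  have "q = mobius (mpow Umat (18 - j)) p"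
    using q(2) mobius_U_mul[of "18 - j" j q] j by (simp add: mobius_U18)
  also have "\<dots> = mobius (mpow Umat (18 - j + j')) q'"
    using q'(2) mobius_U_mul[of "18 - j" j' q'] by simp
  also have "18 - j + j' = 18 + (j' - j)" using assms(3) j by simp
  also have "mobius (mpow Umat (18 + (j' - j))) q' = mobius (mpow Umat (j' - j)) q'"
    using mobius_U_mul[of 18 "j' - j" q'] by (simp add: mobius_U18)
  finally have "q = mobius (mpow Umat (j' - j)) q'" .
  then have "inI (j' - j) q" unfolding inI_def using q' assms(3) j by auto
  then show False using inI_not_P q(1) by blast
qed

lemma inI_unique: "inI j p \<Longrightarrow> inI j' p \<Longrightarrow> j = j'"
proof (rule ccontr)
  assume a: "inI j p" "inI j' p" "j \<noteq> j'"
  then consider "j < j'" | "j' < j" by linarith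
  then show False
  proof cases
    case 1 then show False using inI_unique_aux[OF a(1) a(2)] by simp
  next
    case 2 then show False using inI_unique_aux[OF a(2) a(1)] by simp
  qed
qed

lemma inI_back: "inI j p \<Longrightarrow> inP (mobius (mpow Umat (18 - j)) p)"
proof -
  assume a: "inI j p"
  then obtain q where q: "inP q" "p = mobius (mpow Umat j) q" unfolding inI_def by blast
  have j: "j \<le> 18" using a unfolding inI_def by auto
  have "mobius (mpow Umat (18 - j)) p = q"
    using q(2) mobius_U_mul[of "18 - j" j q] j by (simp add: mobius_U18)
  then show ?thesis using q(1) by simp
qed

lemma S_Some: "x \<noteq> 0 \<Longrightarrow> mobius Smat (Some x) = Some (- 1 / x)"
  by (simp add: mobius_def Smat_def)

lemma SS_mob: "mobius Smat (mobius Smat p) = p"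
  using mobius_mul[of Smat Smat p] by (simp add: mdet_S SS)

lemma S_neg_P: "y < 0 \<Longrightarrow> inP (mobius Smat (Some y))"
  by (simp add: S_Some inP_def)

lemma S_P_neg: "inP p \<Longrightarrow> \<exists>y. mobius Smat p = Some y \<and> y < 0"
  unfolding inP_def by (auto simp: S_Some)

definition stepR :: "real option \<Rightarrow> real option \<Rightarrow> bool" where
  "stepR p q \<longleftrightarrow> inP p \<and> (\<exists>j. inI j (mobius Smat p) \<and> q = mobius (mpow Umat (18 - j)) (mobius Smat p))"

definition chain :: "(nat \<Rightarrow> real option) \<Rightarrow> bool" where
  "chain f \<longleftrightarrow> (\<forall>n. stepR (f n) (f (Suc n)))"

definition projR :: "real option \<Rightarrow> real option \<Rightarrow> bool" where
  "projR p z \<longleftrightarrow> (inP p \<and> z = p) \<or> (\<exists>j. inI j p \<and> z = mobius (mpow Umat (18 - j)) p)"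

definition good :: "real option \<Rightarrow> bool" where
  "good p \<longleftrightarrow> (\<exists>f. projR p (f 0) \<and> chain f)"

definition Eqv :: "real option \<Rightarrow> real option \<Rightarrow> bool" where
  "Eqv p q \<longleftrightarrow> (\<exists>f g m n. projR p (f 0) \<and> projR q (g 0) \<and> chain f \<and> chain g \<and> f m = g n)"

lemma stepR_det: "stepR p q \<Longrightarrow> stepR p q' \<Longrightarrow> q = q'"
  unfolding stepR_def using inI_unique by blast

lemma projR_det: "projR p z \<Longrightarrow> projR p z' \<Longrightarrow> z = z'"
  unfolding projR_def using inI_unique inI_not_P by blast

lemma projR_P: "inP p \<Longrightarrow> projR p z \<longleftrightarrow> z = p"
  unfolding projR_def using inI_not_P by blast

lemma chain_det: "chain f \<Longrightarrow> chain g \<Longrightarrow> f 0 = g 0 \<Longrightarrow> f n = g n"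
proof (induction n)
  case 0 then show ?case by simp
next
  case (Suc n)
  then have "f n = g n" by simp
  then show ?case using Suc.prems stepR_det unfolding chain_def by metis
qed

lemma chain_shift: "chain f \<Longrightarrow> chain (\<lambda>n. f (n + k))"
  unfolding chain_def by simp

lemma chain_after: "chain f \<Longrightarrow> chain g \<Longrightarrow> f m = g n \<Longrightarrow> f (m + i) = g (n + i)"
  using chain_det[of "\<lambda>i. f (i + m)" "\<lambda>i. g (i + n)" i] chain_shift[of f m] chain_shift[of g n]
  by (simp add: add.commute)

lemma Eqv_sym: "Eqv p q \<Longrightarrow> Eqv q p"
  unfolding Eqv_def by metis

lemma Eqv_good: "Eqv p q \<Longrightarrow> good q"
  unfolding Eqv_def good_def by blast

lemma Eqv_refl: "good p \<Longrightarrow> Eqv p p"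
  unfolding Eqv_def good_def by blast

lemma Eqv_trans:
  assumes "Eqv p q" "Eqv q r" shows "Eqv p r"
proof -
  obtain f g m n where 1: "projR p (f 0)" "projR q (g 0)" "chain f" "chain g" "f m = g n"
    using assms(1) unfolding Eqv_def by blast
  obtain g' h m' n' where 2: "projR q (g' 0)" "projR r (h 0)" "chain g'" "chain h" "g' m' = h n'"
    using assms(2) unfolding Eqv_def by blast
  have gg: "g i = g' i" for i using chain_det[OF 1(4) 2(3)] projR_det[OF 1(2) 2(1)] by blast
  have "f (m + m') = g (n + m')" using chain_after[OF 1(3) 1(4) 1(5)] .
  also have "\<dots> = g' (m' + n)" by (simp add: gg add.commute)
  also have "\<dots> = h (n' + n)" using chain_after[OF 2(3) 2(4) 2(5)] .
  finally show ?thesis unfolding Eqv_def using 1 2 by blast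
qed

lemma Eqv_S: assumes "good p" shows "Eqv p (mobius Smat p)"
proof -
  obtain f where f: "projR p (f 0)" "chain f" using assms unfolding good_def by blast
  consider "inP p" "f 0 = p" | j where "inI j p" "f 0 = mobius (mpow Umat (18 - j)) p"
    using f(1) unfolding projR_def by blast
  then show ?thesis
  proof cases
    case 1
    have "stepR (f 0) (f 1)" using f(2) unfolding chain_def by (metis One_nat_def)
    then obtain j where j: "inI j (mobius Smat p)" "f 1 = mobius (mpow Umat (18 - j)) (mobius Smat p)"
      unfolding stepR_def using 1 by blast
    have "projR (mobius Smat p) (f 1)" unfolding projR_def using j by blast
    moreover have "chain (\<lambda>n. f (n + 1))" by (rule chain_shift[OF f(2)])
    ultimately show ?thesis unfolding Eqv_def using f
      by (intro exI[of _ f] exI[of _ "\<lambda>n. f (n + 1)"] exI[of _ 1] exI[of _ 0]) simp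
  next
    case 2
    obtain y where y: "p = Some y" "y < 0" using inI_neg[OF 2(1)] by blast
    have sp: "inP (mobius Smat p)" using S_neg_P y by simp
    define g where "g n = (case n of 0 \<Rightarrow> mobius Smat p | Suc m \<Rightarrow> f m)" for n
    have st: "stepR (mobius Smat p) (f 0)"
      unfolding stepR_def SS_mob using sp 2 by blast
    have "chain g" unfolding chain_def
    proof
      fix n show "stepR (g n) (g (Suc n))"
        using st f(2) unfolding g_def chain_def by (cases n) auto
    qed
    moreover have "projR (mobius Smat p) (g 0)" using sp unfolding g_def projR_def by simp
    ultimately show ?thesis unfolding Eqv_def using f
      by (intro exI[of _ f] exI[of _ g] exI[of _ 0] exI[of _ 1]) (simp add: g_def)
  qed
qed

lemma mpow_1: "mpow A 1 = A" by (simp add: mpow_def)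
lemma mpow_Suc0: "mpow A (Suc 0) = A" by (simp add: mpow_def)

lemma Eqv_U: assumes "good p" shows "Eqv p (mobius Umat p)"
proof -
  obtain f where f: "projR p (f 0)" "chain f" using assms unfolding good_def by blast
  have "projR (mobius Umat p) (f 0)"
  proof -
    consider "inP p" "f 0 = p" | j where "inI j p" "f 0 = mobius (mpow Umat (18 - j)) p"
      using f(1) unfolding projR_def by blast
    then show ?thesis
    proof cases
      case 1
      have i1: "inI 1 (mobius Umat p)" unfolding inI_def using 1 by (auto simp: mpow_1 mpow_Suc0)
      have "mobius (mpow Umat (18 - 1)) (mobius Umat p) = p"
        using mobius_U_mul[of 17 1 p] by (simp add: mpow_1 mpow_Suc0 mobius_U18)
      then show ?thesis unfolding projR_def using i1 1 by metis
    next
      case 2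
      obtain q where q: "inP q" "p = mobius (mpow Umat j) q" and j: "1 \<le> j" "j \<le> 17"
        using 2(1) unfolding inI_def by blast
      show ?thesis
      proof (cases "j = 17")
        case True
        have "mobius Umat p = q"
          using q(2) True mobius_U_mul[of 1 17 q] by (simp add: mpow_1 mpow_Suc0 mobius_U18)
        moreover have "f 0 = mobius Umat p" using 2(2) True by (simp add: mpow_1 mpow_Suc0)
        ultimately show ?thesis unfolding projR_def using q(1) by simp
      next
        case False
        have up: "mobius Umat p = mobius (mpow Umat (Suc j)) q"
          using q(2) mobius_U_mul[of 1 j q] by (simp add: mpow_1 mpow_Suc0)
        have i: "inI (Suc j) (mobius Umat p)" unfolding inI_def using up q(1) j False by auto
        have e: "18 - j = (18 - Suc j) + 1" using j False by simp
        have "mobius (mpow Umat (18 - Suc j)) (mobius Umat p) = mobius (mpow Umat (18 - j)) p"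
          unfolding e using mobius_U_mul[of "18 - Suc j" 1 p] by (simp only: mpow_1)
        then show ?thesis unfolding projR_def using i 2(2) by metis
      qed
    qed
  qed
  then show ?thesis unfolding Eqv_def using f by blast
qed

lemma Eqv_Upow: "good p \<Longrightarrow> Eqv p (mobius (mpow Umat n) p)"
proof (induction n)
  case 0 then show ?case by (simp add: Eqv_refl)
next
  case (Suc n)
  have "mobius (mpow Umat (Suc n)) p = mobius Umat (mobius (mpow Umat n) p)"
    by (simp add: mpow_Suc mobius_mul mdet_Upow)
  moreover have "Eqv (mobius (mpow Umat n) p) (mobius Umat (mobius (mpow Umat n) p))"
    using Eqv_U Eqv_good Suc by blast
  ultimately show ?case using Eqv_trans Suc by metis
qed

lemma T_SU: "Tmat = mneg (Smat \<cdot>\<^sub>m Umat)"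
  by (rule mat2_eqI) (simp_all add: Umat_eq Smat_def Tmat_def)

lemma U17: "mpow Umat 17 = Mat2 (- lam) (-1) 1 0"
proof -
  have e: "Suc 16 = 17" "Suc 17 = 18" by simp_all
  have "mpow Umat 17 = Mat2 (- aa 16) (- aa 17) (aa 17) (aa 18)"
    using U_pow[of 16] unfolding e .
  then show ?thesis by (simp add: aa_16 aa_17 aa_18)
qed

lemma Tinv_US: "minv Tmat = mneg (mpow Umat 17 \<cdot>\<^sub>m Smat)"
  by (rule mat2_eqI) (simp_all add: U17 minv_T Smat_def)

lemma Eqv_G: assumes "h \<in> G18" "good p" shows "Eqv p (mobius h p)"
  using assms
proof (induction rule: G18.induct)
  case G_id then show ?case by (simp add: Eqv_refl)
next
  case (G_S A)
  have d: "mdet A \<noteq> 0" using G18_det[OF G_S.hyps] by simp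
  have "Eqv (mobius A p) (mobius Smat (mobius A p))" using Eqv_S Eqv_good G_S by blast
  then show ?case using Eqv_trans G_S d by (metis mobius_mul)
next
  case (G_T A)
  have d: "mdet A \<noteq> 0" using G18_det[OF G_T.hyps] by simp
  have e: "mobius (Tmat \<cdot>\<^sub>m A) p = mobius Smat (mobius Umat (mobius A p))"
    using d by (simp add: mobius_mul T_SU mdet_U)
  have "Eqv (mobius A p) (mobius Umat (mobius A p))" using Eqv_U Eqv_good G_T by blast
  moreover then have "Eqv (mobius Umat (mobius A p)) (mobius Smat (mobius Umat (mobius A p)))"
    using Eqv_S Eqv_good by blast
  ultimately show ?case unfolding e using Eqv_trans G_T by metis
next
  case (G_Sinv A)
  have d: "mdet A \<noteq> 0" using G18_det[OF G_Sinv.hyps] by simp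
  have e: "mobius (minv Smat \<cdot>\<^sub>m A) p = mobius Smat (mobius A p)"
    using d by (simp add: mobius_mul minv_S)
  have "Eqv (mobius A p) (mobius Smat (mobius A p))" using Eqv_S Eqv_good G_Sinv by blast
  then show ?case unfolding e using Eqv_trans G_Sinv by metis
next
  case (G_Tinv A)
  have d: "mdet A \<noteq> 0" using G18_det[OF G_Tinv.hyps] by simp
  have e: "mobius (minv Tmat \<cdot>\<^sub>m A) p = mobius (mpow Umat 17) (mobius Smat (mobius A p))"
    using d by (simp add: mobius_mul Tinv_US mdet_S)
  have "Eqv (mobius A p) (mobius Smat (mobius A p))" using Eqv_S Eqv_good G_Tinv by blast
  moreover then have "Eqv (mobius Smat (mobius A p)) (mobius (mpow Umat 17) (mobius Smat (mobius A p)))"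
    using Eqv_Upow Eqv_good by blast
  ultimately show ?case unfolding e using Eqv_trans G_Tinv by metis
qed

lemma good_G: "h \<in> G18 \<Longrightarrow> good p \<Longrightarrow> good (mobius h p)"
  using Eqv_G Eqv_good by blast

lemma not_good_None: "\<not> good None"
proof
  assume "good None"
  then obtain f where "projR None (f 0)" by (auto simp: good_def)
  then show False unfolding projR_def inP_def using inI_neg by fastforce
qed



definition Bm :: "nat \<Rightarrow> mat2" where "Bm j = Smat \<cdot>\<^sub>m mpow Umat j"
definition Hw :: "nat list \<Rightarrow> mat2" where "Hw ws = foldr (\<lambda>j M. Bm j \<cdot>\<^sub>m M) ws mid"
definition validw :: "nat list \<Rightarrow> bool" where "validw ws \<longleftrightarrow> (\<forall>j\<in>set ws. 1 \<le> j \<and> j \<le> 17)"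

lemma Hw_Nil[simp]: "Hw [] = mid" by (simp add: Hw_def)
lemma Hw_Cons: "Hw (j # ws) = Bm j \<cdot>\<^sub>m Hw ws" by (simp add: Hw_def)
lemma Hw_append: "Hw (xs @ ys) = Hw xs \<cdot>\<^sub>m Hw ys"
  by (induction xs) (simp_all add: Hw_Cons mmul_assoc)

lemma mdet_Bm: "mdet (Bm j) = 1" by (simp add: Bm_def mdet_mul mdet_S mdet_Upow)
lemma mdet_Hw: "mdet (Hw ws) = 1"
proof (induction ws)
  case Nil then show ?case by (simp add: mdet_def)
next
  case (Cons j ws) then show ?case by (simp only: Hw_Cons mdet_mul mdet_Bm mult_1_left)
qed

lemma G18_Bm: "Bm j \<in> G18" unfolding Bm_def by (rule G18_mul[OF G18_S G18_mpow[OF G18_U]])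
lemma G18_Hw: "Hw ws \<in> G18"
  by (induction ws) (simp_all add: Hw_Cons G18.G_id G18_mul G18_Bm)

lemma Bm_P: assumes "1 \<le> j" "j \<le> 17" "inP z" shows "inP (mobius (Bm j) z)"
proof -
  obtain x where x: "z = Some x" "x > 0" using assms(3) unfolding inP_def by blast
  obtain y where y: "mobius (mpow Umat j) z = Some y" "y < 0" using Upow_P_neg[OF assms(1,2) x(2)] x(1) by blast
  have "mobius (Bm j) z = mobius Smat (Some y)" unfolding Bm_def using y(1)
    by (simp add: mobius_mul mdet_Upow)
  then show ?thesis using S_neg_P[OF y(2)] by simp
qed

lemma S_Bm: "mobius Smat (mobius (Bm j) z) = mobius (mpow Umat j) z"
proof -
  have "mobius Smat (mobius (Bm j) z) = mobius ((Smat \<cdot>\<^sub>m Smat) \<cdot>\<^sub>m mpow Umat j) z"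
    unfolding Bm_def by (simp add: mobius_mul mdet_Upow mdet_S mdet_mul mmul_assoc)
  then show ?thesis by (simp add: SS)
qed

lemma step_Bm: assumes "1 \<le> j" "j \<le> 17" "inP z"
  shows "stepR (mobius (Bm j) z) z" "inI j (mobius Smat (mobius (Bm j) z))"
proof -
  show i: "inI j (mobius Smat (mobius (Bm j) z))" unfolding S_Bm inI_def using assms by blast
  have "mobius (mpow Umat (18 - j)) (mobius (mpow Umat j) z) = z"
    using mobius_U_mul[of "18 - j" j z] assms(2) by (simp add: mobius_U18)
  then show "stepR (mobius (Bm j) z) z" unfolding stepR_def using Bm_P[OF assms] i
    by (metis S_Bm)
qed

lemma Hw_P: "validw ws \<Longrightarrow> inP z \<Longrightarrow> inP (mobius (Hw ws) z)"
proof (induction ws)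
  case Nil then show ?case by simp
next
  case (Cons j ws)
  then have "inP (mobius (Hw ws) z)" "1 \<le> j" "j \<le> 17" by (auto simp: validw_def)
  then show ?case by (simp add: Hw_Cons mobius_mul mdet_Hw Bm_P)
qed

lemma drop_Suc_nth: "r < length ws \<Longrightarrow> drop r ws = ws ! r # drop (Suc r) ws"
  by (simp add: Cons_nth_drop_Suc)

definition fchain :: "nat list \<Rightarrow> real option \<Rightarrow> nat \<Rightarrow> real option" where
  "fchain ws x i = mobius (Hw (drop (i mod length ws) ws)) x"

lemma fchain_props:
  assumes v: "validw ws" and ne: "ws \<noteq> []" and x: "inP x" and fx: "mobius (Hw ws) x = x"
  shows "chain (fchain ws x)" "fchain ws x 0 = x"
    "\<And>i. inI (ws ! (i mod length ws)) (mobius Smat (fchain ws x i))"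
proof -
  let ?L = "length ws"
  have L: "?L > 0" using ne by simp
  have key: "stepR (fchain ws x i) (fchain ws x (Suc i)) \<and> inI (ws ! (i mod ?L)) (mobius Smat (fchain ws x i))" for i
  proof -
    let ?r = "i mod ?L"
    have r: "?r < ?L" using L by simp
    have j: "1 \<le> ws ! ?r" "ws ! ?r \<le> 17" using v r unfolding validw_def by auto
    let ?z = "mobius (Hw (drop (Suc ?r) ws)) x"
    have vz: "validw (drop (Suc ?r) ws)" using v unfolding validw_def by (meson in_set_dropD)
    have z: "inP ?z" by (rule Hw_P[OF vz x])
    have fi: "fchain ws x i = mobius (Bm (ws ! ?r)) ?z"
      unfolding fchain_def drop_Suc_nth[OF r] by (simp add: Hw_Cons mobius_mul mdet_Hw)
    have fs: "fchain ws x (Suc i) = ?z"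
    proof (cases "Suc ?r < ?L")
      case True
      then have "Suc i mod ?L = Suc ?r" by (simp add: mod_Suc)
      then show ?thesis unfolding fchain_def by simp
    next
      case False
      then have e: "Suc ?r = ?L" using r by simp
      then have "Suc i mod ?L = 0" by (simp add: mod_Suc)
      then show ?thesis unfolding fchain_def e using fx by simp
    qed
    show ?thesis unfolding fi fs using step_Bm[OF j z] by simp
  qed
  show "chain (fchain ws x)" unfolding chain_def using key by blast
  show "fchain ws x 0 = x" unfolding fchain_def using fx by simp
  show "\<And>i. inI (ws ! (i mod length ws)) (mobius Smat (fchain ws x i))" using key by blast
qed

lemma good_fixP:
  assumes "validw ws" "ws \<noteq> []" "inP x" "mobius (Hw ws) x = x"
  shows "good x"
  unfolding good_def using fchain_props[OF assms] projR_P[OF assms(3)] by metis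

lemma Eqv_fix_digits:
  assumes v1: "validw ws1" "ws1 \<noteq> []" "inP x1" "mobius (Hw ws1) x1 = x1"
    and v2: "validw ws2" "ws2 \<noteq> []" "inP x2" "mobius (Hw ws2) x2 = x2"
    and E: "Eqv x1 x2"
  shows "\<exists>m n. \<forall>i. ws1 ! ((m + i) mod length ws1) = ws2 ! ((n + i) mod length ws2)"
proof -
  obtain f g m n where fg: "projR x1 (f 0)" "projR x2 (g 0)" "chain f" "chain g" "f m = g n"
    using E unfolding Eqv_def by blast
  note c1 = fchain_props[OF v1] and c2 = fchain_props[OF v2]
  have f0: "f 0 = x1" using fg(1) projR_P[OF v1(3)] by simp
  have g0: "g 0 = x2" using fg(2) projR_P[OF v2(3)] by simp
  have ff: "f i = fchain ws1 x1 i" for i using chain_det[OF fg(3) c1(1)] f0 c1(2) by simp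
  have gg: "g i = fchain ws2 x2 i" for i using chain_det[OF fg(4) c2(1)] g0 c2(2) by simp
  have "ws1 ! ((m + i) mod length ws1) = ws2 ! ((n + i) mod length ws2)" for i
  proof -
    have "f (m + i) = g (n + i)" by (rule chain_after[OF fg(3) fg(4) fg(5)])
    then have e: "fchain ws1 x1 (m + i) = fchain ws2 x2 (n + i)" using ff gg by simp
    show ?thesis using c1(3)[of "m + i"] c2(3)[of "n + i"] unfolding e by (rule inI_unique)
  qed
  then show ?thesis by blast
qed

lemma Bm_rev: "1 \<le> j \<Longrightarrow> j \<le> 17 \<Longrightarrow> Bm (18 - j) \<cdot>\<^sub>m Smat \<cdot>\<^sub>m Bm j = Smat"
proof -
  assume j: "1 \<le> j" "j \<le> 17"
  have "Bm (18 - j) \<cdot>\<^sub>m Smat \<cdot>\<^sub>m Bm j = Smat \<cdot>\<^sub>m (mpow Umat (18 - j) \<cdot>\<^sub>m (Smat \<cdot>\<^sub>m Smat) \<cdot>\<^sub>m mpow Umat j)"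
    unfolding Bm_def by (simp add: mmul_assoc)
  also have "\<dots> = mneg (Smat \<cdot>\<^sub>m mpow Umat (18 - j + j))" by (simp add: SS mpow_add)
  also have "\<dots> = Smat" using j by (simp add: U18)
  finally show ?thesis .
qed

definition revw :: "nat list \<Rightarrow> nat list" where "revw ws = map (\<lambda>j. 18 - j) (rev ws)"

lemma Hw_rev: "validw ws \<Longrightarrow> Hw (revw ws) \<cdot>\<^sub>m Smat \<cdot>\<^sub>m Hw ws = Smat"
proof (induction ws)
  case Nil then show ?case by (simp add: revw_def)
next
  case (Cons j ws)
  then have v: "validw ws" "1 \<le> j" "j \<le> 17" by (auto simp: validw_def)
  have "Hw (revw (j # ws)) \<cdot>\<^sub>m Smat \<cdot>\<^sub>m Hw (j # ws)
      = Hw (revw ws) \<cdot>\<^sub>m (Bm (18 - j) \<cdot>\<^sub>m Smat \<cdot>\<^sub>m Bm j) \<cdot>\<^sub>m Hw ws"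
    by (simp add: revw_def Hw_append Hw_Cons mmul_assoc)
  also have "\<dots> = Smat" using Bm_rev[OF v(2,3)] Cons.IH[OF v(1)] by (simp add: mmul_assoc)
  finally show ?case .
qed

lemma validw_rev: "validw ws \<Longrightarrow> validw (revw ws)"
  unfolding validw_def revw_def by auto

lemma sum_shift_periodic:
  fixes g :: "nat \<Rightarrow> nat"
  assumes per: "\<And>i. g (i + L) = g i"
  shows "(\<Sum>i<L. g (i + s)) = (\<Sum>i<L. g i)"
proof (induction s)
  case 0 then show ?case by simp
next
  case (Suc s)
  have a: "(\<Sum>i<Suc L. g (i + s)) = g s + (\<Sum>i<L. g (Suc i + s))"
    using sum.lessThan_Suc_shift[of "\<lambda>i. g (i + s)" L] by simp
  have b: "(\<Sum>i<Suc L. g (i + s)) = (\<Sum>i<L. g (i + s)) + g (L + s)" by simp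
  have c: "g (L + s) = g s" using per[of s] by (simp add: add.commute)
  have "(\<Sum>i<L. g (i + Suc s)) = (\<Sum>i<L. g (Suc i + s))" by simp
  also have "\<dots> = (\<Sum>i<L. g (i + s))" using a b c by linarith
  finally show ?case using Suc.IH by simp
qed

lemma sum_periodic_blocks:
  fixes g :: "nat \<Rightarrow> nat"
  assumes per: "\<And>i. g (i + L) = g i"
  shows "(\<Sum>i<N * L. g i) = N * (\<Sum>i<L. g i)"
proof (induction N)
  case 0 then show ?case by simp
next
  case (Suc N)
  have per2: "g (i + N * L) = g i" for i
  proof (induction N)
    case 0 then show ?case by simp
  next
    case (Suc N)
    have "g (i + Suc N * L) = g ((i + N * L) + L)" by (simp add: algebra_simps)
    then show ?case using per Suc by simp
  qed
  have "{..<Suc N * L} = {..<N * L} \<union> {N * L..<N * L + L}" by auto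
  then have "(\<Sum>i<Suc N * L. g i) = (\<Sum>i<N * L. g i) + (\<Sum>i\<in>{N * L..<N * L + L}. g i)"
    by (simp add: sum.union_disjoint ivl_disj_int)
  also have "(\<Sum>i\<in>{N * L..<N * L + L}. g i) = (\<Sum>i<L. g (i + N * L))"
    using sum.shift_bounds_nat_ivl[of g 0 "N * L" L] by (simp add: atLeast0LessThan add.commute)
  also have "\<dots> = (\<Sum>i<L. g i)" using per2 by simp
  finally show ?case using Suc.IH by simp
qed

definition cnt :: "nat \<Rightarrow> nat list \<Rightarrow> nat" where "cnt d ws = length (filter (\<lambda>x. x = d) ws)"

lemma sum_cnt: "(\<Sum>i<length ws. if ws ! i = d then 1 else 0) = cnt d ws"
proof (induction ws)
  case Nil then show ?case by (simp add: cnt_def)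
next
  case (Cons x ws)
  define f where "f i = (if (x # ws) ! i = d then 1 else (0::nat))" for i
  have "(\<Sum>i<Suc (length ws). f i) = f 0 + (\<Sum>i<length ws. f (Suc i))"
    by (rule sum.lessThan_Suc_shift)
  moreover have "f 0 = (if x = d then 1 else 0)" unfolding f_def by simp
  moreover have "(\<Sum>i<length ws. f (Suc i)) = (\<Sum>i<length ws. if ws ! i = d then 1 else 0)"
    unfolding f_def by simp
  ultimately have "(\<Sum>i<length (x # ws). f i) = (if x = d then 1 else 0) + cnt d ws"
    using Cons.IH by simp
  then show ?case unfolding f_def by (simp add: cnt_def)
qed

lemma window_count:
  assumes L: "length ws = L" "L > 0"
  shows "(\<Sum>i<N * L. if ws ! ((s + i) mod L) = d then 1 else (0::nat)) = N * cnt d ws"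
proof -
  define g where "g i = (if ws ! (i mod L) = d then 1 else (0::nat))" for i
  have per: "g (i + L) = g i" for i unfolding g_def by simp
  define h where "h i = g (i + s)" for i
  have perh: "h (i + L) = h i" for i unfolding h_def using per[of "i + s"] by (simp add: algebra_simps)
  have "(\<Sum>i<N * L. if ws ! ((s + i) mod L) = d then 1 else (0::nat)) = (\<Sum>i<N * L. h i)"
    unfolding h_def g_def by (simp add: add.commute)
  also have "\<dots> = N * (\<Sum>i<L. h i)" by (rule sum_periodic_blocks) (rule perh)
  also have "(\<Sum>i<L. h i) = (\<Sum>i<L. g i)" unfolding h_def by (rule sum_shift_periodic) (rule per)
  also have "(\<Sum>i<L. g i) = (\<Sum>i<L. if ws ! i = d then 1 else 0)" unfolding g_def
    by (intro sum.cong) auto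
  also have "\<dots> = cnt d ws" using sum_cnt[of ws d] L by simp
  finally show ?thesis .
qed

lemma density_eq:
  assumes "ws1 \<noteq> []" "ws2 \<noteq> []"
    and eq: "\<And>i. ws1 ! ((m + i) mod length ws1) = ws2 ! ((n + i) mod length ws2)"
  shows "length ws2 * cnt d ws1 = length ws1 * cnt d ws2"
proof -
  let ?L1 = "length ws1" and ?L2 = "length ws2"
  have "(\<Sum>i<?L2 * ?L1. if ws1 ! ((m + i) mod ?L1) = d then 1 else (0::nat))
      = (\<Sum>i<?L1 * ?L2. if ws2 ! ((n + i) mod ?L2) = d then 1 else (0::nat))"
    using eq by (simp add: mult.commute)
  then show ?thesis using window_count[where ws=ws1 and L="?L1" and N="?L2" and s=m and d=d] window_count[where ws=ws2 and L="?L2" and N="?L1" and s=n and d=d] assms(1,2)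
    by simp
qed



section \<open>Positive words and their fixed points\<close>

lemma lam_ge1: "lam \<ge> 1"
proof -
  have "cos (pi/3) \<le> cos (pi/18)" by (subst cos_mono_le_eq) auto
  then show ?thesis unfolding lam_def using cos_60 by simp
qed

definition Bp :: "nat \<Rightarrow> mat2" where "Bp j = Mat2 (aa j) (aa (Suc j)) (aa (j - 1)) (aa j)"

lemma Bm_Bp: "1 \<le> j \<Longrightarrow> Bm j = mneg (Bp j)"
proof -
  assume "1 \<le> j"
  then obtain i where i: "j = Suc i" by (cases j) auto
  show ?thesis unfolding i Bm_def U_pow Bp_def by (rule mat2_eqI) (simp_all add: Smat_def)
qed

definition Hp :: "nat list \<Rightarrow> mat2" where "Hp ws = foldr (\<lambda>j M. Bp j \<cdot>\<^sub>m M) ws mid"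

definition inD :: "nat list \<Rightarrow> bool" where
  "inD ws \<longleftrightarrow> set ws \<subseteq> {1, 2, 16, 17} \<and> (2 \<in> set ws \<or> 16 \<in> set ws)"

lemma inD_valid: "inD ws \<Longrightarrow> validw ws"
  unfolding inD_def validw_def by auto

lemma inD_rev: "inD ws \<Longrightarrow> inD (revw ws)"
proof -
  assume a: "inD ws"
  have s: "set (revw ws) = (\<lambda>j. 18 - j) ` set ws" unfolding revw_def by simp
  have 1: "set (revw ws) \<subseteq> {1, 2, 16, 17}" using a unfolding s inD_def by auto
  have "2 \<in> set ws \<or> 16 \<in> set ws" using a unfolding inD_def by simp
  then have "16 \<in> set (revw ws) \<or> 2 \<in> set (revw ws)"
  proof
    assume "2 \<in> set ws" then have "(\<lambda>j. 18 - j) 2 \<in> set (revw ws)" unfolding s by (rule imageI)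
    then show ?thesis by simp
  next
    assume "16 \<in> set ws" then have "(\<lambda>j. 18 - j) 16 \<in> set (revw ws)" unfolding s by (rule imageI)
    then show ?thesis by simp
  qed
  then show ?thesis using 1 unfolding inD_def by blast
qed

lemma inD_ne: "inD ws \<Longrightarrow> ws \<noteq> []"
  unfolding inD_def by auto

lemma Hw_Hp: "validw ws \<Longrightarrow> Hw ws = Hp ws \<or> Hw ws = mneg (Hp ws)"
proof (induction ws)
  case Nil then show ?case by (simp add: Hp_def)
next
  case (Cons j ws)
  then have v: "validw ws" "1 \<le> j" by (auto simp: validw_def)
  have e1: "Hw (j # ws) = mneg (Bp j \<cdot>\<^sub>m Hw ws)" by (simp add: Hw_Cons Bm_Bp[OF v(2)])
  have e2: "Hp (j # ws) = Bp j \<cdot>\<^sub>m Hp ws" by (simp add: Hp_def)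
  from Cons.IH[OF v(1)] show ?case unfolding e1 e2 by auto
qed

lemma mobius_Hw_Hp: "validw ws \<Longrightarrow> mobius (Hw ws) p = mobius (Hp ws) p"
  using Hw_Hp[of ws] by auto

lemma mdet_Hp: "validw ws \<Longrightarrow> mdet (Hp ws) = 1"
  using Hw_Hp[of ws] mdet_Hw[of ws] by auto

definition pm :: "mat2 \<Rightarrow> bool" where
  "pm A \<longleftrightarrow> ent11 A \<ge> 1 \<and> ent22 A \<ge> 1 \<and> ent12 A \<ge> 0 \<and> ent21 A \<ge> 0"

lemma pm_mul: assumes "pm A" "pm B"
  shows "pm (A \<cdot>\<^sub>m B)" "ent12 (A \<cdot>\<^sub>m B) \<ge> ent12 A" "ent12 (A \<cdot>\<^sub>m B) \<ge> ent12 B"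
    "ent21 (A \<cdot>\<^sub>m B) \<ge> ent21 A" "ent21 (A \<cdot>\<^sub>m B) \<ge> ent21 B"
proof -
  obtain a b c d where A: "A = Mat2 a b c d" by (cases A)
  obtain e f g h where B: "B = Mat2 e f g h" by (cases B)
  have a: "a \<ge> 1" "d \<ge> 1" "b \<ge> 0" "c \<ge> 0" using assms(1) A by (auto simp: pm_def)
  have b: "e \<ge> 1" "h \<ge> 1" "f \<ge> 0" "g \<ge> 0" using assms(2) B by (auto simp: pm_def)
  have p1: "a * e \<ge> 1" using mult_mono[of 1 a 1 e] a b by simp
  have p2: "d * h \<ge> 1" using mult_mono[of 1 d 1 h] a b by simp
  have p3: "b * g \<ge> 0" "c * f \<ge> 0" using a b by simp_all
  have p4: "a * f \<ge> f" using mult_right_mono[of 1 a f] a b by simp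
  have p5: "b * h \<ge> b" using mult_left_mono[of 1 h b] a b by simp
  have p6: "c * e \<ge> c" using mult_left_mono[of 1 e c] a b by simp
  have p7: "d * g \<ge> g" using mult_right_mono[of 1 d g] a b by simp
  have q1: "1 \<le> a * e + b * g" using p1 p3 by linarith
  have q2: "1 \<le> c * f + d * h" using p2 p3 by linarith
  have q3: "0 \<le> a * f + b * h" using p4 p5 a b by (simp add: add_nonneg_nonneg)
  have q4: "0 \<le> c * e + d * g" using p6 p7 a b by (simp add: add_nonneg_nonneg)
  show "pm (A \<cdot>\<^sub>m B)" unfolding pm_def A B using q1 q2 q3 q4 by simp
  show "ent12 (A \<cdot>\<^sub>m B) \<ge> ent12 A" unfolding A B using p4 p5 b by simp
  show "ent12 (A \<cdot>\<^sub>m B) \<ge> ent12 B" unfolding A B using p4 p5 a by simp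
  show "ent21 (A \<cdot>\<^sub>m B) \<ge> ent21 A" unfolding A B using p6 p7 b by simp
  show "ent21 (A \<cdot>\<^sub>m B) \<ge> ent21 B" unfolding A B using p6 p7 a by simp
qed

lemma pm_Bp: "j \<in> {1, 2, 16, 17} \<Longrightarrow> pm (Bp j)"
  using lam_ge1 aa_nonneg[of "j - 1"] aa_nonneg[of "Suc j"]
  by (auto simp: pm_def Bp_def aa_1 aa_1' aa_2 aa_16 aa_17 aa_18)

lemma Hp_props: "set ws \<subseteq> {1, 2, 16, 17} \<Longrightarrow>
   pm (Hp ws) \<and> (\<forall>j\<in>set ws. ent12 (Hp ws) \<ge> ent12 (Bp j) \<and> ent21 (Hp ws) \<ge> ent21 (Bp j))"
proof (induction ws)
  case Nil then show ?case by (simp add: Hp_def pm_def)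
next
  case (Cons j ws)
  then have IH: "pm (Hp ws)" "\<forall>i\<in>set ws. ent12 (Hp ws) \<ge> ent12 (Bp i) \<and> ent21 (Hp ws) \<ge> ent21 (Bp i)"
    and j: "pm (Bp j)" using pm_Bp by auto
  have e: "Hp (j # ws) = Bp j \<cdot>\<^sub>m Hp ws" by (simp add: Hp_def)
  note m = pm_mul[OF j IH(1)]
  have "\<forall>i\<in>set (j # ws). ent12 (Hp (j # ws)) \<ge> ent12 (Bp i) \<and> ent21 (Hp (j # ws)) \<ge> ent21 (Bp i)"
  proof
    fix i assume "i \<in> set (j # ws)"
    then consider "i = j" | "i \<in> set ws" by auto
    then show "ent12 (Hp (j # ws)) \<ge> ent12 (Bp i) \<and> ent21 (Hp (j # ws)) \<ge> ent21 (Bp i)"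
    proof cases
      case 1 then show ?thesis unfolding e using m(2) m(4) by simp
    next
      case 2
      then have "ent12 (Hp ws) \<ge> ent12 (Bp i)" "ent21 (Hp ws) \<ge> ent21 (Bp i)" using IH(2) by auto
      then show ?thesis unfolding e using m(3) m(5) by linarith
    qed
  qed
  then show ?case unfolding e using m(1) by simp
qed

lemma Hp_pos: assumes "inD ws" shows "pm (Hp ws)" "ent12 (Hp ws) > 0" "ent21 (Hp ws) > 0"
proof -
  have s: "set ws \<subseteq> {1, 2, 16, 17}" using assms unfolding inD_def by simp
  note P = Hp_props[OF s]
  show "pm (Hp ws)" using P by simp
  have a3: "aa 3 > 0" "aa 15 > 0" using aa_pos[of 3] aa_pos[of 15] by simp_all
  have "2 \<in> set ws \<or> 16 \<in> set ws" using assms unfolding inD_def by simp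
  then have "ent12 (Hp ws) \<ge> ent12 (Bp 2) \<and> ent21 (Hp ws) \<ge> ent21 (Bp 2)
     \<or> ent12 (Hp ws) \<ge> ent12 (Bp 16) \<and> ent21 (Hp ws) \<ge> ent21 (Bp 16)" using P by blast
  moreover have "ent12 (Bp 2) > 0" "ent21 (Bp 2) > 0" "ent12 (Bp 16) > 0" "ent21 (Bp 16) > 0"
    using a3 by (simp_all add: Bp_def aa_1 aa_1' aa_17 numeral_3_eq_3)
  ultimately show "ent12 (Hp ws) > 0" "ent21 (Hp ws) > 0" by auto
qed

lemma pos_fixpoint:
  assumes "pm N" "ent12 N > 0" "ent21 N > 0"
  shows "\<exists>x>0. mobius N (Some x) = Some x"
proof -
  obtain a b c d where N: "N = Mat2 a b c d" by (cases N)
  have h: "a \<ge> 1" "d \<ge> 1" "b > 0" "c > 0" using assms N by (auto simp: pm_def)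
  define s where "s = sqrt ((a - d)^2 + 4*b*c)"
  have bc: "4*b*c > 0" using h by simp
  have s2: "s^2 = (a - d)^2 + 4*b*c" unfolding s_def using bc
    by (intro real_sqrt_pow2) (simp add: add_nonneg_pos)
  have sabs: "s > \<bar>a - d\<bar>" unfolding s_def
    using bc by (intro real_less_rsqrt) (simp add: power2_abs)
  define x where "x = (a - d + s) / (2*c)"
  have xpos: "x > 0" unfolding x_def using sabs h by (intro divide_pos_pos) linarith+
  have den: "c * x + d > 0" using h xpos by (simp add: add_pos_pos)
  have quad: "c * x^2 + (d - a) * x - b = 0"
  proof -
    have "4 * c * (c * x^2 + (d - a) * x - b) = (2*c*x)^2 - 2*(a - d)*(2*c*x) - 4*b*c"
      by (simp add: algebra_simps power2_eq_square)
    also have "2*c*x = a - d + s" unfolding x_def using h by simp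
    also have "(a - d + s)^2 - 2*(a - d)*(a - d + s) - 4*b*c = s^2 - (a - d)^2 - 4*b*c"
      by (simp add: algebra_simps power2_eq_square)
    also have "\<dots> = 0" using s2 by simp
    finally show ?thesis using h by simp
  qed
  have "(a * x + b) / (c * x + d) = x"
  proof -
    have "a * x + b = x * (c * x + d)" using quad by (simp add: algebra_simps power2_eq_square)
    then show ?thesis using den by simp
  qed
  then show ?thesis using xpos den unfolding N mobius_def by (intro exI[of _ x]) simp
qed

lemma Hw_fixpoint: assumes "inD ws" shows "\<exists>x>0. mobius (Hw ws) (Some x) = Some x"
  using pos_fixpoint[OF Hp_pos[OF assms]] mobius_Hw_Hp[OF inD_valid[OF assms]] by simp

lemma Hw_fix_good_pos:
  assumes "inD ws" "x > 0" "mobius (Hw ws) (Some x) = Some x" shows "good (Some x)"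
  using good_fixP[OF inD_valid[OF assms(1)] inD_ne[OF assms(1)] _ assms(3)] assms(2)
  by (simp add: inP_def)

lemma Hw_fix_good:
  assumes D: "inD ws" and fx: "mobius (Hw ws) y = y" shows "good y"
proof -
  have v: "validw ws" by (rule inD_valid[OF D])
  obtain a b c d where N: "Hp ws = Mat2 a b c d" by (cases "Hp ws")
  have h: "a \<ge> 1" "d \<ge> 1" "b > 0" "c > 0" using Hp_pos[OF D] N by (auto simp: pm_def)
  have fx': "mobius (Mat2 a b c d) y = y" using fx mobius_Hw_Hp[OF v] N by simp
  show ?thesis
  proof (cases y)
    case None
    then show ?thesis using fx' h by (simp add: mobius_def)
  next
    case (Some r)
    consider "r > 0" | "r = 0" | "r < 0" by linarith
    then show ?thesis
    proof cases
      case 1 then show ?thesis using Hw_fix_good_pos[OF D] fx Some by simp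
    next
      case 2 then show ?thesis using fx' h Some by (simp add: mobius_def)
    next
      case 3
      have r0: "r \<noteq> 0" using 3 by simp
      have Sy: "mobius Smat y = Some (- 1 / r)" using Some S_Some[OF r0] by simp
      have pos: "- 1 / r > 0" using 3 by simp
      have "mobius (Hw (revw ws)) (mobius Smat y) = mobius (Hw (revw ws) \<cdot>\<^sub>m Smat \<cdot>\<^sub>m Hw ws) y"
        using fx by (simp add: mobius_mul mdet_Hw mdet_S mdet_mul)
      also have "\<dots> = mobius Smat y" using Hw_rev[OF v] by simp
      finally have "mobius (Hw (revw ws)) (Some (- 1 / r)) = Some (- 1 / r)"
        unfolding Sy .
      then have "good (Some (- 1 / r))" using Hw_fix_good_pos[OF inD_rev[OF D] pos] by simp
      then have "good (mobius Smat (mobius Smat y))" using good_G[OF G18_S] Sy by simp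
      then show ?thesis by (simp add: SS_mob)
    qed
  qed
qed



section \<open>Chebyshev sequences\<close>

fun cs :: "real \<Rightarrow> nat \<Rightarrow> real" where
  "cs t 0 = 0"
| "cs t (Suc 0) = 1"
| "cs t (Suc (Suc n)) = t * cs t (Suc n) - cs t n"

fun vv :: "real \<Rightarrow> nat \<Rightarrow> real" where
  "vv t 0 = 2"
| "vv t (Suc 0) = t"
| "vv t (Suc (Suc n)) = t * vv t (Suc n) - vv t n"

definition ds :: "real \<Rightarrow> nat \<Rightarrow> real" where
  "ds t n = (case n of 0 \<Rightarrow> -1 | Suc m \<Rightarrow> cs t m)"

lemma cs_step: "cs t (Suc n) = t * cs t n - ds t n"
  by (cases n) (simp_all add: ds_def)

lemma ds_Suc: "ds t (Suc n) = cs t n" by (simp add: ds_def)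

lemma mpow_CH:
  assumes tr: "mtrace X = t" and dt: "mdet X = 1"
  shows "ent11 (mpow X n) = cs t n * ent11 X - ds t n \<and> ent12 (mpow X n) = cs t n * ent12 X
       \<and> ent21 (mpow X n) = cs t n * ent21 X \<and> ent22 (mpow X n) = cs t n * ent22 X - ds t n"
proof (induction n)
  case 0 then show ?case by (simp add: ds_def)
next
  case (Suc n)
  obtain a b c d where X: "X = Mat2 a b c d" by (cases X)
  have t: "t = a + d" and dd: "a * d - b * c = 1" using tr dt X by (simp_all add: mtrace_def mdet_def)
  let ?s = "cs t n" and ?r = "ds t n"
  have e: "ent11 (mpow X n) = ?s * a - ?r" "ent12 (mpow X n) = ?s * b"
          "ent21 (mpow X n) = ?s * c" "ent22 (mpow X n) = ?s * d - ?r" using Suc X by simp_all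
  have cs1: "cs t (Suc n) = (a + d) * ?s - ?r" using cs_step[of t n] t by simp
  have "ent11 (mpow X (Suc n)) = a * (?s * a - ?r) + b * (?s * c)"
    unfolding mpow_Suc mmul_simps e by (simp add: X)
  also have "\<dots> = ((a + d) * ?s - ?r) * a - ?s * (a * d - b * c)" by (simp add: algebra_simps)
  finally have 1: "ent11 (mpow X (Suc n)) = cs t (Suc n) * ent11 X - ds t (Suc n)"
    using dd cs1 X by (simp add: ds_Suc)
  have "ent12 (mpow X (Suc n)) = a * (?s * b) + b * (?s * d - ?r)"
    unfolding mpow_Suc mmul_simps e by (simp add: X)
  also have "\<dots> = ((a + d) * ?s - ?r) * b" by (simp add: algebra_simps)
  finally have 2: "ent12 (mpow X (Suc n)) = cs t (Suc n) * ent12 X" using cs1 X by simp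
  have "ent21 (mpow X (Suc n)) = c * (?s * a - ?r) + d * (?s * c)"
    unfolding mpow_Suc mmul_simps e by (simp add: X)
  also have "\<dots> = ((a + d) * ?s - ?r) * c" by (simp add: algebra_simps)
  finally have 3: "ent21 (mpow X (Suc n)) = cs t (Suc n) * ent21 X" using cs1 X by simp
  have "ent22 (mpow X (Suc n)) = c * (?s * b) + d * (?s * d - ?r)"
    unfolding mpow_Suc mmul_simps e by (simp add: X)
  also have "\<dots> = ((a + d) * ?s - ?r) * d - ?s * (a * d - b * c)" by (simp add: algebra_simps)
  finally have 4: "ent22 (mpow X (Suc n)) = cs t (Suc n) * ent22 X - ds t (Suc n)"
    using dd cs1 X by (simp add: ds_Suc)
  show ?case using 1 2 3 4 by blast
qed

definition madd :: "mat2 \<Rightarrow> mat2 \<Rightarrow> mat2" where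
  "madd A B = Mat2 (ent11 A + ent11 B) (ent12 A + ent12 B) (ent21 A + ent21 B) (ent22 A + ent22 B)"
definition msc :: "real \<Rightarrow> mat2 \<Rightarrow> mat2" where
  "msc r A = Mat2 (r * ent11 A) (r * ent12 A) (r * ent21 A) (r * ent22 A)"

lemma madd_simps[simp]: "ent11 (madd A B) = ent11 A + ent11 B" "ent12 (madd A B) = ent12 A + ent12 B"
  "ent21 (madd A B) = ent21 A + ent21 B" "ent22 (madd A B) = ent22 A + ent22 B"
  by (simp_all add: madd_def)
lemma msc_simps[simp]: "ent11 (msc r A) = r * ent11 A" "ent12 (msc r A) = r * ent12 A"
  "ent21 (msc r A) = r * ent21 A" "ent22 (msc r A) = r * ent22 A"
  by (simp_all add: msc_def)

lemma mpow_lin: "mtrace X = t \<Longrightarrow> mdet X = 1 \<Longrightarrow> mpow X n = madd (msc (cs t n) X) (msc (- ds t n) mid)"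
  using mpow_CH[of X t n] by (intro mat2_eqI) simp_all

lemma lin_rules:
  "madd A B \<cdot>\<^sub>m C = madd (A \<cdot>\<^sub>m C) (B \<cdot>\<^sub>m C)"
  "C \<cdot>\<^sub>m madd A B = madd (C \<cdot>\<^sub>m A) (C \<cdot>\<^sub>m B)"
  "msc r A \<cdot>\<^sub>m C = msc r (A \<cdot>\<^sub>m C)"
  "C \<cdot>\<^sub>m msc r A = msc r (C \<cdot>\<^sub>m A)"
  "msc r (msc q A) = msc (r * q) A"
  "msc r (madd A B) = madd (msc r A) (msc r B)"
  "mtrace (madd A B) = mtrace A + mtrace B"
  "mtrace (msc r A) = r * mtrace A"
  by (rule mat2_eqI; simp add: algebra_simps)+ (simp_all add: mtrace_def algebra_simps)

lemma trace_formula: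
  assumes "mtrace X = t" "mdet X = 1" "mtrace Y = t" "mdet Y = 1"
  shows "mtrace (mpow Y k \<cdot>\<^sub>m B \<cdot>\<^sub>m mpow X k \<cdot>\<^sub>m A) =
     (cs t k)^2 * mtrace (Y \<cdot>\<^sub>m B \<cdot>\<^sub>m X \<cdot>\<^sub>m A)
     - cs t k * ds t k * (mtrace (Y \<cdot>\<^sub>m B \<cdot>\<^sub>m A) + mtrace (B \<cdot>\<^sub>m X \<cdot>\<^sub>m A))
     + (ds t k)^2 * mtrace (B \<cdot>\<^sub>m A)"
  unfolding mpow_lin[OF assms(1,2)] mpow_lin[OF assms(3,4)]
  by (simp add: lin_rules mmul_assoc power2_eq_square algebra_simps)

lemma alpha_exists: "(t::real) > 2 \<Longrightarrow> \<exists>\<alpha> \<beta>. \<alpha> > 1 \<and> \<alpha> * \<beta> = 1 \<and> \<alpha> + \<beta> = t"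
proof -
  assume t: "t > 2"
  define s where "s = sqrt (t^2 - 4)"
  have "t^2 - 4 = (t - 2) * (t + 2)" by (simp add: algebra_simps power2_eq_square)
  also have "\<dots> \<ge> 0" using t by simp
  finally have nn: "t^2 - 4 \<ge> 0" .
  have s2: "s^2 = t^2 - 4" unfolding s_def using nn by (rule real_sqrt_pow2)
  have s0: "s \<ge> 0" unfolding s_def using nn by simp
  show ?thesis
    by (rule exI[of _ "(t + s)/2"], rule exI[of _ "(t - s)/2"])
       (use t s0 s2 in \<open>auto simp: field_simps power2_eq_square\<close>)
qed

lemma cs_closed: "\<alpha> * \<beta> = 1 \<Longrightarrow> \<alpha> + \<beta> = t \<Longrightarrow> cs t n * (\<alpha> - \<beta>) = \<alpha>^n - \<beta>^n"
proof (induction t n rule: cs.induct)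
  case (1 t) then show ?case by simp
next
  case (2 t) then show ?case by simp
next
  case (3 t n)
  have "cs t (Suc (Suc n)) * (\<alpha> - \<beta>) = t * (cs t (Suc n) * (\<alpha> - \<beta>)) - cs t n * (\<alpha> - \<beta>)"
    by (simp add: algebra_simps)
  also have "\<dots> = (\<alpha> + \<beta>) * (\<alpha>^Suc n - \<beta>^Suc n) - (\<alpha>^n - \<beta>^n)" using 3 by simp
  also have "\<dots> = \<alpha>^Suc (Suc n) - \<beta>^Suc (Suc n) + \<alpha>*\<beta>*(\<alpha>^n - \<beta>^n) - (\<alpha>^n - \<beta>^n)"
    by (simp add: algebra_simps)
  finally show ?case using 3 by simp
qed

lemma vv_closed: "\<alpha> * \<beta> = 1 \<Longrightarrow> \<alpha> + \<beta> = t \<Longrightarrow> vv t n = \<alpha>^n + \<beta>^n"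
proof (induction t n rule: vv.induct)
  case (1 t) then show ?case by simp
next
  case (2 t) then show ?case by simp
next
  case (3 t n)
  have "vv t (Suc (Suc n)) = (\<alpha> + \<beta>) * (\<alpha>^Suc n + \<beta>^Suc n) - (\<alpha>^n + \<beta>^n)" using 3 by simp
  also have "\<dots> = \<alpha>^Suc (Suc n) + \<beta>^Suc (Suc n) + \<alpha>*\<beta>*(\<alpha>^n + \<beta>^n) - (\<alpha>^n + \<beta>^n)"
    by (simp add: algebra_simps)
  finally show ?case using 3 by simp
qed

lemma ds_closed: "\<alpha> * \<beta> = 1 \<Longrightarrow> \<alpha> + \<beta> = t \<Longrightarrow> ds t n * (\<alpha> - \<beta>) = \<alpha>^n * \<beta> - \<beta>^n * \<alpha>"
proof (cases n)
  case 0 then show "\<alpha> * \<beta> = 1 \<Longrightarrow> \<alpha> + \<beta> = t \<Longrightarrow> ?thesis" by (simp add: ds_def)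
next
  case (Suc m)
  assume h: "\<alpha> * \<beta> = 1" "\<alpha> + \<beta> = t"
  have "ds t n * (\<alpha> - \<beta>) = \<alpha>^m - \<beta>^m" using cs_closed[OF h, of m] Suc by (simp add: ds_def)
  also have "\<dots> = \<alpha>^m * (\<alpha> * \<beta>) - \<beta>^m * (\<alpha> * \<beta>)" using h by simp
  also have "\<dots> = \<alpha>^n * \<beta> - \<beta>^n * \<alpha>" using Suc by (simp add: algebra_simps)
  finally show ?thesis .
qed

lemma key_identity:
  assumes t: "t > 2"
  shows "(cs t k)^2 * vv t (m + 2) - cs t k * ds t k * (2 * vv t (m + 1)) + (ds t k)^2 * vv t m
         = vv t (2 * k + m)"
proof -
  obtain \<alpha> \<beta> where ab: "\<alpha> > 1" "\<alpha> * \<beta> = 1" "\<alpha> + \<beta> = t" using alpha_exists[OF t] by blast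
  have b1: "\<beta> < 1" using ab by (metis less_1_mult less_irrefl mult.commute order.asym linorder_neqE_linordered_idom mult_le_cancel_left1 not_less zero_less_one less_trans)
  have ne: "\<alpha> - \<beta> \<noteq> 0" using ab b1 by simp
  define z where "z = \<alpha>^k" define w where "w = \<beta>^k" define P where "P = \<alpha>^m" define Q where "Q = \<beta>^m"
  have S: "cs t k * (\<alpha> - \<beta>) = z - w" unfolding z_def w_def by (rule cs_closed[OF ab(2,3)])
  have D: "ds t k * (\<alpha> - \<beta>) = z * \<beta> - w * \<alpha>" unfolding z_def w_def by (rule ds_closed[OF ab(2,3)])
  have V2: "vv t (m + 2) = \<alpha>^2 * P + \<beta>^2 * Q" unfolding P_def Q_def vv_closed[OF ab(2,3)]
    by (simp add: power_add power2_eq_square)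
  have V1: "vv t (m + 1) = \<alpha> * P + \<beta> * Q" unfolding P_def Q_def vv_closed[OF ab(2,3)]
    by (simp add: power_add)
  have V0: "vv t m = P + Q" unfolding P_def Q_def vv_closed[OF ab(2,3)] by simp
  have VR: "vv t (2 * k + m) = z^2 * P + w^2 * Q" unfolding z_def w_def P_def Q_def vv_closed[OF ab(2,3)]
    by (simp add: power_add power_mult[symmetric] mult.commute)
  have "((cs t k)^2 * vv t (m + 2) - cs t k * ds t k * (2 * vv t (m + 1)) + (ds t k)^2 * vv t m) * (\<alpha> - \<beta>)^2
     = (cs t k * (\<alpha> - \<beta>))^2 * vv t (m + 2) - (cs t k * (\<alpha> - \<beta>)) * (ds t k * (\<alpha> - \<beta>)) * (2 * vv t (m + 1))
       + (ds t k * (\<alpha> - \<beta>))^2 * vv t m"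
    by (simp add: algebra_simps power2_eq_square)
  also have "\<dots> = (z - w)^2 * (\<alpha>^2 * P + \<beta>^2 * Q) - (z - w) * (z * \<beta> - w * \<alpha>) * (2 * (\<alpha> * P + \<beta> * Q))
       + (z * \<beta> - w * \<alpha>)^2 * (P + Q)" unfolding S D V2 V1 V0 ..
  also have "\<dots> = (z^2 * P + w^2 * Q) * (\<alpha> - \<beta>)^2" by algebra
  finally show ?thesis unfolding VR using ne by simp
qed

lemma vv_sq: assumes t: "t > 2" shows "(vv t n)^2 - 4 = (t^2 - 4) * (cs t n)^2"
proof -
  obtain \<alpha> \<beta> where ab: "\<alpha> > 1" "\<alpha> * \<beta> = 1" "\<alpha> + \<beta> = t" using alpha_exists[OF t] by blast
  have p: "\<alpha>^n * \<beta>^n = 1" using ab(2) by (metis power_mult_distrib power_one)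
  have "(vv t n)^2 - 4 = (\<alpha>^n - \<beta>^n)^2" unfolding vv_closed[OF ab(2,3)]
    using p by (simp add: power2_eq_square algebra_simps)
  also have "\<dots> = (cs t n * (\<alpha> - \<beta>))^2" using cs_closed[OF ab(2,3)] by simp
  also have "\<dots> = (cs t n)^2 * ((\<alpha> + \<beta>)^2 - 4 * (\<alpha> * \<beta>))" by (simp add: power2_eq_square algebra_simps)
  finally show ?thesis using ab by simp
qed

lemma vv_gt2: assumes t: "t > 2" "n \<ge> 1" shows "vv t n > 2"
proof -
  obtain \<alpha> \<beta> where ab: "\<alpha> > 1" "\<alpha> * \<beta> = 1" "\<alpha> + \<beta> = t" using alpha_exists[OF t(1)] by blast
  have x1: "\<alpha>^n > 1" using ab(1) t(2) by (simp add: one_less_power)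
  have p: "\<alpha>^n * \<beta>^n = 1" using ab(2) by (metis power_mult_distrib power_one)
  have "(\<alpha>^n - 1)^2 > 0" using x1 by simp
  then have "\<alpha>^n * (\<alpha>^n + \<beta>^n) > \<alpha>^n * 2" using p by (simp add: power2_eq_square algebra_simps)
  then have "\<alpha>^n + \<beta>^n > 2" using x1 by (simp add: mult_less_cancel_left_pos)
  then show ?thesis unfolding vv_closed[OF ab(2,3)] .
qed

lemma cs_K: "t \<in> K18 \<Longrightarrow> cs t n \<in> K18"
  by (induction t n rule: cs.induct) (simp_all add: K_diff K_mul)

lemma vv_K: "t \<in> K18 \<Longrightarrow> vv t n \<in> K18"
proof (induction t n rule: vv.induct)
  case (1 t)
  have "(2::real) = 1 + 1" by simp
  then show ?case using K_add[OF K_1 K_1] by simp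
qed (simp_all add: K_diff K_mul)



lemma lamK_mem: "x \<in> lamK \<longleftrightarrow> (\<exists>y\<in>K18. x = lam * y)"
  unfolding lamK_def by blast

lemma lamK_add: "x \<in> lamK \<Longrightarrow> y \<in> lamK \<Longrightarrow> x + y \<in> lamK"
proof -
  assume "x \<in> lamK" "y \<in> lamK"
  then obtain u v where "u \<in> K18" "v \<in> K18" "x = lam * u" "y = lam * v" unfolding lamK_mem by blast
  then show ?thesis unfolding lamK_mem by (intro bexI[of _ "u + v"]) (simp_all add: algebra_simps K_add)
qed

lemma lamK_neg: "x \<in> lamK \<Longrightarrow> - x \<in> lamK"
proof -
  assume "x \<in> lamK"
  then obtain u where "u \<in> K18" "x = lam * u" unfolding lamK_mem by blast
  then show ?thesis unfolding lamK_mem by (intro bexI[of _ "- u"]) (simp_all add: K_neg)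
qed

lemma lamK_mulK: "x \<in> K18 \<Longrightarrow> y \<in> lamK \<Longrightarrow> x * y \<in> lamK"
proof -
  assume "x \<in> K18" "y \<in> lamK"
  then obtain v where "v \<in> K18" "y = lam * v" unfolding lamK_mem by blast
  then show ?thesis unfolding lamK_mem using \<open>x \<in> K18\<close> by (intro bexI[of _ "x * v"]) (simp_all add: algebra_simps K_mul)
qed

lemma lamK_mulK': "x \<in> lamK \<Longrightarrow> y \<in> K18 \<Longrightarrow> x * y \<in> lamK"
  using lamK_mulK[of y x] by (simp add: mult.commute)

lemma lamK_mul: "x \<in> lamK \<Longrightarrow> y \<in> lamK \<Longrightarrow> x * y \<in> K18"
proof -
  assume "x \<in> lamK" "y \<in> lamK"
  then obtain u v where "u \<in> K18" "v \<in> K18" "x = lam * u" "y = lam * v" unfolding lamK_mem by blast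
  then have e: "x * y = lam^2 * (u * v)" by (simp add: power2_eq_square algebra_simps)
  have "lam^2 * (u * v) \<in> K18" using \<open>u \<in> K18\<close> \<open>v \<in> K18\<close> by (intro K_mul lam2_K)
  then show ?thesis unfolding e .
qed

lemma lamK_0: "0 \<in> lamK" unfolding lamK_mem by (intro bexI[of _ 0]) simp_all

definition evenM :: "mat2 \<Rightarrow> bool" where
  "evenM A \<longleftrightarrow> ent11 A \<in> K18 \<and> ent22 A \<in> K18 \<and> ent12 A \<in> lamK \<and> ent21 A \<in> lamK"
definition oddM :: "mat2 \<Rightarrow> bool" where
  "oddM A \<longleftrightarrow> ent11 A \<in> lamK \<and> ent22 A \<in> lamK \<and> ent12 A \<in> K18 \<and> ent21 A \<in> K18"

lemma evenM_mul: assumes "evenM A" "evenM B" shows "evenM (A \<cdot>\<^sub>m B)"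
proof -
  have a: "ent11 A \<in> K18" "ent22 A \<in> K18" "ent12 A \<in> lamK" "ent21 A \<in> lamK"
   and b: "ent11 B \<in> K18" "ent22 B \<in> K18" "ent12 B \<in> lamK" "ent21 B \<in> lamK"
    using assms unfolding evenM_def by auto
  show ?thesis unfolding evenM_def mmul_simps
    using K_add[OF K_mul[OF a(1) b(1)] lamK_mul[OF a(3) b(4)]]
      K_add[OF lamK_mul[OF a(4) b(3)] K_mul[OF a(2) b(2)]]
      lamK_add[OF lamK_mulK[OF a(1) b(3)] lamK_mulK'[OF a(3) b(2)]]
      lamK_add[OF lamK_mulK'[OF a(4) b(1)] lamK_mulK[OF a(2) b(4)]] by blast
qed
lemma oddM_mul: assumes "oddM A" "oddM B" shows "evenM (A \<cdot>\<^sub>m B)"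
proof -
  have a: "ent11 A \<in> lamK" "ent22 A \<in> lamK" "ent12 A \<in> K18" "ent21 A \<in> K18"
   and b: "ent11 B \<in> lamK" "ent22 B \<in> lamK" "ent12 B \<in> K18" "ent21 B \<in> K18"
    using assms unfolding oddM_def by auto
  show ?thesis unfolding evenM_def mmul_simps
    using K_add[OF lamK_mul[OF a(1) b(1)] K_mul[OF a(3) b(4)]]
      K_add[OF K_mul[OF a(4) b(3)] lamK_mul[OF a(2) b(2)]]
      lamK_add[OF lamK_mulK'[OF a(1) b(3)] lamK_mulK[OF a(3) b(2)]]
      lamK_add[OF lamK_mulK[OF a(4) b(1)] lamK_mulK'[OF a(2) b(4)]] by blast
qed
lemma eo_mul: assumes "evenM A" "oddM B" shows "oddM (A \<cdot>\<^sub>m B)"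
proof -
  have a: "ent11 A \<in> K18" "ent22 A \<in> K18" "ent12 A \<in> lamK" "ent21 A \<in> lamK"
   and b: "ent11 B \<in> lamK" "ent22 B \<in> lamK" "ent12 B \<in> K18" "ent21 B \<in> K18"
    using assms unfolding evenM_def oddM_def by auto
  show ?thesis unfolding oddM_def mmul_simps
    using lamK_add[OF lamK_mulK[OF a(1) b(1)] lamK_mulK'[OF a(3) b(4)]]
      lamK_add[OF lamK_mulK'[OF a(4) b(3)] lamK_mulK[OF a(2) b(2)]]
      K_add[OF K_mul[OF a(1) b(3)] lamK_mul[OF a(3) b(2)]]
      K_add[OF lamK_mul[OF a(4) b(1)] K_mul[OF a(2) b(4)]] by blast
qed
lemma oe_mul: assumes "oddM A" "evenM B" shows "oddM (A \<cdot>\<^sub>m B)"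
proof -
  have a: "ent11 A \<in> lamK" "ent22 A \<in> lamK" "ent12 A \<in> K18" "ent21 A \<in> K18"
   and b: "ent11 B \<in> K18" "ent22 B \<in> K18" "ent12 B \<in> lamK" "ent21 B \<in> lamK"
    using assms unfolding evenM_def oddM_def by auto
  show ?thesis unfolding oddM_def mmul_simps
    using lamK_add[OF lamK_mulK'[OF a(1) b(1)] lamK_mulK[OF a(3) b(4)]]
      lamK_add[OF lamK_mulK[OF a(4) b(3)] lamK_mulK'[OF a(2) b(2)]]
      K_add[OF lamK_mul[OF a(1) b(3)] K_mul[OF a(3) b(2)]]
      K_add[OF K_mul[OF a(4) b(1)] lamK_mul[OF a(2) b(4)]] by blast
qed

lemma mpow_T: "mpow Tmat k = Mat2 1 (real k * lam) 0 1"
proof (induction k)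
  case 0 then show ?case by (simp add: mid_def)
next
  case (Suc k) then show ?case by (intro mat2_eqI) (simp_all add: mpow_Suc Tmat_def algebra_simps)
qed

lemma mpow_Ti: "mpow (minv Tmat) k = Mat2 1 (- real k * lam) 0 1"
proof (induction k)
  case 0 then show ?case by (simp add: mid_def)
next
  case (Suc k) then show ?case by (intro mat2_eqI) (simp_all add: mpow_Suc minv_T algebra_simps)
qed

lemma zpow_T: "zpow Tmat n = Mat2 1 (real_of_int n * lam) 0 1"
proof (cases "n \<ge> 0")
  case True
  then have "real (nat n) = real_of_int n" by simp
  then show ?thesis using True by (simp add: zpow_def mpow_T)
next
  case False
  then have "real (nat (- n)) = - real_of_int n" by simp
  then show ?thesis using False by (simp add: zpow_def mpow_Ti)
qed

lemma evenM_zpow: "evenM (zpow Tmat n)"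
proof -
  have "lam * real_of_int n \<in> lamK" by (rule lamK_I[OF K_int])
  then have "real_of_int n * lam \<in> lamK" by (metis mult.commute)
  then show ?thesis unfolding evenM_def zpow_T using lamK_0 by simp
qed

lemma oddM_S: "oddM Smat"
  unfolding oddM_def Smat_def using lamK_0 K_neg[OF K_1] by simp

lemma evenM_mid: "evenM mid" unfolding evenM_def using lamK_0 by simp

definition parM :: "bool \<Rightarrow> mat2 \<Rightarrow> bool" where "parM b A = (if b then evenM A else oddM A)"

abbreviation stepM :: "mat2 \<Rightarrow> int \<Rightarrow> mat2" where "stepM A n \<equiv> Smat \<cdot>\<^sub>m zpow Tmat n \<cdot>\<^sub>m A"

lemma parM_step: "parM b A \<Longrightarrow> parM (\<not> b) (stepM A n)"
proof -
  assume a: "parM b A"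
  have o: "oddM (Smat \<cdot>\<^sub>m zpow Tmat n)" by (rule oe_mul[OF oddM_S evenM_zpow])
  show ?thesis
  proof (cases b)
    case True
    then have "evenM A" using a unfolding parM_def by simp
    then have "oddM (stepM A n)" by (rule oe_mul[OF o])
    then show ?thesis using True unfolding parM_def by simp
  next
    case False
    then have "oddM A" using a unfolding parM_def by simp
    then have "evenM (stepM A n)" by (rule oddM_mul[OF o])
    then show ?thesis using False unfolding parM_def by simp
  qed
qed

lemma parM_foldl: "parM b A \<Longrightarrow> parM (b \<longleftrightarrow> even (length ns)) (foldl stepM A ns)"
proof (induction ns arbitrary: A b)
  case Nil then show ?case by simp
next
  case (Cons x ns)
  have "parM (\<not> b) (stepM A x)" by (rule parM_step[OF Cons.prems])
  from Cons.IH[OF this] show ?case by (cases b) auto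
qed

lemma Mseq_even: "even (length ns) \<Longrightarrow> evenM (Mseq ns)"
  using parM_foldl[of True mid ns] evenM_mid unfolding Mseq_def parM_def by simp

lemma foldl_stepM: "foldl stepM A ns = foldl stepM mid ns \<cdot>\<^sub>m A"
proof (induction ns arbitrary: A)
  case Nil then show ?case by simp
next
  case (Cons x ns)
  have 1: "foldl stepM A (x # ns) = foldl stepM mid ns \<cdot>\<^sub>m stepM A x"
    using Cons.IH[of "stepM A x"] by simp
  have 2: "foldl stepM mid (x # ns) = foldl stepM mid ns \<cdot>\<^sub>m stepM mid x"
    using Cons.IH[of "stepM mid x"] by simp
  show ?case unfolding 1 2 by (simp add: mmul_assoc)
qed

lemma Mseq_append: "Mseq (xs @ ys) = Mseq ys \<cdot>\<^sub>m Mseq xs"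
  unfolding Mseq_def by (simp add: foldl_stepM[of "foldl stepM mid xs"])

lemma Mseq_rep: "Mseq (rep k P) = mpow (Mseq P) k"
proof (induction k)
  case 0 then show ?case by (simp add: rep_def Mseq_def)
next
  case (Suc k)
  have "rep (Suc k) P = P @ rep k P" by (simp add: rep_def)
  then show ?case using Suc by (simp add: Mseq_append mpow_Suc')
qed

lemma G18_zpow: "zpow Tmat n \<in> G18"
  unfolding zpow_def using G18_mpow[OF G18_T] G18_mpow[OF G18_Ti] by simp

lemma G18_Mseq: "Mseq ns \<in> G18"
proof -
  have "A \<in> G18 \<Longrightarrow> foldl stepM A ns \<in> G18" for A
  proof (induction ns arbitrary: A)
    case Nil then show ?case by simp
  next
    case (Cons x ns)
    have "stepM A x \<in> G18" using G18_mul[OF G18_mul[OF G18_S G18_zpow] Cons.prems] .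
    then show ?case using Cons.IH by simp
  qed
  then show ?thesis unfolding Mseq_def using G18.G_id by blast
qed

section \<open>Special hyperbolic: generic criterion\<close>

lemma special_gen:
  assumes G: "g \<in> G18" and E: "evenM g" and tr: "mtrace g = vv \<tau> N" and N: "N \<ge> 1"
    and \<tau>: "\<tau> > 2" "\<tau> \<in> K18" and \<sigma>: "\<sigma> \<in> K18" "\<tau>^2 - 4 = \<sigma>^2"
    and noNone: "mobius g None \<noteq> None"
  shows "special_hyperbolic g \<and> (\<forall>p. mobius g p = p \<longrightarrow> (\<exists>r. p = Some r \<and> r \<in> lamK))"
proof -
  obtain a b c d where g: "g = Mat2 a b c d" by (cases g)
  have det: "a * d - b * c = 1" using G18_det[OF G] g by (simp add: mdet_def)
  have t: "a + d = vv \<tau> N" using tr g by (simp add: mtrace_def)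
  have aK: "a \<in> K18" and dK: "d \<in> K18" and cL: "c \<in> lamK" using E g by (simp_all add: evenM_def)
  define e where "e = \<sigma> * cs \<tau> N"
  have eK: "e \<in> K18" unfolding e_def using \<sigma>(1) cs_K[OF \<tau>(2)] by (rule K_mul)
  have e2: "(a + d)^2 - 4 = e^2" unfolding t e_def vv_sq[OF \<tau>(1)] \<sigma>(2) by (simp add: power_mult_distrib)
  have tK: "a + d \<in> K18" using aK dK by (rule K_add)
  have hyp: "hyperbolic g" unfolding hyperbolic_def g mtrace_def using vv_gt2[OF \<tau>(1) N] t by simp
  have eig: "\<mu> \<in> K18" if ev: "is_eigenvalue g \<mu>" for \<mu>
  proof -
    obtain x y where xy: "(x, y) \<noteq> (0, 0)" "a * x + b * y = \<mu> * x" "c * x + d * y = \<mu> * y"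
      using ev g unfolding is_eigenvalue_def by auto
    let ?D = "(a - \<mu>) * (d - \<mu>) - b * c"
    have dx: "?D * x = 0"
    proof -
      have "?D * x = (d - \<mu>) * ((a - \<mu>) * x + b * y) - b * (c * x + (d - \<mu>) * y)" by (simp add: algebra_simps)
      also have "\<dots> = 0" using xy by (simp add: algebra_simps)
      finally show ?thesis .
    qed
    have dy: "?D * y = 0"
    proof -
      have "?D * y = (a - \<mu>) * (c * x + (d - \<mu>) * y) - c * ((a - \<mu>) * x + b * y)" by (simp add: algebra_simps)
      also have "\<dots> = 0" using xy by (simp add: algebra_simps)
      finally show ?thesis .
    qed
    have D0: "?D = 0" using dx dy xy(1) by auto
    have "(2 * \<mu> - (a + d))^2 = (a + d)^2 - 4 * (a * d - b * c) + 4 * ?D"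
      by (simp add: algebra_simps power2_eq_square)
    then have "(2 * \<mu> - (a + d))^2 = e^2" using D0 det e2 by simp
    then have "2 * \<mu> - (a + d) = e \<or> 2 * \<mu> - (a + d) = - e" by (simp add: power2_eq_iff)
    then have "\<mu> = ((a + d) + e) / 2 \<or> \<mu> = ((a + d) - e) / 2" by auto
    moreover have "((a + d) + e) / 2 \<in> K18" "((a + d) - e) / 2 \<in> K18"
      using K_div[OF K_add[OF tK eK]] K_div[OF K_diff[OF tK eK]] K_nat[of 2] by simp_all
    ultimately show ?thesis by metis
  qed
  have c0: "c \<noteq> 0" using noNone g by (auto simp: mobius_def)
  have fixp: "\<exists>r. p = Some r \<and> r \<in> lamK" if fp: "mobius g p = p" for p
  proof (cases p)
    case None then show ?thesis using fp noNone by simp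
  next
    case (Some r)
    have den: "c * r + d \<noteq> 0" using fp Some g by (auto simp: mobius_def split: if_splits)
    have "(a * r + b) / (c * r + d) = r" using fp Some g den by (simp add: mobius_def)
    then have eq: "a * r + b = r * (c * r + d)" using den by (simp add: field_simps)
    have "(2 * c * r + d - a)^2 = 4 * c * (c * r * r + (d - a) * r) + (d - a)^2"
      by (simp add: algebra_simps power2_eq_square)
    also have "c * r * r + (d - a) * r = b" using eq by (simp add: algebra_simps)
    also have "4 * c * b + (d - a)^2 = (a + d)^2 - 4 * (a * d - b * c)" by (simp add: algebra_simps power2_eq_square)
    finally have "(2 * c * r + d - a)^2 = e^2" using det e2 by simp
    then have "2 * c * r + d - a = e \<or> 2 * c * r + d - a = - e" by (simp add: power2_eq_iff)
    then obtain f where f: "f \<in> K18" "2 * c * r + d - a = f"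
      using eK K_neg[OF eK] by blast
    obtain c' where c': "c' \<in> K18" "c = lam * c'" using cL unfolding lamK_mem by blast
    have c'0: "c' \<noteq> 0" using c0 c' by simp
    have lam0: "lam \<noteq> 0" using lam_pos by simp
    have r: "r = lam * ((f + a - d) / (2 * lam^2 * c'))"
    proof -
      have "r = (f + a - d) / (2 * c)" using f(2) c0 by (simp add: field_simps)
      also have "\<dots> = lam * ((f + a - d) / (2 * lam^2 * c'))" using c'(2) lam0 c'0
        by (simp add: field_simps power2_eq_square)
      finally show ?thesis .
    qed
    have "(f + a - d) / (2 * lam^2 * c') \<in> K18"
      by (intro K_div K_diff K_add K_mul f(1) aK dK lam2_K c'(1)) (use K_nat[of 2] in simp)
    then show ?thesis using Some r lamK_I by blast
  qed
  show ?thesis unfolding special_hyperbolic_def using G hyp eig fixp by blast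
qed



definition pmeq :: "mat2 \<Rightarrow> mat2 \<Rightarrow> bool" where "pmeq A B \<longleftrightarrow> A = B \<or> A = mneg B"

lemma pmeq_refl: "pmeq A A" by (simp add: pmeq_def)
lemma pmeq_trans: "pmeq A B \<Longrightarrow> pmeq B C \<Longrightarrow> pmeq A C" by (auto simp: pmeq_def)
lemma pmeq_mulR: "pmeq A B \<Longrightarrow> pmeq (A \<cdot>\<^sub>m C) (B \<cdot>\<^sub>m C)" by (auto simp: pmeq_def)
lemma pmeq_mulL: "pmeq A B \<Longrightarrow> pmeq (C \<cdot>\<^sub>m A) (C \<cdot>\<^sub>m B)" by (auto simp: pmeq_def)
lemma pmeq_mobius: "pmeq A B \<Longrightarrow> mobius A p = mobius B p" by (auto simp: pmeq_def)

lemma pmeq_pow: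
  assumes "pmeq (c \<cdot>\<^sub>m M) (Y \<cdot>\<^sub>m c)"
  shows "pmeq (c \<cdot>\<^sub>m mpow M k) (mpow Y k \<cdot>\<^sub>m c)"
proof (induction k)
  case 0 then show ?case by (simp add: pmeq_refl)
next
  case (Suc k)
  have "c \<cdot>\<^sub>m mpow M (Suc k) = (c \<cdot>\<^sub>m mpow M k) \<cdot>\<^sub>m M" by (simp add: mpow_Suc' mmul_assoc)
  moreover have "pmeq ((c \<cdot>\<^sub>m mpow M k) \<cdot>\<^sub>m M) ((mpow Y k \<cdot>\<^sub>m c) \<cdot>\<^sub>m M)" by (rule pmeq_mulR[OF Suc.IH])
  moreover have "(mpow Y k \<cdot>\<^sub>m c) \<cdot>\<^sub>m M = mpow Y k \<cdot>\<^sub>m (c \<cdot>\<^sub>m M)" by (simp add: mmul_assoc)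
  moreover have "pmeq (mpow Y k \<cdot>\<^sub>m (c \<cdot>\<^sub>m M)) (mpow Y k \<cdot>\<^sub>m (Y \<cdot>\<^sub>m c))" by (rule pmeq_mulL[OF assms])
  moreover have "mpow Y k \<cdot>\<^sub>m (Y \<cdot>\<^sub>m c) = mpow Y (Suc k) \<cdot>\<^sub>m c" by (simp add: mpow_Suc' mmul_assoc)
  ultimately show ?case using pmeq_trans by metis
qed

lemma Hp_append: "Hp (xs @ ys) = Hp xs \<cdot>\<^sub>m Hp ys"
  by (induction xs) (simp_all add: Hp_def mmul_assoc)

lemma Hp_rep: "Hp (concat (replicate k Y)) = mpow (Hp Y) k"
  by (induction k) (simp_all add: Hp_append mpow_Suc, simp add: Hp_def)

lemma cnt_append: "cnt d (xs @ ys) = cnt d xs + cnt d ys" by (simp add: cnt_def)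
lemma cnt_rep: "cnt d (concat (replicate k Y)) = k * cnt d Y"
  by (induction k) (simp_all add: cnt_append, simp add: cnt_def)
lemma len_rep: "length (concat (replicate k Y)) = k * length Y"
  by (induction k) simp_all

lemma linear_inj:
  fixes k l p q r s :: nat
  assumes eq: "(l * p + q) * (k * r + s) = (k * p + q) * (l * r + s)" and ne: "r * q \<noteq> s * p"
  shows "k = l"
proof -
  have "int ((l * p + q) * (k * r + s)) = int ((k * p + q) * (l * r + s))" using eq by simp
  then have e: "(int l * int p + int q) * (int k * int r + int s) = (int k * int p + int q) * (int l * int r + int s)"
    by simp
  have "(int l - int k) * (int p * int s - int q * int r) = 0"
  proof -
    have "(int l - int k) * (int p * int s - int q * int r)
        = (int l * int p + int q) * (int k * int r + int s) - (int k * int p + int q) * (int l * int r + int s)"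
      by (simp add: algebra_simps)
    then show ?thesis using e by simp
  qed
  moreover have "int p * int s - int q * int r \<noteq> 0"
  proof
    assume "int p * int s - int q * int r = 0"
    then have "int s * int p = int r * int q" by (simp add: algebra_simps)
    then have "s * p = r * q" by (metis of_nat_mult of_nat_eq_iff)
    then show False using ne by simp
  qed
  ultimately show ?thesis by simp
qed

section \<open>The generic family theorem\<close>

lemma family_thm:
  fixes a P b Q :: "int list" and cc dd :: mat2 and X Y C A :: "nat list" and \<tau> \<sigma> :: real and m :: nat
  assumes w: "w = (\<lambda>k. a @ rep k P @ b @ rep k Q)"
    and par: "even (length a + length b)" "even (length P + length Q)"
    and G: "cc \<in> G18" "dd \<in> G18"
    and cQ: "pmeq (cc \<cdot>\<^sub>m Mseq Q) (Hp Y \<cdot>\<^sub>m cc)"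
    and cP: "pmeq (dd \<cdot>\<^sub>m Mseq P) (Hp X \<cdot>\<^sub>m dd)"
    and cb: "pmeq (cc \<cdot>\<^sub>m Mseq b) (Hp C \<cdot>\<^sub>m dd)"
    and ca: "pmeq (dd \<cdot>\<^sub>m Mseq a) (Hp A \<cdot>\<^sub>m cc)"
    and trP: "mtrace (Mseq P) = \<tau>" and trQ: "mtrace (Mseq Q) = \<tau>"
    and tr1: "mtrace (Mseq Q \<cdot>\<^sub>m Mseq b \<cdot>\<^sub>m Mseq P \<cdot>\<^sub>m Mseq a) = vv \<tau> (m + 2)"
    and tr2: "mtrace (Mseq Q \<cdot>\<^sub>m Mseq b \<cdot>\<^sub>m Mseq a) + mtrace (Mseq b \<cdot>\<^sub>m Mseq P \<cdot>\<^sub>m Mseq a) = 2 * vv \<tau> (m + 1)"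
    and tr3: "mtrace (Mseq b \<cdot>\<^sub>m Mseq a) = vv \<tau> m" and m: "m \<ge> 1"
    and \<tau>: "\<tau> > 2" "\<tau> \<in> K18" and \<sigma>: "\<sigma> \<in> K18" "\<tau>^2 - 4 = \<sigma>^2"
    and D: "set (X @ Y @ C @ A) \<subseteq> {1, 2, 16, 17}" "2 \<in> set (C @ A) \<or> 16 \<in> set (C @ A)"
    and dens: "(cnt 1 X + cnt 1 Y) * (length C + length A) \<noteq> (cnt 1 C + cnt 1 A) * (length X + length Y)"
  shows "(\<forall>k. special_hyperbolic (Mseq (w k)))
    \<and> (\<forall>k p. mobius (Mseq (w k)) p = p \<longrightarrow> (\<exists>r. p = Some r \<and> r \<in> lamK))
    \<and> infinite {orbit18 p | p k. mobius (Mseq (w k)) p = p}"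
proof -
  define W where "W k = concat (replicate k Y) @ C @ concat (replicate k X) @ A" for k
  have Mw: "Mseq (w k) = mpow (Mseq Q) k \<cdot>\<^sub>m Mseq b \<cdot>\<^sub>m mpow (Mseq P) k \<cdot>\<^sub>m Mseq a" for k
    unfolding w by (simp add: Mseq_append Mseq_rep mmul_assoc)
  have G18w: "Mseq (w k) \<in> G18" for k by (rule G18_Mseq)
  have detP: "mdet (Mseq P) = 1" and detQ: "mdet (Mseq Q) = 1" using G18_det G18_Mseq by auto
  have trw: "mtrace (Mseq (w k)) = vv \<tau> (2 * k + m)" for k
    unfolding Mw trace_formula[OF trP detP trQ detQ] tr1 tr3 key_identity[OF \<tau>(1), symmetric]
    using tr2 by (simp add: algebra_simps)
  have evw: "evenM (Mseq (w k))" for k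
  proof -
    have "length (w k) = length a + length b + k * (length P + length Q)"
      unfolding w by (simp add: rep_def len_rep algebra_simps)
    then have "even (length (w k))" using par by simp
    then show ?thesis by (rule Mseq_even)
  qed
  have HpW: "Hp (W k) = mpow (Hp Y) k \<cdot>\<^sub>m Hp C \<cdot>\<^sub>m mpow (Hp X) k \<cdot>\<^sub>m Hp A" for k
    unfolding W_def by (simp add: Hp_append Hp_rep mmul_assoc)
  have conj: "pmeq (cc \<cdot>\<^sub>m Mseq (w k)) (Hp (W k) \<cdot>\<^sub>m cc)" for k
  proof -
    let ?Qk = "mpow (Mseq Q) k" and ?Pk = "mpow (Mseq P) k" and ?Yk = "mpow (Hp Y) k" and ?Xk = "mpow (Hp X) k"
    have 1: "pmeq (cc \<cdot>\<^sub>m Mseq (w k)) (?Yk \<cdot>\<^sub>m (cc \<cdot>\<^sub>m Mseq b) \<cdot>\<^sub>m ?Pk \<cdot>\<^sub>m Mseq a)"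
      using pmeq_mulR[OF pmeq_mulR[OF pmeq_mulR[OF pmeq_pow[OF cQ, of k]], of "Mseq b"], of ?Pk, of "Mseq a"]
      unfolding Mw by (simp add: mmul_assoc)
    have 2: "pmeq (?Yk \<cdot>\<^sub>m (cc \<cdot>\<^sub>m Mseq b) \<cdot>\<^sub>m ?Pk \<cdot>\<^sub>m Mseq a) (?Yk \<cdot>\<^sub>m Hp C \<cdot>\<^sub>m (dd \<cdot>\<^sub>m ?Pk) \<cdot>\<^sub>m Mseq a)"
      using pmeq_mulR[OF pmeq_mulR[OF pmeq_mulL[OF cb, of ?Yk], of ?Pk], of "Mseq a"]
      by (simp add: mmul_assoc)
    have 3: "pmeq (?Yk \<cdot>\<^sub>m Hp C \<cdot>\<^sub>m (dd \<cdot>\<^sub>m ?Pk) \<cdot>\<^sub>m Mseq a) (?Yk \<cdot>\<^sub>m Hp C \<cdot>\<^sub>m ?Xk \<cdot>\<^sub>m (dd \<cdot>\<^sub>m Mseq a))"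
      using pmeq_mulR[OF pmeq_mulL[OF pmeq_pow[OF cP, of k], of "?Yk \<cdot>\<^sub>m Hp C"], of "Mseq a"]
      by (simp add: mmul_assoc)
    have 4: "pmeq (?Yk \<cdot>\<^sub>m Hp C \<cdot>\<^sub>m ?Xk \<cdot>\<^sub>m (dd \<cdot>\<^sub>m Mseq a)) (Hp (W k) \<cdot>\<^sub>m cc)"
      using pmeq_mulL[OF ca, of "?Yk \<cdot>\<^sub>m Hp C \<cdot>\<^sub>m ?Xk"] unfolding HpW by (simp add: mmul_assoc)
    show ?thesis using pmeq_trans[OF pmeq_trans[OF pmeq_trans[OF 1 2] 3] 4] .
  qed
  have inDW: "inD (W k)" for k
  proof -
    have "set (W k) \<subseteq> set (X @ Y @ C @ A)" unfolding W_def by auto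
    then have "set (W k) \<subseteq> {1, 2, 16, 17}" using D(1) by blast
    moreover have "set (C @ A) \<subseteq> set (W k)" unfolding W_def by auto
    ultimately show ?thesis unfolding inD_def using D(2) by blast
  qed
  have vW: "validw (W k)" for k by (rule inD_valid[OF inDW])
  have dc: "mdet cc = 1" using G18_det[OF G(1)] .
  have dci: "mdet (minv cc) = 1" using mdet_minv[OF dc] .
  have Gci: "minv cc \<in> G18" using G18_inv[OF G(1)] .
  have conjmob: "mobius cc (mobius (Mseq (w k)) p) = mobius (Hw (W k)) (mobius cc p)" for k p
  proof -
    have "mobius cc (mobius (Mseq (w k)) p) = mobius (cc \<cdot>\<^sub>m Mseq (w k)) p"
      using G18_det[OF G18w] by (simp add: mobius_mul)
    also have "\<dots> = mobius (Hp (W k) \<cdot>\<^sub>m cc) p" by (rule pmeq_mobius[OF conj])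
    also have "\<dots> = mobius (Hp (W k)) (mobius cc p)" using dc by (simp add: mobius_mul)
    also have "\<dots> = mobius (Hw (W k)) (mobius cc p)" using mobius_Hw_Hp[OF vW] by simp
    finally show ?thesis .
  qed
  have bk: "mobius (minv cc) (mobius cc p) = p" for p
    using dc by (simp add: mobius_mul[symmetric] minv_left)
  have fw: "mobius cc (mobius (minv cc) p) = p" for p
    using dci dc by (simp add: mobius_mul[symmetric] minv_right)
  have fixgood: "good p" if fp: "mobius (Mseq (w k)) p = p" for k p
  proof -
    have "mobius (Hw (W k)) (mobius cc p) = mobius cc p" using conjmob[of k p] fp by simp
    then have "good (mobius cc p)" by (rule Hw_fix_good[OF inDW])
    then have "good (mobius (minv cc) (mobius cc p))" by (rule good_G[OF Gci])
    then show ?thesis using bk by simp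
  qed
  have noNone: "mobius (Mseq (w k)) None \<noteq> None" for k
    using fixgood[of k None] not_good_None by blast
  have spec: "special_hyperbolic (Mseq (w k)) \<and> (\<forall>p. mobius (Mseq (w k)) p = p \<longrightarrow> (\<exists>r. p = Some r \<and> r \<in> lamK))" for k
    using special_gen[OF G18w evw trw _ \<tau> \<sigma> noNone] m by simp
  define xk where "xk k = (SOME x. x > 0 \<and> mobius (Hw (W k)) (Some x) = Some x)" for k
  have xk: "xk k > 0 \<and> mobius (Hw (W k)) (Some (xk k)) = Some (xk k)" for k
    unfolding xk_def using Hw_fixpoint[OF inDW[of k]] by (rule someI_ex)
  define pk where "pk k = mobius (minv cc) (Some (xk k))" for k
  have pkfix: "mobius (Mseq (w k)) (pk k) = pk k" for k
  proof -
    have "mobius cc (mobius (Mseq (w k)) (pk k)) = mobius (Hw (W k)) (mobius cc (pk k))" by (rule conjmob)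
    also have "mobius cc (pk k) = Some (xk k)" unfolding pk_def by (rule fw)
    also have "mobius (Hw (W k)) (Some (xk k)) = Some (xk k)" using xk by blast
    also have "Some (xk k) = mobius cc (pk k)" unfolding pk_def by (rule fw[symmetric])
    finally show ?thesis using mobius_inj[of cc] dc by simp
  qed
  have orbk: "orbit18 (pk k) = orbit18 (Some (xk k))" for k
    using orbit18_eq[OF G(1), of "pk k"] fw unfolding pk_def by simp
  have lenW: "length (W k) = k * (length X + length Y) + (length C + length A)" for k
    unfolding W_def by (simp add: len_rep algebra_simps)
  have cntW: "cnt 1 (W k) = k * (cnt 1 X + cnt 1 Y) + (cnt 1 C + cnt 1 A)" for k
    unfolding W_def by (simp add: cnt_append cnt_rep algebra_simps)
  have inj: "inj (\<lambda>k. orbit18 (pk k))"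
  proof (rule injI)
    fix k l assume "orbit18 (pk k) = orbit18 (pk l)"
    then have "orbit18 (Some (xk k)) = orbit18 (Some (xk l))" using orbk by simp
    then have "Some (xk l) \<in> orbit18 (Some (xk k))" using orbit18_self by metis
    then obtain h where h: "h \<in> G18" "Some (xk l) = mobius h (Some (xk k))" unfolding orbit18_def by blast
    have gk: "good (Some (xk k))" using Hw_fix_good[OF inDW] xk by blast
    have "Eqv (Some (xk k)) (Some (xk l))" using Eqv_G[OF h(1) gk] h(2) by simp
    moreover have "inP (Some (xk k))" "inP (Some (xk l))" using xk by (auto simp: inP_def)
    ultimately obtain m' n' where mn: "\<forall>i. W k ! ((m' + i) mod length (W k)) = W l ! ((n' + i) mod length (W l))"
      using Eqv_fix_digits[OF vW inD_ne[OF inDW] _ _ vW inD_ne[OF inDW]] xk by blast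
    have "length (W l) * cnt 1 (W k) = length (W k) * cnt 1 (W l)"
      by (rule density_eq[OF inD_ne[OF inDW] inD_ne[OF inDW]]) (use mn in blast)
    then have "(l * (length X + length Y) + (length C + length A)) * (k * (cnt 1 X + cnt 1 Y) + (cnt 1 C + cnt 1 A))
        = (k * (length X + length Y) + (length C + length A)) * (l * (cnt 1 X + cnt 1 Y) + (cnt 1 C + cnt 1 A))"
      unfolding lenW cntW .
    then show "k = l" by (rule linear_inj) (use dens in \<open>simp add: algebra_simps\<close>)
  qed
  have sub: "range (\<lambda>k. orbit18 (pk k)) \<subseteq> {orbit18 p | p k. mobius (Mseq (w k)) p = p}"
    using pkfix by blast
  have inf: "infinite {orbit18 p | p k. mobius (Mseq (w k)) p = p}"
    using infinite_iff_countable_subset inj sub by blast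
  show ?thesis using spec inf by blast
qed



section \<open>Exact arithmetic in Z[lambda]\<close>

datatype zq = Z6 int int int int int int

fun ev :: "zq \<Rightarrow> real" where
  "ev (Z6 a0 a1 a2 a3 a4 a5) = of_int a0 + lam * (of_int a1 + lam * (of_int a2 + lam * (of_int a3 + lam * (of_int a4 + lam * of_int a5))))"

fun zadd :: "zq \<Rightarrow> zq \<Rightarrow> zq" where
  "zadd (Z6 a0 a1 a2 a3 a4 a5) (Z6 b0 b1 b2 b3 b4 b5) = Z6 (a0+b0) (a1+b1) (a2+b2) (a3+b3) (a4+b4) (a5+b5)"
fun zneg :: "zq \<Rightarrow> zq" where
  "zneg (Z6 a0 a1 a2 a3 a4 a5) = Z6 (-a0) (-a1) (-a2) (-a3) (-a4) (-a5)"
fun zsc :: "int \<Rightarrow> zq \<Rightarrow> zq" where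
  "zsc c (Z6 a0 a1 a2 a3 a4 a5) = Z6 (c*a0) (c*a1) (c*a2) (c*a3) (c*a4) (c*a5)"
fun zsh :: "zq \<Rightarrow> zq" where
  "zsh (Z6 c0 c1 c2 c3 c4 c5) = Z6 (3*c5) c0 (c1 - 9*c5) c2 (c3 + 6*c5) c4"
fun zmul :: "zq \<Rightarrow> zq \<Rightarrow> zq" where
  "zmul (Z6 a0 a1 a2 a3 a4 a5) q = zadd (zsc a0 q) (zsh (zadd (zsc a1 q) (zsh (zadd (zsc a2 q)
      (zsh (zadd (zsc a3 q) (zsh (zadd (zsc a4 q) (zsh (zsc a5 q))))))))))"

lemma ev_zadd[simp]: "ev (zadd p q) = ev p + ev q"
  by (cases p; cases q) (simp add: algebra_simps)
lemma ev_zneg[simp]: "ev (zneg p) = - ev p"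
  by (cases p) (simp add: algebra_simps)
lemma ev_zsc[simp]: "ev (zsc c p) = of_int c * ev p"
  by (cases p) (simp add: algebra_simps)
lemma ev_zsh[simp]: "ev (zsh p) = lam * ev p"
proof (cases p)
  case (Z6 c0 c1 c2 c3 c4 c5)
  have "ev (zsh p) - lam * ev p = of_int c5 * (3 - 9 * lam^2 + 6 * lam^4 - lam^6)"
    unfolding Z6 by (simp add: algebra_simps power_def numeral_eq_Suc)
  also have "\<dots> = 0" using lam6 by simp
  finally show ?thesis by simp
qed
lemma ev_zmul[simp]: "ev (zmul p q) = ev p * ev q"
  by (cases p) (simp add: algebra_simps)

datatype zm = ZM zq zq zq zq

fun evM :: "zm \<Rightarrow> mat2" where "evM (ZM a b c d) = Mat2 (ev a) (ev b) (ev c) (ev d)"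
fun zmm :: "zm \<Rightarrow> zm \<Rightarrow> zm" where
  "zmm (ZM a b c d) (ZM e f g h) = ZM (zadd (zmul a e) (zmul b g)) (zadd (zmul a f) (zmul b h))
      (zadd (zmul c e) (zmul d g)) (zadd (zmul c f) (zmul d h))"
fun znegm :: "zm \<Rightarrow> zm" where "znegm (ZM a b c d) = ZM (zneg a) (zneg b) (zneg c) (zneg d)"
fun ztr :: "zm \<Rightarrow> zq" where "ztr (ZM a b c d) = zadd a d"

lemma evM_zmm: "evM (zmm A B) = evM A \<cdot>\<^sub>m evM B"
  by (cases A; cases B) (simp add: mmul_def)
lemma evM_znegm: "evM (znegm A) = mneg (evM A)"
  by (cases A) (simp add: mneg_def)
lemma ev_ztr: "ev (ztr A) = mtrace (evM A)"
  by (cases A) (simp add: mtrace_def)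

definition "z0 = Z6 0 0 0 0 0 0"
definition "z1 = Z6 1 0 0 0 0 0"
definition "zl = Z6 0 1 0 0 0 0"
lemma ev_consts: "ev z0 = 0" "ev z1 = 1" "ev zl = lam" "ev (Z6 (-1) 0 0 0 0 0) = -1"
  by (simp_all add: z0_def z1_def zl_def)

definition "zI = ZM z1 z0 z0 z1"
definition "zS = ZM z0 (Z6 (-1) 0 0 0 0 0) z1 z0"
definition "zT n = ZM z1 (Z6 0 n 0 0 0 0) z0 z1"
definition "zU = ZM z0 (Z6 (-1) 0 0 0 0 0) z1 zl"
definition "zU17 = ZM (Z6 0 (-1) 0 0 0 0) (Z6 (-1) 0 0 0 0 0) z1 z0"

lemma evM_consts: "evM zI = mid" "evM zS = Smat" "evM (zT n) = zpow Tmat n" "evM zU = Umat"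
  "evM zU17 = mpow Umat 17"
  by (simp_all only: U17, simp_all add: zI_def zS_def zT_def zU_def zU17_def ev_consts mid_def Smat_def zpow_T Umat_eq
      z0_def z1_def zl_def mult.commute)

definition zMseq :: "int list \<Rightarrow> zm" where
  "zMseq ns = foldl (\<lambda>A n. zmm (zmm zS (zT n)) A) zI ns"

lemma Mseq_z: "Mseq ns = evM (zMseq ns)"
proof -
  have "foldl stepM (evM A) ns = evM (foldl (\<lambda>A n. zmm (zmm zS (zT n)) A) A ns)" for A
  proof (induction ns arbitrary: A)
    case Nil then show ?case by simp
  next
    case (Cons x ns)
    have "stepM (evM A) x = evM (zmm (zmm zS (zT x)) A)" by (simp add: evM_zmm evM_consts)
    then show ?case using Cons.IH[of "zmm (zmm zS (zT x)) A"] by simp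
  qed
  then show ?thesis unfolding Mseq_def zMseq_def using evM_consts(1) by metis
qed

definition zBp :: "nat \<Rightarrow> zm" where
  "zBp j = (if j = 1 then ZM z1 zl z0 z1 else if j = 2 then ZM zl (Z6 (-1) 0 1 0 0 0) z1 zl
            else if j = 16 then ZM zl z1 (Z6 (-1) 0 1 0 0 0) zl else ZM z1 z0 zl z1)"

lemma Bp_z: "j \<in> {1, 2, 16, 17} \<Longrightarrow> Bp j = evM (zBp j)"
proof -
  assume j: "j \<in> {1, 2, 16, 17}"
  have e: "ev (Z6 (-1) 0 1 0 0 0) = lam^2 - 1" by (simp add: power2_eq_square)
  have 1: "aa (Suc 1) = lam" "aa (Suc 2) = lam^2 - 1" "aa (Suc 16) = 1" "aa (Suc 17) = 0"
    using aa_2 aa_3 aa_17 aa_18 by (simp_all add: numeral_eq_Suc)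
  show ?thesis using j 1 e
    by (auto simp: Bp_def zBp_def ev_consts aa_1 aa_1' aa_2 aa_15 aa_16 aa_17)
qed

definition zHp :: "nat list \<Rightarrow> zm" where "zHp ws = foldr (\<lambda>j M. zmm (zBp j) M) ws zI"

lemma Hp_z: "set ws \<subseteq> {1, 2, 16, 17} \<Longrightarrow> Hp ws = evM (zHp ws)"
  by (induction ws) (simp_all add: Hp_def zHp_def evM_consts evM_zmm Bp_z)

fun zvv :: "zq \<Rightarrow> nat \<Rightarrow> zq" where
  "zvv t 0 = Z6 2 0 0 0 0 0"
| "zvv t (Suc 0) = t"
| "zvv t (Suc (Suc n)) = zadd (zmul t (zvv t (Suc n))) (zneg (zvv t n))"

lemma ev_zvv: "ev (zvv t n) = vv (ev t) n"
  by (induction t n rule: zvv.induct) simp_all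

definition "ztau = Z6 2 0 0 0 16 0"
definition "zsig = Z6 48 0 (-136) 0 48 0"

lemma pmeq_z: "X = Y \<or> X = znegm Y \<Longrightarrow> pmeq (evM X) (evM Y)"
  unfolding pmeq_def using evM_znegm by auto

lemma K_even_poly: "ev (Z6 a 0 c 0 e 0) \<in> K18"
proof -
  have "ev (Z6 a 0 c 0 e 0) = of_int a + of_int c * lam^2 + of_int e * (lam^2 * lam^2)"
    by (simp add: algebra_simps power2_eq_square)
  also have "\<dots> \<in> K18" by (intro K_add K_mul K_int lam2_K)
  finally show ?thesis .
qed

lemma tau_facts: "ev ztau > 2" "ev ztau \<in> K18" "ev zsig \<in> K18" "(ev ztau)^2 - 4 = (ev zsig)^2"
proof -
  have "lam^4 > 0" using lam_pos by simp
  moreover have "ev ztau = 2 + 16 * lam^4" unfolding ztau_def by (simp add: algebra_simps power_def numeral_eq_Suc)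
  ultimately show "ev ztau > 2" by simp
  show "ev ztau \<in> K18" unfolding ztau_def by (rule K_even_poly)
  show "ev zsig \<in> K18" unfolding zsig_def by (rule K_even_poly)
  have "zadd (zmul ztau ztau) (Z6 (-4) 0 0 0 0 0) = zmul zsig zsig" by (simp add: ztau_def zsig_def)
  then have "ev (zadd (zmul ztau ztau) (Z6 (-4) 0 0 0 0 0)) = ev (zmul zsig zsig)" by simp
  then show "(ev ztau)^2 - 4 = (ev zsig)^2" by (simp add: power2_eq_square)
qed

lemma zvv_vals: "zvv (Z6 2 0 0 0 16 0) 1 = Z6 2 0 0 0 16 0" "zvv (Z6 2 0 0 0 16 0) 2 = Z6 4610 0 (-13056) 0 6976 0"
  "zvv (Z6 2 0 0 0 16 0) 3 = Z6 1391618 0 (-3838464) 0 1847952 0"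
  "zvv (Z6 2 0 0 0 16 0) 4 = Z6 350742530 0 (-962853888) 0 455777536 0"
  by (simp_all add: numeral_eq_Suc)

lemma pmeq_help:
  assumes "evM zc = cc" "evM zc' = cc'" "set Y \<subseteq> {1, 2, 16, 17}"
    "zmm zc (zMseq Q) = zmm (zHp Y) zc' \<or> zmm zc (zMseq Q) = znegm (zmm (zHp Y) zc')"
  shows "pmeq (cc \<cdot>\<^sub>m Mseq Q) (Hp Y \<cdot>\<^sub>m cc')"
  using pmeq_z[OF assms(4)] assms(1,2,3) by (simp add: evM_zmm Mseq_z Hp_z)

lemma tr_help1: "ztr (zMseq P) = ztau \<Longrightarrow> mtrace (Mseq P) = ev ztau"
  using ev_ztr[of "zMseq P"] by (simp add: Mseq_z)

lemma tr_help2: "ztr (zmm (zmm (zmm (zMseq Q) (zMseq b)) (zMseq P)) (zMseq a)) = zvv ztau n \<Longrightarrow>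
    mtrace (Mseq Q \<cdot>\<^sub>m Mseq b \<cdot>\<^sub>m Mseq P \<cdot>\<^sub>m Mseq a) = vv (ev ztau) n"
  using ev_ztr[of "zmm (zmm (zmm (zMseq Q) (zMseq b)) (zMseq P)) (zMseq a)"] ev_zvv[of ztau n]
  by (simp add: Mseq_z evM_zmm)

lemma tr_help3: "zadd (ztr (zmm (zmm (zMseq Q) (zMseq b)) (zMseq a))) (ztr (zmm (zmm (zMseq b) (zMseq P)) (zMseq a)))
     = zsc 2 (zvv ztau n) \<Longrightarrow>
    mtrace (Mseq Q \<cdot>\<^sub>m Mseq b \<cdot>\<^sub>m Mseq a) + mtrace (Mseq b \<cdot>\<^sub>m Mseq P \<cdot>\<^sub>m Mseq a) = 2 * vv (ev ztau) n"
proof -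
  assume h: "zadd (ztr (zmm (zmm (zMseq Q) (zMseq b)) (zMseq a))) (ztr (zmm (zmm (zMseq b) (zMseq P)) (zMseq a)))
     = zsc 2 (zvv ztau n)"
  have "ev (zadd (ztr (zmm (zmm (zMseq Q) (zMseq b)) (zMseq a))) (ztr (zmm (zmm (zMseq b) (zMseq P)) (zMseq a))))
      = ev (zsc 2 (zvv ztau n))" using h by simp
  then show ?thesis by (simp add: ev_ztr ev_zvv Mseq_z evM_zmm)
qed

lemma tr_help4: "ztr (zmm (zMseq b) (zMseq a)) = zvv ztau n \<Longrightarrow> mtrace (Mseq b \<cdot>\<^sub>m Mseq a) = vv (ev ztau) n"
  using ev_ztr[of "zmm (zMseq b) (zMseq a)"] ev_zvv[of ztau n] by (simp add: Mseq_z evM_zmm)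

lemmas zdefs = zMseq_def zHp_def zBp_def zU17_def zU_def zS_def zT_def zI_def z0_def z1_def zl_def ztau_def zvv_vals

definition concl :: "(nat \<Rightarrow> int list) \<Rightarrow> bool" where
  "concl w \<longleftrightarrow> (\<forall>k. special_hyperbolic (Mseq (w k)))
    \<and> (\<forall>k p. mobius (Mseq (w k)) p = p \<longrightarrow> (\<exists>r. p = Some r \<and> r \<in> lamK))
    \<and> infinite {orbit18 p | p k. mobius (Mseq (w k)) p = p}"



lemma fam0: "concl (\<lambda>k. [2] @ rep k [-4,-1,4,1] @ [-2,-2,2] @ rep k [1,-4,-1,4])"
  unfolding concl_def
proof (rule family_thm[where a="[2]" and P="[-4,-1,4,1]" and b="[-2,-2,2]" and Q="[1,-4,-1,4]"
    and cc="mpow Umat 17" and dd="Smat" and X="[2,1,1,1,16,17,17,17]" and Y="[1,1,1,16,17,17,17,2]" and C="[1,17,16,17]" and A="[1,2]"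
    and \<tau>="ev ztau" and \<sigma>="ev zsig" and m=1])
  show "pmeq (mpow Umat 17 \<cdot>\<^sub>m Mseq [1,-4,-1,4]) (Hp [1,1,1,16,17,17,17,2] \<cdot>\<^sub>m mpow Umat 17)"
    by (rule pmeq_help[where zc="zU17" and zc'="zU17"]) (simp add: evM_consts evM_zmm, simp add: evM_consts evM_zmm, simp, simp add: zdefs)
  show "pmeq (Smat \<cdot>\<^sub>m Mseq [-4,-1,4,1]) (Hp [2,1,1,1,16,17,17,17] \<cdot>\<^sub>m Smat)"
    by (rule pmeq_help[where zc="zS" and zc'="zS"]) (simp add: evM_consts evM_zmm, simp add: evM_consts evM_zmm, simp, simp add: zdefs)
  show "pmeq (mpow Umat 17 \<cdot>\<^sub>m Mseq [-2,-2,2]) (Hp [1,17,16,17] \<cdot>\<^sub>m Smat)"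
    by (rule pmeq_help[where zc="zU17" and zc'="zS"]) (simp add: evM_consts evM_zmm, simp add: evM_consts evM_zmm, simp, simp add: zdefs)
  show "pmeq (Smat \<cdot>\<^sub>m Mseq [2]) (Hp [1,2] \<cdot>\<^sub>m mpow Umat 17)"
    by (rule pmeq_help[where zc="zS" and zc'="zU17"]) (simp add: evM_consts evM_zmm, simp add: evM_consts evM_zmm, simp, simp add: zdefs)
  show "mtrace (Mseq [-4,-1,4,1]) = ev ztau" by (rule tr_help1) (simp add: zdefs)
  show "mtrace (Mseq [1,-4,-1,4]) = ev ztau" by (rule tr_help1) (simp add: zdefs)
  show "mtrace (Mseq [1,-4,-1,4] \<cdot>\<^sub>m Mseq [-2,-2,2] \<cdot>\<^sub>m Mseq [-4,-1,4,1] \<cdot>\<^sub>m Mseq [2]) = vv (ev ztau) (1 + 2)"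
    by (rule tr_help2) (simp add: zdefs)
  show "mtrace (Mseq [1,-4,-1,4] \<cdot>\<^sub>m Mseq [-2,-2,2] \<cdot>\<^sub>m Mseq [2]) + mtrace (Mseq [-2,-2,2] \<cdot>\<^sub>m Mseq [-4,-1,4,1] \<cdot>\<^sub>m Mseq [2]) = 2 * vv (ev ztau) (1 + 1)"
    by (rule tr_help3) (simp add: zdefs)
  show "mtrace (Mseq [-2,-2,2] \<cdot>\<^sub>m Mseq [2]) = vv (ev ztau) 1"
    by (rule tr_help4) (simp add: zdefs)
qed (simp_all add: tau_facts G18_mpow[OF G18_U] G18_S cnt_def)

lemma fam1: "concl (\<lambda>k. [4] @ rep k [2,-2,-2,2] @ [1,-4,-1] @ rep k [2,2,-2,-2])"
  unfolding concl_def
proof (rule family_thm[where a="[4]" and P="[2,-2,-2,2]" and b="[1,-4,-1]" and Q="[2,2,-2,-2]"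
    and cc="mid" and dd="mpow Umat 17" and X="[1,17,16,17,1,2]" and Y="[17,16,17,1,2,1]" and C="[16,17,17,17,2]" and A="[1,1,1]"
    and \<tau>="ev ztau" and \<sigma>="ev zsig" and m=1])
  show "pmeq (mid \<cdot>\<^sub>m Mseq [2,2,-2,-2]) (Hp [17,16,17,1,2,1] \<cdot>\<^sub>m mid)"
    by (rule pmeq_help[where zc="zI" and zc'="zI"]) (simp add: evM_consts evM_zmm, simp add: evM_consts evM_zmm, simp, simp add: zdefs)
  show "pmeq (mpow Umat 17 \<cdot>\<^sub>m Mseq [2,-2,-2,2]) (Hp [1,17,16,17,1,2] \<cdot>\<^sub>m mpow Umat 17)"
    by (rule pmeq_help[where zc="zU17" and zc'="zU17"]) (simp add: evM_consts evM_zmm, simp add: evM_consts evM_zmm, simp, simp add: zdefs)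
  show "pmeq (mid \<cdot>\<^sub>m Mseq [1,-4,-1]) (Hp [16,17,17,17,2] \<cdot>\<^sub>m mpow Umat 17)"
    by (rule pmeq_help[where zc="zI" and zc'="zU17"]) (simp add: evM_consts evM_zmm, simp add: evM_consts evM_zmm, simp, simp add: zdefs)
  show "pmeq (mpow Umat 17 \<cdot>\<^sub>m Mseq [4]) (Hp [1,1,1] \<cdot>\<^sub>m mid)"
    by (rule pmeq_help[where zc="zU17" and zc'="zI"]) (simp add: evM_consts evM_zmm, simp add: evM_consts evM_zmm, simp, simp add: zdefs)
  show "mtrace (Mseq [2,-2,-2,2]) = ev ztau" by (rule tr_help1) (simp add: zdefs)
  show "mtrace (Mseq [2,2,-2,-2]) = ev ztau" by (rule tr_help1) (simp add: zdefs)
  show "mtrace (Mseq [2,2,-2,-2] \<cdot>\<^sub>m Mseq [1,-4,-1] \<cdot>\<^sub>m Mseq [2,-2,-2,2] \<cdot>\<^sub>m Mseq [4]) = vv (ev ztau) (1 + 2)"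
    by (rule tr_help2) (simp add: zdefs)
  show "mtrace (Mseq [2,2,-2,-2] \<cdot>\<^sub>m Mseq [1,-4,-1] \<cdot>\<^sub>m Mseq [4]) + mtrace (Mseq [1,-4,-1] \<cdot>\<^sub>m Mseq [2,-2,-2,2] \<cdot>\<^sub>m Mseq [4]) = 2 * vv (ev ztau) (1 + 1)"
    by (rule tr_help3) (simp add: zdefs)
  show "mtrace (Mseq [1,-4,-1] \<cdot>\<^sub>m Mseq [4]) = vv (ev ztau) 1"
    by (rule tr_help4) (simp add: zdefs)
qed (simp_all add: tau_facts G18.G_id G18_mpow[OF G18_U] cnt_def)

lemma fam2: "concl (\<lambda>k. [-4] @ rep k [-1,8,1,-2] @ [-2,1,2] @ rep k [-2,-1,8,1])"
  unfolding concl_def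
proof (rule family_thm[where a="[-4]" and P="[-1,8,1,-2]" and b="[-2,1,2]" and Q="[-2,-1,8,1]"
    and cc="Smat" and dd="(Umat \<cdot>\<^sub>m Smat)" and X="[17,2,1,1,1,1,1,1,1,16]" and Y="[2,1,1,1,1,1,1,1,16,17]" and C="[1,2,17,16]" and A="[17,17,17]"
    and \<tau>="ev ztau" and \<sigma>="ev zsig" and m=1])
  show "pmeq (Smat \<cdot>\<^sub>m Mseq [-2,-1,8,1]) (Hp [2,1,1,1,1,1,1,1,16,17] \<cdot>\<^sub>m Smat)"
    by (rule pmeq_help[where zc="zS" and zc'="zS"]) (simp add: evM_consts evM_zmm, simp add: evM_consts evM_zmm, simp, simp add: zdefs)
  show "pmeq ((Umat \<cdot>\<^sub>m Smat) \<cdot>\<^sub>m Mseq [-1,8,1,-2]) (Hp [17,2,1,1,1,1,1,1,1,16] \<cdot>\<^sub>m (Umat \<cdot>\<^sub>m Smat))"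
    by (rule pmeq_help[where zc="zmm zU zS" and zc'="zmm zU zS"]) (simp add: evM_consts evM_zmm, simp add: evM_consts evM_zmm, simp, simp add: zdefs)
  show "pmeq (Smat \<cdot>\<^sub>m Mseq [-2,1,2]) (Hp [1,2,17,16] \<cdot>\<^sub>m (Umat \<cdot>\<^sub>m Smat))"
    by (rule pmeq_help[where zc="zS" and zc'="zmm zU zS"]) (simp add: evM_consts evM_zmm, simp add: evM_consts evM_zmm, simp, simp add: zdefs)
  show "pmeq ((Umat \<cdot>\<^sub>m Smat) \<cdot>\<^sub>m Mseq [-4]) (Hp [17,17,17] \<cdot>\<^sub>m Smat)"
    by (rule pmeq_help[where zc="zmm zU zS" and zc'="zS"]) (simp add: evM_consts evM_zmm, simp add: evM_consts evM_zmm, simp, simp add: zdefs)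
  show "mtrace (Mseq [-1,8,1,-2]) = ev ztau" by (rule tr_help1) (simp add: zdefs)
  show "mtrace (Mseq [-2,-1,8,1]) = ev ztau" by (rule tr_help1) (simp add: zdefs)
  show "mtrace (Mseq [-2,-1,8,1] \<cdot>\<^sub>m Mseq [-2,1,2] \<cdot>\<^sub>m Mseq [-1,8,1,-2] \<cdot>\<^sub>m Mseq [-4]) = vv (ev ztau) (1 + 2)"
    by (rule tr_help2) (simp add: zdefs)
  show "mtrace (Mseq [-2,-1,8,1] \<cdot>\<^sub>m Mseq [-2,1,2] \<cdot>\<^sub>m Mseq [-4]) + mtrace (Mseq [-2,1,2] \<cdot>\<^sub>m Mseq [-1,8,1,-2] \<cdot>\<^sub>m Mseq [-4]) = 2 * vv (ev ztau) (1 + 1)"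
    by (rule tr_help3) (simp add: zdefs)
  show "mtrace (Mseq [-2,1,2] \<cdot>\<^sub>m Mseq [-4]) = vv (ev ztau) 1"
    by (rule tr_help4) (simp add: zdefs)
qed (simp_all add: tau_facts G18_S G18_mul[OF G18_U G18_S] cnt_def)

lemma fam3: "concl (\<lambda>k. [-1] @ rep k [-4,2,1,-2] @ [-2,1,8] @ rep k [1,-1,-1,16])"
  unfolding concl_def
proof (rule family_thm[where a="[-1]" and P="[-4,2,1,-2]" and b="[-2,1,8]" and Q="[1,-1,-1,16]"
    and cc="mpow Umat 17" and dd="(Umat \<cdot>\<^sub>m Smat)" and X="[17,2,1,17,17,17,16]" and Y="[1,1,1,1,1,1,1,1,1,1,1,1,1,1,1,16,2]" and C="[1,1,1,1,1,1,2,17,16]" and A="[1]"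
    and \<tau>="ev ztau" and \<sigma>="ev zsig" and m=1])
  show "pmeq (mpow Umat 17 \<cdot>\<^sub>m Mseq [1,-1,-1,16]) (Hp [1,1,1,1,1,1,1,1,1,1,1,1,1,1,1,16,2] \<cdot>\<^sub>m mpow Umat 17)"
    by (rule pmeq_help[where zc="zU17" and zc'="zU17"]) (simp add: evM_consts evM_zmm, simp add: evM_consts evM_zmm, simp, simp add: zdefs)
  show "pmeq ((Umat \<cdot>\<^sub>m Smat) \<cdot>\<^sub>m Mseq [-4,2,1,-2]) (Hp [17,2,1,17,17,17,16] \<cdot>\<^sub>m (Umat \<cdot>\<^sub>m Smat))"
    by (rule pmeq_help[where zc="zmm zU zS" and zc'="zmm zU zS"]) (simp add: evM_consts evM_zmm, simp add: evM_consts evM_zmm, simp, simp add: zdefs)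
  show "pmeq (mpow Umat 17 \<cdot>\<^sub>m Mseq [-2,1,8]) (Hp [1,1,1,1,1,1,2,17,16] \<cdot>\<^sub>m (Umat \<cdot>\<^sub>m Smat))"
    by (rule pmeq_help[where zc="zU17" and zc'="zmm zU zS"]) (simp add: evM_consts evM_zmm, simp add: evM_consts evM_zmm, simp, simp add: zdefs)
  show "pmeq ((Umat \<cdot>\<^sub>m Smat) \<cdot>\<^sub>m Mseq [-1]) (Hp [1] \<cdot>\<^sub>m mpow Umat 17)"
    by (rule pmeq_help[where zc="zmm zU zS" and zc'="zU17"]) (simp add: evM_consts evM_zmm, simp add: evM_consts evM_zmm, simp, simp add: zdefs)
  show "mtrace (Mseq [-4,2,1,-2]) = ev ztau" by (rule tr_help1) (simp add: zdefs)
  show "mtrace (Mseq [1,-1,-1,16]) = ev ztau" by (rule tr_help1) (simp add: zdefs)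
  show "mtrace (Mseq [1,-1,-1,16] \<cdot>\<^sub>m Mseq [-2,1,8] \<cdot>\<^sub>m Mseq [-4,2,1,-2] \<cdot>\<^sub>m Mseq [-1]) = vv (ev ztau) (1 + 2)"
    by (rule tr_help2) (simp add: zdefs)
  show "mtrace (Mseq [1,-1,-1,16] \<cdot>\<^sub>m Mseq [-2,1,8] \<cdot>\<^sub>m Mseq [-1]) + mtrace (Mseq [-2,1,8] \<cdot>\<^sub>m Mseq [-4,2,1,-2] \<cdot>\<^sub>m Mseq [-1]) = 2 * vv (ev ztau) (1 + 1)"
    by (rule tr_help3) (simp add: zdefs)
  show "mtrace (Mseq [-2,1,8] \<cdot>\<^sub>m Mseq [-1]) = vv (ev ztau) 1"
    by (rule tr_help4) (simp add: zdefs)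
qed (simp_all add: tau_facts G18_mpow[OF G18_U] G18_mul[OF G18_U G18_S] cnt_def)

lemma fam4: "concl (\<lambda>k. [16] @ rep k [1,-2,-1,8] @ [-1,-1,1] @ rep k [8,1,-2,-1])"
  unfolding concl_def
proof (rule family_thm[where a="[16]" and P="[1,-2,-1,8]" and b="[-1,-1,1]" and Q="[8,1,-2,-1]"
    and cc="(Smat \<cdot>\<^sub>m Umat)" and dd="mpow Umat 17" and X="[1,1,1,1,1,1,1,16,17,2]" and Y="[1,16,17,2,1,1,1,1,1,1]" and C="[2,16,1]" and A="[1,1,1,1,1,1,1,1,1,1,1,1,1,1]"
    and \<tau>="ev ztau" and \<sigma>="ev zsig" and m=1])
  show "pmeq ((Smat \<cdot>\<^sub>m Umat) \<cdot>\<^sub>m Mseq [8,1,-2,-1]) (Hp [1,16,17,2,1,1,1,1,1,1] \<cdot>\<^sub>m (Smat \<cdot>\<^sub>m Umat))"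
    by (rule pmeq_help[where zc="zmm zS zU" and zc'="zmm zS zU"]) (simp add: evM_consts evM_zmm, simp add: evM_consts evM_zmm, simp, simp add: zdefs)
  show "pmeq (mpow Umat 17 \<cdot>\<^sub>m Mseq [1,-2,-1,8]) (Hp [1,1,1,1,1,1,1,16,17,2] \<cdot>\<^sub>m mpow Umat 17)"
    by (rule pmeq_help[where zc="zU17" and zc'="zU17"]) (simp add: evM_consts evM_zmm, simp add: evM_consts evM_zmm, simp, simp add: zdefs)
  show "pmeq ((Smat \<cdot>\<^sub>m Umat) \<cdot>\<^sub>m Mseq [-1,-1,1]) (Hp [2,16,1] \<cdot>\<^sub>m mpow Umat 17)"
    by (rule pmeq_help[where zc="zmm zS zU" and zc'="zU17"]) (simp add: evM_consts evM_zmm, simp add: evM_consts evM_zmm, simp, simp add: zdefs)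
  show "pmeq (mpow Umat 17 \<cdot>\<^sub>m Mseq [16]) (Hp [1,1,1,1,1,1,1,1,1,1,1,1,1,1] \<cdot>\<^sub>m (Smat \<cdot>\<^sub>m Umat))"
    by (rule pmeq_help[where zc="zU17" and zc'="zmm zS zU"]) (simp add: evM_consts evM_zmm, simp add: evM_consts evM_zmm, simp, simp add: zdefs)
  show "mtrace (Mseq [1,-2,-1,8]) = ev ztau" by (rule tr_help1) (simp add: zdefs)
  show "mtrace (Mseq [8,1,-2,-1]) = ev ztau" by (rule tr_help1) (simp add: zdefs)
  show "mtrace (Mseq [8,1,-2,-1] \<cdot>\<^sub>m Mseq [-1,-1,1] \<cdot>\<^sub>m Mseq [1,-2,-1,8] \<cdot>\<^sub>m Mseq [16]) = vv (ev ztau) (1 + 2)"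
    by (rule tr_help2) (simp add: zdefs)
  show "mtrace (Mseq [8,1,-2,-1] \<cdot>\<^sub>m Mseq [-1,-1,1] \<cdot>\<^sub>m Mseq [16]) + mtrace (Mseq [-1,-1,1] \<cdot>\<^sub>m Mseq [1,-2,-1,8] \<cdot>\<^sub>m Mseq [16]) = 2 * vv (ev ztau) (1 + 1)"
    by (rule tr_help3) (simp add: zdefs)
  show "mtrace (Mseq [-1,-1,1] \<cdot>\<^sub>m Mseq [16]) = vv (ev ztau) 1"
    by (rule tr_help4) (simp add: zdefs)
qed (simp_all add: tau_facts G18_mul[OF G18_S G18_U] G18_mpow[OF G18_U] cnt_def)

lemma fam5: "concl (\<lambda>k. [4] @ rep k [2,-2,-2,2] @ [2,-2,-1,4,1,-2,-2] @ rep k [2,2,-2,-2])"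
  unfolding concl_def
proof (rule family_thm[where a="[4]" and P="[2,-2,-2,2]" and b="[2,-2,-1,4,1,-2,-2]" and Q="[2,2,-2,-2]"
    and cc="mid" and dd="mpow Umat 17" and X="[1,17,16,17,1,2]" and Y="[17,16,17,1,2,1]" and C="[17,16,17,2,1,1,1,16,17,1,2]" and A="[1,1,1]"
    and \<tau>="ev ztau" and \<sigma>="ev zsig" and m=2])
  show "pmeq (mid \<cdot>\<^sub>m Mseq [2,2,-2,-2]) (Hp [17,16,17,1,2,1] \<cdot>\<^sub>m mid)"
    by (rule pmeq_help[where zc="zI" and zc'="zI"]) (simp add: evM_consts evM_zmm, simp add: evM_consts evM_zmm, simp, simp add: zdefs)
  show "pmeq (mpow Umat 17 \<cdot>\<^sub>m Mseq [2,-2,-2,2]) (Hp [1,17,16,17,1,2] \<cdot>\<^sub>m mpow Umat 17)"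
    by (rule pmeq_help[where zc="zU17" and zc'="zU17"]) (simp add: evM_consts evM_zmm, simp add: evM_consts evM_zmm, simp, simp add: zdefs)
  show "pmeq (mid \<cdot>\<^sub>m Mseq [2,-2,-1,4,1,-2,-2]) (Hp [17,16,17,2,1,1,1,16,17,1,2] \<cdot>\<^sub>m mpow Umat 17)"
    by (rule pmeq_help[where zc="zI" and zc'="zU17"]) (simp add: evM_consts evM_zmm, simp add: evM_consts evM_zmm, simp, simp add: zdefs)
  show "pmeq (mpow Umat 17 \<cdot>\<^sub>m Mseq [4]) (Hp [1,1,1] \<cdot>\<^sub>m mid)"
    by (rule pmeq_help[where zc="zU17" and zc'="zI"]) (simp add: evM_consts evM_zmm, simp add: evM_consts evM_zmm, simp, simp add: zdefs)
  show "mtrace (Mseq [2,-2,-2,2]) = ev ztau" by (rule tr_help1) (simp add: zdefs)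
  show "mtrace (Mseq [2,2,-2,-2]) = ev ztau" by (rule tr_help1) (simp add: zdefs)
  show "mtrace (Mseq [2,2,-2,-2] \<cdot>\<^sub>m Mseq [2,-2,-1,4,1,-2,-2] \<cdot>\<^sub>m Mseq [2,-2,-2,2] \<cdot>\<^sub>m Mseq [4]) = vv (ev ztau) (2 + 2)"
    by (rule tr_help2) (simp add: zdefs)
  show "mtrace (Mseq [2,2,-2,-2] \<cdot>\<^sub>m Mseq [2,-2,-1,4,1,-2,-2] \<cdot>\<^sub>m Mseq [4]) + mtrace (Mseq [2,-2,-1,4,1,-2,-2] \<cdot>\<^sub>m Mseq [2,-2,-2,2] \<cdot>\<^sub>m Mseq [4]) = 2 * vv (ev ztau) (2 + 1)"
    by (rule tr_help3) (simp add: zdefs)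
  show "mtrace (Mseq [2,-2,-1,4,1,-2,-2] \<cdot>\<^sub>m Mseq [4]) = vv (ev ztau) 2"
    by (rule tr_help4) (simp add: zdefs)
qed (simp_all add: tau_facts G18.G_id G18_mpow[OF G18_U] cnt_def)

lemma fam6: "concl (\<lambda>k. [4] @ rep k [1,-2,-4,2] @ [1,-2,-2,4,2,-2,-1] @ rep k [2,4,-2,-1])"
  unfolding concl_def
proof (rule family_thm[where a="[4]" and P="[1,-2,-4,2]" and b="[1,-2,-2,4,2,-2,-1]" and Q="[2,4,-2,-1]"
    and cc="mid" and dd="mpow Umat 17" and X="[1,17,17,17,16,17,2]" and Y="[16,17,1,1,1,2,1]" and C="[16,17,1,2,1,1,1,17,16,17,2]" and A="[1,1,1]"
    and \<tau>="ev ztau" and \<sigma>="ev zsig" and m=2])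
  show "pmeq (mid \<cdot>\<^sub>m Mseq [2,4,-2,-1]) (Hp [16,17,1,1,1,2,1] \<cdot>\<^sub>m mid)"
    by (rule pmeq_help[where zc="zI" and zc'="zI"]) (simp add: evM_consts evM_zmm, simp add: evM_consts evM_zmm, simp, simp add: zdefs)
  show "pmeq (mpow Umat 17 \<cdot>\<^sub>m Mseq [1,-2,-4,2]) (Hp [1,17,17,17,16,17,2] \<cdot>\<^sub>m mpow Umat 17)"
    by (rule pmeq_help[where zc="zU17" and zc'="zU17"]) (simp add: evM_consts evM_zmm, simp add: evM_consts evM_zmm, simp, simp add: zdefs)
  show "pmeq (mid \<cdot>\<^sub>m Mseq [1,-2,-2,4,2,-2,-1]) (Hp [16,17,1,2,1,1,1,17,16,17,2] \<cdot>\<^sub>m mpow Umat 17)"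
    by (rule pmeq_help[where zc="zI" and zc'="zU17"]) (simp add: evM_consts evM_zmm, simp add: evM_consts evM_zmm, simp, simp add: zdefs)
  show "pmeq (mpow Umat 17 \<cdot>\<^sub>m Mseq [4]) (Hp [1,1,1] \<cdot>\<^sub>m mid)"
    by (rule pmeq_help[where zc="zU17" and zc'="zI"]) (simp add: evM_consts evM_zmm, simp add: evM_consts evM_zmm, simp, simp add: zdefs)
  show "mtrace (Mseq [1,-2,-4,2]) = ev ztau" by (rule tr_help1) (simp add: zdefs)
  show "mtrace (Mseq [2,4,-2,-1]) = ev ztau" by (rule tr_help1) (simp add: zdefs)
  show "mtrace (Mseq [2,4,-2,-1] \<cdot>\<^sub>m Mseq [1,-2,-2,4,2,-2,-1] \<cdot>\<^sub>m Mseq [1,-2,-4,2] \<cdot>\<^sub>m Mseq [4]) = vv (ev ztau) (2 + 2)"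
    by (rule tr_help2) (simp add: zdefs)
  show "mtrace (Mseq [2,4,-2,-1] \<cdot>\<^sub>m Mseq [1,-2,-2,4,2,-2,-1] \<cdot>\<^sub>m Mseq [4]) + mtrace (Mseq [1,-2,-2,4,2,-2,-1] \<cdot>\<^sub>m Mseq [1,-2,-4,2] \<cdot>\<^sub>m Mseq [4]) = 2 * vv (ev ztau) (2 + 1)"
    by (rule tr_help3) (simp add: zdefs)
  show "mtrace (Mseq [1,-2,-2,4,2,-2,-1] \<cdot>\<^sub>m Mseq [4]) = vv (ev ztau) 2"
    by (rule tr_help4) (simp add: zdefs)
qed (simp_all add: tau_facts G18.G_id G18_mpow[OF G18_U] cnt_def)

lemma fam7: "concl (\<lambda>k. [2] @ rep k [-4,-1,4,1] @ [-4,-1,2,2,-2,-1,4] @ rep k [1,-4,-1,4])"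
  unfolding concl_def
proof (rule family_thm[where a="[2]" and P="[-4,-1,4,1]" and b="[-4,-1,2,2,-2,-1,4]" and Q="[1,-4,-1,4]"
    and cc="mpow Umat 17" and dd="Smat" and X="[2,1,1,1,16,17,17,17]" and Y="[1,1,1,16,17,17,17,2]" and C="[1,1,1,16,17,1,2,1,16,17,17,17]" and A="[1,2]"
    and \<tau>="ev ztau" and \<sigma>="ev zsig" and m=2])
  show "pmeq (mpow Umat 17 \<cdot>\<^sub>m Mseq [1,-4,-1,4]) (Hp [1,1,1,16,17,17,17,2] \<cdot>\<^sub>m mpow Umat 17)"
    by (rule pmeq_help[where zc="zU17" and zc'="zU17"]) (simp add: evM_consts evM_zmm, simp add: evM_consts evM_zmm, simp, simp add: zdefs)
  show "pmeq (Smat \<cdot>\<^sub>m Mseq [-4,-1,4,1]) (Hp [2,1,1,1,16,17,17,17] \<cdot>\<^sub>m Smat)"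
    by (rule pmeq_help[where zc="zS" and zc'="zS"]) (simp add: evM_consts evM_zmm, simp add: evM_consts evM_zmm, simp, simp add: zdefs)
  show "pmeq (mpow Umat 17 \<cdot>\<^sub>m Mseq [-4,-1,2,2,-2,-1,4]) (Hp [1,1,1,16,17,1,2,1,16,17,17,17] \<cdot>\<^sub>m Smat)"
    by (rule pmeq_help[where zc="zU17" and zc'="zS"]) (simp add: evM_consts evM_zmm, simp add: evM_consts evM_zmm, simp, simp add: zdefs)
  show "pmeq (Smat \<cdot>\<^sub>m Mseq [2]) (Hp [1,2] \<cdot>\<^sub>m mpow Umat 17)"
    by (rule pmeq_help[where zc="zS" and zc'="zU17"]) (simp add: evM_consts evM_zmm, simp add: evM_consts evM_zmm, simp, simp add: zdefs)
  show "mtrace (Mseq [-4,-1,4,1]) = ev ztau" by (rule tr_help1) (simp add: zdefs)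
  show "mtrace (Mseq [1,-4,-1,4]) = ev ztau" by (rule tr_help1) (simp add: zdefs)
  show "mtrace (Mseq [1,-4,-1,4] \<cdot>\<^sub>m Mseq [-4,-1,2,2,-2,-1,4] \<cdot>\<^sub>m Mseq [-4,-1,4,1] \<cdot>\<^sub>m Mseq [2]) = vv (ev ztau) (2 + 2)"
    by (rule tr_help2) (simp add: zdefs)
  show "mtrace (Mseq [1,-4,-1,4] \<cdot>\<^sub>m Mseq [-4,-1,2,2,-2,-1,4] \<cdot>\<^sub>m Mseq [2]) + mtrace (Mseq [-4,-1,2,2,-2,-1,4] \<cdot>\<^sub>m Mseq [-4,-1,4,1] \<cdot>\<^sub>m Mseq [2]) = 2 * vv (ev ztau) (2 + 1)"
    by (rule tr_help3) (simp add: zdefs)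
  show "mtrace (Mseq [-4,-1,2,2,-2,-1,4] \<cdot>\<^sub>m Mseq [2]) = vv (ev ztau) 2"
    by (rule tr_help4) (simp add: zdefs)
qed (simp_all add: tau_facts G18_mpow[OF G18_U] G18_S cnt_def)

lemma fam8: "concl (\<lambda>k. [2] @ rep k [-2,-1,8,1] @ [-2,-1,4,2,-4,-1,2] @ rep k [1,-8,-1,2])"
  unfolding concl_def
proof (rule family_thm[where a="[2]" and P="[-2,-1,8,1]" and b="[-2,-1,4,2,-4,-1,2]" and Q="[1,-8,-1,2]"
    and cc="mpow Umat 17" and dd="Smat" and X="[2,1,1,1,1,1,1,1,16,17]" and Y="[1,16,17,17,17,17,17,17,17,2]" and C="[1,16,17,17,17,1,2,1,1,1,16,17]" and A="[1,2]"
    and \<tau>="ev ztau" and \<sigma>="ev zsig" and m=2])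
  show "pmeq (mpow Umat 17 \<cdot>\<^sub>m Mseq [1,-8,-1,2]) (Hp [1,16,17,17,17,17,17,17,17,2] \<cdot>\<^sub>m mpow Umat 17)"
    by (rule pmeq_help[where zc="zU17" and zc'="zU17"]) (simp add: evM_consts evM_zmm, simp add: evM_consts evM_zmm, simp, simp add: zdefs)
  show "pmeq (Smat \<cdot>\<^sub>m Mseq [-2,-1,8,1]) (Hp [2,1,1,1,1,1,1,1,16,17] \<cdot>\<^sub>m Smat)"
    by (rule pmeq_help[where zc="zS" and zc'="zS"]) (simp add: evM_consts evM_zmm, simp add: evM_consts evM_zmm, simp, simp add: zdefs)
  show "pmeq (mpow Umat 17 \<cdot>\<^sub>m Mseq [-2,-1,4,2,-4,-1,2]) (Hp [1,16,17,17,17,1,2,1,1,1,16,17] \<cdot>\<^sub>m Smat)"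
    by (rule pmeq_help[where zc="zU17" and zc'="zS"]) (simp add: evM_consts evM_zmm, simp add: evM_consts evM_zmm, simp, simp add: zdefs)
  show "pmeq (Smat \<cdot>\<^sub>m Mseq [2]) (Hp [1,2] \<cdot>\<^sub>m mpow Umat 17)"
    by (rule pmeq_help[where zc="zS" and zc'="zU17"]) (simp add: evM_consts evM_zmm, simp add: evM_consts evM_zmm, simp, simp add: zdefs)
  show "mtrace (Mseq [-2,-1,8,1]) = ev ztau" by (rule tr_help1) (simp add: zdefs)
  show "mtrace (Mseq [1,-8,-1,2]) = ev ztau" by (rule tr_help1) (simp add: zdefs)
  show "mtrace (Mseq [1,-8,-1,2] \<cdot>\<^sub>m Mseq [-2,-1,4,2,-4,-1,2] \<cdot>\<^sub>m Mseq [-2,-1,8,1] \<cdot>\<^sub>m Mseq [2]) = vv (ev ztau) (2 + 2)"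
    by (rule tr_help2) (simp add: zdefs)
  show "mtrace (Mseq [1,-8,-1,2] \<cdot>\<^sub>m Mseq [-2,-1,4,2,-4,-1,2] \<cdot>\<^sub>m Mseq [2]) + mtrace (Mseq [-2,-1,4,2,-4,-1,2] \<cdot>\<^sub>m Mseq [-2,-1,8,1] \<cdot>\<^sub>m Mseq [2]) = 2 * vv (ev ztau) (2 + 1)"
    by (rule tr_help3) (simp add: zdefs)
  show "mtrace (Mseq [-2,-1,4,2,-4,-1,2] \<cdot>\<^sub>m Mseq [2]) = vv (ev ztau) 2"
    by (rule tr_help4) (simp add: zdefs)
qed (simp_all add: tau_facts G18_mpow[OF G18_U] G18_S cnt_def)

lemma fam9: "concl (\<lambda>k. [-4] @ rep k [-1,8,1,-2] @ [-1,8,-1,-1,1,8,1] @ rep k [-2,-1,8,1])"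
  unfolding concl_def
proof (rule family_thm[where a="[-4]" and P="[-1,8,1,-2]" and b="[-1,8,-1,-1,1,8,1]" and Q="[-2,-1,8,1]"
    and cc="Smat" and dd="(Umat \<cdot>\<^sub>m Smat)" and X="[17,2,1,1,1,1,1,1,1,16]" and Y="[2,1,1,1,1,1,1,1,16,17]" and C="[2,1,1,1,1,1,1,2,16,1,1,1,1,1,1,1,1,16]" and A="[17,17,17]"
    and \<tau>="ev ztau" and \<sigma>="ev zsig" and m=2])
  show "pmeq (Smat \<cdot>\<^sub>m Mseq [-2,-1,8,1]) (Hp [2,1,1,1,1,1,1,1,16,17] \<cdot>\<^sub>m Smat)"
    by (rule pmeq_help[where zc="zS" and zc'="zS"]) (simp add: evM_consts evM_zmm, simp add: evM_consts evM_zmm, simp, simp add: zdefs)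
  show "pmeq ((Umat \<cdot>\<^sub>m Smat) \<cdot>\<^sub>m Mseq [-1,8,1,-2]) (Hp [17,2,1,1,1,1,1,1,1,16] \<cdot>\<^sub>m (Umat \<cdot>\<^sub>m Smat))"
    by (rule pmeq_help[where zc="zmm zU zS" and zc'="zmm zU zS"]) (simp add: evM_consts evM_zmm, simp add: evM_consts evM_zmm, simp, simp add: zdefs)
  show "pmeq (Smat \<cdot>\<^sub>m Mseq [-1,8,-1,-1,1,8,1]) (Hp [2,1,1,1,1,1,1,2,16,1,1,1,1,1,1,1,1,16] \<cdot>\<^sub>m (Umat \<cdot>\<^sub>m Smat))"
    by (rule pmeq_help[where zc="zS" and zc'="zmm zU zS"]) (simp add: evM_consts evM_zmm, simp add: evM_consts evM_zmm, simp, simp add: zdefs)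
  show "pmeq ((Umat \<cdot>\<^sub>m Smat) \<cdot>\<^sub>m Mseq [-4]) (Hp [17,17,17] \<cdot>\<^sub>m Smat)"
    by (rule pmeq_help[where zc="zmm zU zS" and zc'="zS"]) (simp add: evM_consts evM_zmm, simp add: evM_consts evM_zmm, simp, simp add: zdefs)
  show "mtrace (Mseq [-1,8,1,-2]) = ev ztau" by (rule tr_help1) (simp add: zdefs)
  show "mtrace (Mseq [-2,-1,8,1]) = ev ztau" by (rule tr_help1) (simp add: zdefs)
  show "mtrace (Mseq [-2,-1,8,1] \<cdot>\<^sub>m Mseq [-1,8,-1,-1,1,8,1] \<cdot>\<^sub>m Mseq [-1,8,1,-2] \<cdot>\<^sub>m Mseq [-4]) = vv (ev ztau) (2 + 2)"
    by (rule tr_help2) (simp add: zdefs)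
  show "mtrace (Mseq [-2,-1,8,1] \<cdot>\<^sub>m Mseq [-1,8,-1,-1,1,8,1] \<cdot>\<^sub>m Mseq [-4]) + mtrace (Mseq [-1,8,-1,-1,1,8,1] \<cdot>\<^sub>m Mseq [-1,8,1,-2] \<cdot>\<^sub>m Mseq [-4]) = 2 * vv (ev ztau) (2 + 1)"
    by (rule tr_help3) (simp add: zdefs)
  show "mtrace (Mseq [-1,8,-1,-1,1,8,1] \<cdot>\<^sub>m Mseq [-4]) = vv (ev ztau) 2"
    by (rule tr_help4) (simp add: zdefs)
qed (simp_all add: tau_facts G18_S G18_mul[OF G18_U G18_S] cnt_def)

lemma fam10: "concl (\<lambda>k. [2] @ rep k [-8,-1,2,1] @ [-8,-1,1,2,-1,-1,8] @ rep k [1,-2,-1,8])"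
  unfolding concl_def
proof (rule family_thm[where a="[2]" and P="[-8,-1,2,1]" and b="[-8,-1,1,2,-1,-1,8]" and Q="[1,-2,-1,8]"
    and cc="mpow Umat 17" and dd="Smat" and X="[2,1,16,17,17,17,17,17,17,17]" and Y="[1,1,1,1,1,1,1,16,17,2]" and C="[1,1,1,1,1,1,1,16,1,2,16,17,17,17,17,17,17,17]" and A="[1,2]"
    and \<tau>="ev ztau" and \<sigma>="ev zsig" and m=2])
  show "pmeq (mpow Umat 17 \<cdot>\<^sub>m Mseq [1,-2,-1,8]) (Hp [1,1,1,1,1,1,1,16,17,2] \<cdot>\<^sub>m mpow Umat 17)"
    by (rule pmeq_help[where zc="zU17" and zc'="zU17"]) (simp add: evM_consts evM_zmm, simp add: evM_consts evM_zmm, simp, simp add: zdefs)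
  show "pmeq (Smat \<cdot>\<^sub>m Mseq [-8,-1,2,1]) (Hp [2,1,16,17,17,17,17,17,17,17] \<cdot>\<^sub>m Smat)"
    by (rule pmeq_help[where zc="zS" and zc'="zS"]) (simp add: evM_consts evM_zmm, simp add: evM_consts evM_zmm, simp, simp add: zdefs)
  show "pmeq (mpow Umat 17 \<cdot>\<^sub>m Mseq [-8,-1,1,2,-1,-1,8]) (Hp [1,1,1,1,1,1,1,16,1,2,16,17,17,17,17,17,17,17] \<cdot>\<^sub>m Smat)"
    by (rule pmeq_help[where zc="zU17" and zc'="zS"]) (simp add: evM_consts evM_zmm, simp add: evM_consts evM_zmm, simp, simp add: zdefs)
  show "pmeq (Smat \<cdot>\<^sub>m Mseq [2]) (Hp [1,2] \<cdot>\<^sub>m mpow Umat 17)"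
    by (rule pmeq_help[where zc="zS" and zc'="zU17"]) (simp add: evM_consts evM_zmm, simp add: evM_consts evM_zmm, simp, simp add: zdefs)
  show "mtrace (Mseq [-8,-1,2,1]) = ev ztau" by (rule tr_help1) (simp add: zdefs)
  show "mtrace (Mseq [1,-2,-1,8]) = ev ztau" by (rule tr_help1) (simp add: zdefs)
  show "mtrace (Mseq [1,-2,-1,8] \<cdot>\<^sub>m Mseq [-8,-1,1,2,-1,-1,8] \<cdot>\<^sub>m Mseq [-8,-1,2,1] \<cdot>\<^sub>m Mseq [2]) = vv (ev ztau) (2 + 2)"
    by (rule tr_help2) (simp add: zdefs)
  show "mtrace (Mseq [1,-2,-1,8] \<cdot>\<^sub>m Mseq [-8,-1,1,2,-1,-1,8] \<cdot>\<^sub>m Mseq [2]) + mtrace (Mseq [-8,-1,1,2,-1,-1,8] \<cdot>\<^sub>m Mseq [-8,-1,2,1] \<cdot>\<^sub>m Mseq [2]) = 2 * vv (ev ztau) (2 + 1)"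
    by (rule tr_help3) (simp add: zdefs)
  show "mtrace (Mseq [-8,-1,1,2,-1,-1,8] \<cdot>\<^sub>m Mseq [2]) = vv (ev ztau) 2"
    by (rule tr_help4) (simp add: zdefs)
qed (simp_all add: tau_facts G18_mpow[OF G18_U] G18_S cnt_def)

lemma fam11: "concl (\<lambda>k. [2] @ rep k [-1,-1,16,1] @ [-1,-1,8,2,-8,-1,1] @ rep k [1,-16,-1,1])"
  unfolding concl_def
proof (rule family_thm[where a="[2]" and P="[-1,-1,16,1]" and b="[-1,-1,8,2,-8,-1,1]" and Q="[1,-16,-1,1]"
    and cc="mpow Umat 17" and dd="Smat" and X="[2,1,1,1,1,1,1,1,1,1,1,1,1,1,1,1,16]" and Y="[16,17,17,17,17,17,17,17,17,17,17,17,17,17,17,17,2]" and C="[16,17,17,17,17,17,17,17,1,2,1,1,1,1,1,1,1,16]" and A="[1,2]"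
    and \<tau>="ev ztau" and \<sigma>="ev zsig" and m=2])
  show "pmeq (mpow Umat 17 \<cdot>\<^sub>m Mseq [1,-16,-1,1]) (Hp [16,17,17,17,17,17,17,17,17,17,17,17,17,17,17,17,2] \<cdot>\<^sub>m mpow Umat 17)"
    by (rule pmeq_help[where zc="zU17" and zc'="zU17"]) (simp add: evM_consts evM_zmm, simp add: evM_consts evM_zmm, simp, simp add: zdefs)
  show "pmeq (Smat \<cdot>\<^sub>m Mseq [-1,-1,16,1]) (Hp [2,1,1,1,1,1,1,1,1,1,1,1,1,1,1,1,16] \<cdot>\<^sub>m Smat)"
    by (rule pmeq_help[where zc="zS" and zc'="zS"]) (simp add: evM_consts evM_zmm, simp add: evM_consts evM_zmm, simp, simp add: zdefs)
  show "pmeq (mpow Umat 17 \<cdot>\<^sub>m Mseq [-1,-1,8,2,-8,-1,1]) (Hp [16,17,17,17,17,17,17,17,1,2,1,1,1,1,1,1,1,16] \<cdot>\<^sub>m Smat)"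
    by (rule pmeq_help[where zc="zU17" and zc'="zS"]) (simp add: evM_consts evM_zmm, simp add: evM_consts evM_zmm, simp, simp add: zdefs)
  show "pmeq (Smat \<cdot>\<^sub>m Mseq [2]) (Hp [1,2] \<cdot>\<^sub>m mpow Umat 17)"
    by (rule pmeq_help[where zc="zS" and zc'="zU17"]) (simp add: evM_consts evM_zmm, simp add: evM_consts evM_zmm, simp, simp add: zdefs)
  show "mtrace (Mseq [-1,-1,16,1]) = ev ztau" by (rule tr_help1) (simp add: zdefs)
  show "mtrace (Mseq [1,-16,-1,1]) = ev ztau" by (rule tr_help1) (simp add: zdefs)
  show "mtrace (Mseq [1,-16,-1,1] \<cdot>\<^sub>m Mseq [-1,-1,8,2,-8,-1,1] \<cdot>\<^sub>m Mseq [-1,-1,16,1] \<cdot>\<^sub>m Mseq [2]) = vv (ev ztau) (2 + 2)"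
    by (rule tr_help2) (simp add: zdefs)
  show "mtrace (Mseq [1,-16,-1,1] \<cdot>\<^sub>m Mseq [-1,-1,8,2,-8,-1,1] \<cdot>\<^sub>m Mseq [2]) + mtrace (Mseq [-1,-1,8,2,-8,-1,1] \<cdot>\<^sub>m Mseq [-1,-1,16,1] \<cdot>\<^sub>m Mseq [2]) = 2 * vv (ev ztau) (2 + 1)"
    by (rule tr_help3) (simp add: zdefs)
  show "mtrace (Mseq [-1,-1,8,2,-8,-1,1] \<cdot>\<^sub>m Mseq [2]) = vv (ev ztau) 2"
    by (rule tr_help4) (simp add: zdefs)
qed (simp_all add: tau_facts G18_mpow[OF G18_U] G18_S cnt_def)

lemma fam12: "concl (\<lambda>k. [16] @ rep k [1,-2,-1,8] @ [1,-2,-2,1,2,-2,-1] @ rep k [8,1,-2,-1])"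
  unfolding concl_def
proof (rule family_thm[where a="[16]" and P="[1,-2,-1,8]" and b="[1,-2,-2,1,2,-2,-1]" and Q="[8,1,-2,-1]"
    and cc="mid" and dd="mpow Umat 17" and X="[1,1,1,1,1,1,1,16,17,2]" and Y="[16,17,2,1,1,1,1,1,1,1]" and C="[16,17,1,2,17,16,17,2]" and A="[1,1,1,1,1,1,1,1,1,1,1,1,1,1,1]"
    and \<tau>="ev ztau" and \<sigma>="ev zsig" and m=2])
  show "pmeq (mid \<cdot>\<^sub>m Mseq [8,1,-2,-1]) (Hp [16,17,2,1,1,1,1,1,1,1] \<cdot>\<^sub>m mid)"
    by (rule pmeq_help[where zc="zI" and zc'="zI"]) (simp add: evM_consts evM_zmm, simp add: evM_consts evM_zmm, simp, simp add: zdefs)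
  show "pmeq (mpow Umat 17 \<cdot>\<^sub>m Mseq [1,-2,-1,8]) (Hp [1,1,1,1,1,1,1,16,17,2] \<cdot>\<^sub>m mpow Umat 17)"
    by (rule pmeq_help[where zc="zU17" and zc'="zU17"]) (simp add: evM_consts evM_zmm, simp add: evM_consts evM_zmm, simp, simp add: zdefs)
  show "pmeq (mid \<cdot>\<^sub>m Mseq [1,-2,-2,1,2,-2,-1]) (Hp [16,17,1,2,17,16,17,2] \<cdot>\<^sub>m mpow Umat 17)"
    by (rule pmeq_help[where zc="zI" and zc'="zU17"]) (simp add: evM_consts evM_zmm, simp add: evM_consts evM_zmm, simp, simp add: zdefs)
  show "pmeq (mpow Umat 17 \<cdot>\<^sub>m Mseq [16]) (Hp [1,1,1,1,1,1,1,1,1,1,1,1,1,1,1] \<cdot>\<^sub>m mid)"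
    by (rule pmeq_help[where zc="zU17" and zc'="zI"]) (simp add: evM_consts evM_zmm, simp add: evM_consts evM_zmm, simp, simp add: zdefs)
  show "mtrace (Mseq [1,-2,-1,8]) = ev ztau" by (rule tr_help1) (simp add: zdefs)
  show "mtrace (Mseq [8,1,-2,-1]) = ev ztau" by (rule tr_help1) (simp add: zdefs)
  show "mtrace (Mseq [8,1,-2,-1] \<cdot>\<^sub>m Mseq [1,-2,-2,1,2,-2,-1] \<cdot>\<^sub>m Mseq [1,-2,-1,8] \<cdot>\<^sub>m Mseq [16]) = vv (ev ztau) (2 + 2)"
    by (rule tr_help2) (simp add: zdefs)
  show "mtrace (Mseq [8,1,-2,-1] \<cdot>\<^sub>m Mseq [1,-2,-2,1,2,-2,-1] \<cdot>\<^sub>m Mseq [16]) + mtrace (Mseq [1,-2,-2,1,2,-2,-1] \<cdot>\<^sub>m Mseq [1,-2,-1,8] \<cdot>\<^sub>m Mseq [16]) = 2 * vv (ev ztau) (2 + 1)"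
    by (rule tr_help3) (simp add: zdefs)
  show "mtrace (Mseq [1,-2,-2,1,2,-2,-1] \<cdot>\<^sub>m Mseq [16]) = vv (ev ztau) 2"
    by (rule tr_help4) (simp add: zdefs)
qed (simp_all add: tau_facts G18.G_id G18_mpow[OF G18_U] cnt_def)

theorem theorem2p5:
  assumes "w \<in> set families18"
  shows "(\<forall>k. special_hyperbolic (Mseq (w k)))
    \<and> (\<forall>k p. mobius (Mseq (w k)) p = p \<longrightarrow> (\<exists>r. p = Some r \<and> r \<in> lamK))
    \<and> infinite {orbit18 p | p k. mobius (Mseq (w k)) p = p}"
proof -
  have "concl w"
    using assms fam0 fam1 fam2 fam3 fam4 fam5 fam6 fam7 fam8 fam9 fam10 fam11 fam12
    unfolding families18_def by auto
  then show ?thesis unfolding concl_def .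
qed


end
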